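(* Fix a dimension $d\ge2$. There is a constant $K_d$ such that for every $L$ and any two dimensional hierarchies $\sigma,\sigma'$ of $\{1,\dots,d\}$, there is a circuit on the $d$-dimensional nearest-neighbour qubit lattice $\{0,\dots,L-1\}^d$ ($N=L^d$), consisting of at most $K_dN$ nearest-neighbour CNOT/CZ gates and single-qubit Clifford gates and of depth at most $K_dL=K_dN^{1/d}$, that maps the JW encoding with ordering $m_S^\sigma$ to the JW encoding with ordering $m_S^{\sigma'}$.
   Context: Qubits are indexed by $v=(v_1,\dots,v_d)\in\{0,\dots,L-1\}^d$, two-qubit gates only between sites at $\ell_1$-distance 1; mode $j$ is identified with qubit $j$. $\rho_s(t)=t$ if $s$ is even and $\rho_s(t)=L-1-t$ if $s$ is odd. A dimensional hierarchy is a permutation $\sigma=(\sigma_1,\dots,\sigma_d)$ of $\{1,\dots,d\}$. The snake ordering is $m_S^\sigma(v)=\sum_{i=1}^{d}L^{i-1}\rho_{s_i}(v_{\sigma_i})$ with $s_i=\sum_{k=i+1}^{d}v_{\sigma_k}$ (empty sum $=0$). The JW encoding with ordering $m$ has Majoranas $\chi^{(m)}_{2j}=X_j\prod_{k:m(k)<m(j)}Z_k$, $\chi^{(m)}_{2j+1}=Y_j\prod_{k:m(k)<m(j)}Z_k$; a unitary $W$ maps the encoding with ordering $m$ to that with $m'$ if $W\chi^{(m)}_aW^\dagger=\chi^{(m')}_a$ for all $a$. *)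

theory Defs
  imports Complex_Main
begin

(* Sites of the lattice {0..L-1}^d: a site v = (v_1,...,v_d) is the list [v_1,...,v_d],
   so the coordinate v_i is  v ! (i - 1).  Qubits (= fermionic modes) are sites. *)
definition sites :: "nat \<Rightarrow> nat \<Rightarrow> nat list set" where
  "sites L d = {v. length v = d \<and> (\<forall>x\<in>set v. x < L)}"

definition l1dist :: "nat list \<Rightarrow> nat list \<Rightarrow> nat" where
  "l1dist u v = (\<Sum>i<length u. nat \<bar>int (u ! i) - int (v ! i)\<bar>)"

definition rho :: "nat \<Rightarrow> nat \<Rightarrow> nat \<Rightarrow> nat" where
  "rho L s t = (if even s then t else L - 1 - t)"

definition coord :: "nat list \<Rightarrow> nat \<Rightarrow> nat" where
  "coord v i = v ! (i - 1)"

definition snake :: "nat \<Rightarrow> nat \<Rightarrow> (nat \<Rightarrow> nat) \<Rightarrow> nat list \<Rightarrow> nat" where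
  "snake L d \<sigma> v =
     (\<Sum>i=1..d. L ^ (i - 1) *
        rho L (\<Sum>k=i+1..d. coord v (\<sigma> k)) (coord v (\<sigma> i)))"

definition hierarchy :: "nat \<Rightarrow> (nat \<Rightarrow> nat) \<Rightarrow> bool" where
  "hierarchy d \<sigma> \<longleftrightarrow> bij_betw \<sigma> {1..d} {1..d}"

type_synonym config = "nat list \<Rightarrow> bool"
type_synonym state = "config \<Rightarrow> complex"

(* Pauli operators on qubit j  (bit True = |1>) *)
definition PX :: "nat list \<Rightarrow> state \<Rightarrow> state" where
  "PX j \<psi> = (\<lambda>c. \<psi> (c(j := \<not> c j)))"

definition PY :: "nat list \<Rightarrow> state \<Rightarrow> state" where
  "PY j \<psi> = (\<lambda>c. (if c j then \<i> else - \<i>) * \<psi> (c(j := \<not> c j)))"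

definition Zprod :: "nat list set \<Rightarrow> state \<Rightarrow> state" where
  "Zprod S \<psi> = (\<lambda>c. (-1) ^ card {k\<in>S. c k} * \<psi> c)"

(* JW Majoranas for ordering m on the lattice sites:
   chi_{2j} = X_j prod_{k : m k < m j} Z_k,   chi_{2j+1} = Y_j prod_{k : m k < m j} Z_k *)
definition majX :: "nat list set \<Rightarrow> (nat list \<Rightarrow> nat) \<Rightarrow> nat list \<Rightarrow> state \<Rightarrow> state" where
  "majX Q m j = PX j \<circ> Zprod {k\<in>Q. m k < m j}"

definition majY :: "nat list set \<Rightarrow> (nat list \<Rightarrow> nat) \<Rightarrow> nat list \<Rightarrow> state \<Rightarrow> state" where
  "majY Q m j = PY j \<circ> Zprod {k\<in>Q. m k < m j}"

(* single-qubit 2x2 matrices, indexed by (row bit, column bit) *)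
type_synonym mat2 = "bool \<Rightarrow> bool \<Rightarrow> complex"

definition Hmat :: mat2 where
  "Hmat a b = (if a \<and> b then -1 else 1) / complex_of_real (sqrt 2)"

definition Smat :: mat2 where
  "Smat a b = (if a = b then (if a then \<i> else 1) else 0)"

definition Imat :: mat2 where
  "Imat a b = (if a = b then 1 else 0)"

definition mat2_mult :: "mat2 \<Rightarrow> mat2 \<Rightarrow> mat2" where
  "mat2_mult U V = (\<lambda>a b. \<Sum>x\<in>UNIV. U a x * V x b)"

(* the single-qubit Clifford group (generated by H and S; global phases
   e^{i pi k/4} are included automatically) *)
inductive_set clifford1 :: "mat2 set" where
  cl_I: "Imat \<in> clifford1"
| cl_H: "Hmat \<in> clifford1"
| cl_S: "Smat \<in> clifford1"
| cl_mult: "U \<in> clifford1 \<Longrightarrow> V \<in> clifford1 \<Longrightarrow> mat2_mult U V \<in> clifford1"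

datatype gate =
    G1 "nat list" mat2
  | CNOT "nat list" "nat list"      (* control, target *)
  | CZ "nat list" "nat list"

fun apply_gate :: "gate \<Rightarrow> state \<Rightarrow> state" where
  "apply_gate (G1 j U) \<psi> = (\<lambda>c. \<Sum>b\<in>UNIV. U (c j) b * \<psi> (c(j := b)))"
| "apply_gate (CNOT a b) \<psi> = (\<lambda>c. \<psi> (c(b := (c b \<noteq> c a))))"
| "apply_gate (CZ a b) \<psi> = (\<lambda>c. (if c a \<and> c b then -1 else 1) * \<psi> c)"

fun gate_qubits :: "gate \<Rightarrow> nat list list" where
  "gate_qubits (G1 j U) = [j]"
| "gate_qubits (CNOT a b) = [a, b]"
| "gate_qubits (CZ a b) = [a, b]"

fun valid_gate :: "nat \<Rightarrow> nat \<Rightarrow> gate \<Rightarrow> bool" where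
  "valid_gate L d (G1 j U) \<longleftrightarrow> j \<in> sites L d \<and> U \<in> clifford1"
| "valid_gate L d (CNOT a b) \<longleftrightarrow> a \<in> sites L d \<and> b \<in> sites L d \<and> l1dist a b = 1"
| "valid_gate L d (CZ a b) \<longleftrightarrow> a \<in> sites L d \<and> b \<in> sites L d \<and> l1dist a b = 1"

(* a circuit is a list of layers; each layer consists of gates acting on
   pairwise disjoint qubits. depth = number of layers. *)
type_synonym circuit = "gate list list"

definition valid_layer :: "nat \<Rightarrow> nat \<Rightarrow> gate list \<Rightarrow> bool" where
  "valid_layer L d l \<longleftrightarrow> (\<forall>g\<in>set l. valid_gate L d g) \<and> distinct (concat (map gate_qubits l))"

definition valid_circuit :: "nat \<Rightarrow> nat \<Rightarrow> circuit \<Rightarrow> bool" where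
  "valid_circuit L d C \<longleftrightarrow> (\<forall>l\<in>set C. valid_layer L d l)"

definition depth :: "circuit \<Rightarrow> nat" where
  "depth C = length C"

definition gate_count :: "circuit \<Rightarrow> nat" where
  "gate_count C = sum_list (map length C)"

(* the unitary of the circuit: first layer applied first *)
definition apply_layer :: "gate list \<Rightarrow> state \<Rightarrow> state" where
  "apply_layer l = fold apply_gate l"

definition circuit_unitary :: "circuit \<Rightarrow> state \<Rightarrow> state" where
  "circuit_unitary C = fold apply_layer C"

(* W maps the JW encoding with ordering m to that with ordering m':
   W chi^(m)_a W^dagger = chi^(m')_a for all a, written as W chi = chi' W
   (equivalent since W is unitary). *)
definition maps_encoding ::
  "nat list set \<Rightarrow> (state \<Rightarrow> state) \<Rightarrow> (nat list \<Rightarrow> nat) \<Rightarrow> (nat list \<Rightarrow> nat) \<Rightarrow> bool" where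
  "maps_encoding Q W m m' \<longleftrightarrow>
     (\<forall>j\<in>Q. W \<circ> majX Q m j = majX Q m' j \<circ> W \<and> W \<circ> majY Q m j = majY Q m' j \<circ> W)"

end

theory Submission
  imports Defs "HOL-Library.Z2"
begin


declare add_bit_eq_xor[simp del] mult_bit_eq_and[simp del]

abbreviation bb :: "config \<Rightarrow> nat list \<Rightarrow> bit" where "bb c v \<equiv> of_bool (c v)"

definition sgnb :: "bit \<Rightarrow> complex" where "sgnb x = (if x = 0 then 1 else -1)"

lemma bit_add_self[simp]: "(x::bit) + x = 0"
  by (cases x) (simp_all add: one_add_one)

lemma sgnb_add: "sgnb (x + y) = sgnb x * sgnb y"
  by (cases x; cases y) (simp_all add: sgnb_def one_add_one)

lemma sgnb_sq: "sgnb x * sgnb x = 1"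
  by (cases x) (simp_all add: sgnb_def)

lemma sgnb_of_nat: "sgnb (of_nat n) = (-1) ^ n"
proof (induction n)
  case 0 show ?case by (simp add: sgnb_def)
next
  case (Suc n)
  have "sgnb (of_nat (Suc n)) = sgnb 1 * sgnb (of_nat n)" by (simp only: of_nat_Suc sgnb_add)
  then show ?case using Suc by (simp add: sgnb_def)
qed

lemma expand4: "(x::'a::comm_semiring_1) * (a + b) * (c + e) = x * a * c + x * b * c + x * a * e + x * b * e"
  by (simp add: algebra_simps)

lemma sum_ind2: "finite Q \<Longrightarrow> (\<Sum>u\<in>Q. (of_bool (P u) + of_bool (P' u)) * (f u :: 'a::comm_semiring_1))
   = (\<Sum>u\<in>{u\<in>Q. P u}. f u) + (\<Sum>u\<in>{u\<in>Q. P' u}. f u)"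
  by (simp add: distrib_right sum.distrib Int_def)

lemma finite_sites: "finite (sites L d)"
proof -
  have "sites L d = set (List.n_lists d [0..<L])"
    by (auto simp: sites_def set_n_lists)
  then show ?thesis by simp
qed

lemma delta_sum: "finite Q \<Longrightarrow> j \<in> Q \<Longrightarrow> (\<Sum>w\<in>Q. of_bool (w = j) * F w) = (F j :: 'a::comm_semiring_1)"
proof -
  assume a: "finite Q" "j \<in> Q"
  have "(\<Sum>w\<in>Q. of_bool (w = j) * F w) = (\<Sum>w\<in>Q. if w = j then F w else 0)"
    by (rule sum.cong) auto
  then show ?thesis using a by (simp add: sum.delta)
qed

definition qform :: "nat list set \<Rightarrow> (nat list \<Rightarrow> nat list \<Rightarrow> bit) \<Rightarrow> config \<Rightarrow> bit" where
  "qform Q r c = (\<Sum>w\<in>Q. \<Sum>u\<in>Q. r w u * bb c w * bb c u)"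

lemma qform_flip:
  assumes fin: "finite Q" and j: "j \<in> Q" and rjj: "r j j = 0"
  shows "qform Q r (c(j := \<not> c j)) = qform Q r c + (\<Sum>u\<in>Q. (r j u + r u j) * bb c u)"
proof -
  define \<delta> where "\<delta> w = (of_bool (w = j) :: bit)" for w
  have bc: "bb (c(j := \<not> c j)) w = bb c w + \<delta> w" for w
    by (cases "c j") (auto simp: \<delta>_def)
  have "qform Q r (c(j := \<not> c j)) = (\<Sum>w\<in>Q. \<Sum>u\<in>Q. r w u * (bb c w + \<delta> w) * (bb c u + \<delta> u))"
    unfolding qform_def bc ..
  also have "\<dots> = (\<Sum>w\<in>Q. \<Sum>u\<in>Q. r w u * bb c w * bb c u + r w u * \<delta> w * bb c u
        + r w u * bb c w * \<delta> u + r w u * \<delta> w * \<delta> u)"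
    by (simp only: expand4)
  also have "\<dots> = qform Q r c + (\<Sum>w\<in>Q. \<Sum>u\<in>Q. r w u * \<delta> w * bb c u)
        + (\<Sum>w\<in>Q. \<Sum>u\<in>Q. r w u * bb c w * \<delta> u) + (\<Sum>w\<in>Q. \<Sum>u\<in>Q. r w u * \<delta> w * \<delta> u)"
    by (simp only: qform_def sum.distrib)
  also have "(\<Sum>w\<in>Q. \<Sum>u\<in>Q. r w u * \<delta> w * bb c u) = (\<Sum>u\<in>Q. r j u * bb c u)"
  proof -
    have "(\<Sum>w\<in>Q. \<Sum>u\<in>Q. r w u * \<delta> w * bb c u) = (\<Sum>w\<in>Q. \<delta> w * (\<Sum>u\<in>Q. r w u * bb c u))"
      by (simp add: sum_distrib_left mult_ac)
    also have "\<dots> = (\<Sum>u\<in>Q. r j u * bb c u)"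
      using fin j by (simp only: \<delta>_def delta_sum)
    finally show ?thesis .
  qed
  also have "(\<Sum>w\<in>Q. \<Sum>u\<in>Q. r w u * bb c w * \<delta> u) = (\<Sum>w\<in>Q. r w j * bb c w)"
  proof -
    have "(\<Sum>w\<in>Q. \<Sum>u\<in>Q. r w u * bb c w * \<delta> u) = (\<Sum>w\<in>Q. bb c w * (\<Sum>u\<in>Q. \<delta> u * r w u))"
      by (simp add: sum_distrib_left mult_ac)
    also have "\<dots> = (\<Sum>w\<in>Q. bb c w * r w j)"
      using fin j by (simp only: \<delta>_def delta_sum)
    also have "\<dots> = (\<Sum>w\<in>Q. r w j * bb c w)"
      by (simp add: mult.commute)
    finally show ?thesis .
  qed
  also have "(\<Sum>w\<in>Q. \<Sum>u\<in>Q. r w u * \<delta> w * \<delta> u) = 0"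
  proof -
    have "(\<Sum>w\<in>Q. \<Sum>u\<in>Q. r w u * \<delta> w * \<delta> u) = (\<Sum>w\<in>Q. \<delta> w * (\<Sum>u\<in>Q. \<delta> u * r w u))"
      by (simp add: sum_distrib_left mult_ac)
    also have "\<dots> = r j j"
      using fin j by (simp only: \<delta>_def delta_sum)
    finally show ?thesis using rjj by simp
  qed
  finally show ?thesis by (simp add: sum.distrib algebra_simps del: fun_upd_apply)
qed

definition diagop :: "(config \<Rightarrow> bit) \<Rightarrow> state \<Rightarrow> state" where
  "diagop \<phi> \<psi> = (\<lambda>c. sgnb (\<phi> c) * \<psi> c)"

lemma Zprod_sgnb: "finite S \<Longrightarrow> Zprod S \<psi> = (\<lambda>c. sgnb (\<Sum>k\<in>S. bb c k) * \<psi> c)"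
  by (simp add: Zprod_def sgnb_of_nat Int_def)

lemma maps_encoding_qform:
  assumes fin: "finite Q"
    and rjj: "\<And>j. j \<in> Q \<Longrightarrow> r j j = 0"
    and pw: "\<And>j u. j \<in> Q \<Longrightarrow> u \<in> Q \<Longrightarrow> u \<noteq> j \<Longrightarrow>
              r j u + r u j = of_bool (m u < m j) + of_bool (m' u < m' j)"
  shows "maps_encoding Q (diagop (qform Q r)) m m'"
  unfolding maps_encoding_def
proof (intro ballI conjI)
  fix j assume j: "j \<in> Q"
  define S where "S = {k\<in>Q. m k < m j}"
  define S' where "S' = {k\<in>Q. m' k < m' j}"
  have fS: "finite S" "finite S'" using fin by (auto simp: S_def S'_def)
  have jS: "j \<notin> S" "j \<notin> S'" by (auto simp: S_def S'_def)
  have key: "sgnb (qform Q r (c(j := \<not> c j))) * sgnb (\<Sum>k\<in>S'. bb c k)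
      = sgnb (qform Q r c) * sgnb (\<Sum>k\<in>S. bb c k)" for c
  proof -
    have d: "(\<Sum>u\<in>Q. (r j u + r u j) * bb c u) = (\<Sum>u\<in>Q. (of_bool (m u < m j) + of_bool (m' u < m' j)) * bb c u)"
    proof (rule sum.cong[OF refl])
      fix u assume u: "u \<in> Q"
      show "(r j u + r u j) * bb c u = (of_bool (m u < m j) + of_bool (m' u < m' j)) * bb c u"
        using pw[OF j u] rjj[OF j] by (cases "u = j") auto
    qed
    also have "\<dots> = (\<Sum>k\<in>S. bb c k) + (\<Sum>k\<in>S'. bb c k)"
      using fin by (simp only: sum_ind2 S_def S'_def)
    finally have d: "(\<Sum>u\<in>Q. (r j u + r u j) * bb c u) = (\<Sum>k\<in>S. bb c k) + (\<Sum>k\<in>S'. bb c k)" .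
    show ?thesis
      unfolding qform_flip[where r=r and c=c, OF fin j rjj[OF j]] d sgnb_add
      by (simp add: mult_ac sgnb_sq)
  qed
  have eqS: "(\<Sum>k\<in>A. bb (c(j := x)) k) = (\<Sum>k\<in>A. bb c k)" if "j \<notin> A" for A c x
    using that by (intro sum.cong) auto
  have e1: "(\<Sum>k\<in>S. bb (c(j := x)) k) = (\<Sum>k\<in>S. bb c k)"
     "(\<Sum>k\<in>S'. bb (c(j := x)) k) = (\<Sum>k\<in>S'. bb c k)" for c x
    using eqS jS by blast+
  show "diagop (qform Q r) \<circ> majX Q m j = majX Q m' j \<circ> diagop (qform Q r)"
  proof (rule ext, rule ext)
    fix \<psi> c
    have "(diagop (qform Q r) \<circ> majX Q m j) \<psi> c = sgnb (qform Q r c) * (sgnb (\<Sum>k\<in>S. bb (c(j := \<not> c j)) k) * \<psi> (c(j := \<not> c j)))"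
      by (simp add: diagop_def majX_def PX_def Zprod_sgnb fS S_def[symmetric] del: sum_of_bool_eq fun_upd_apply)
    also have "\<dots> = sgnb (\<Sum>k\<in>S'. bb (c(j := \<not> c j)) k) * (sgnb (qform Q r (c(j := \<not> c j))) * \<psi> (c(j := \<not> c j)))"
      unfolding e1 using key[of c] by (simp add: mult_ac)
    also have "\<dots> = (majX Q m' j \<circ> diagop (qform Q r)) \<psi> c"
      by (simp add: diagop_def majX_def PX_def Zprod_sgnb fS S'_def[symmetric] del: sum_of_bool_eq fun_upd_apply)
    finally show "(diagop (qform Q r) \<circ> majX Q m j) \<psi> c = (majX Q m' j \<circ> diagop (qform Q r)) \<psi> c" .
  qed
  show "diagop (qform Q r) \<circ> majY Q m j = majY Q m' j \<circ> diagop (qform Q r)"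
  proof (rule ext, rule ext)
    fix \<psi> c
    have "(diagop (qform Q r) \<circ> majY Q m j) \<psi> c = (if c j then \<i> else - \<i>) * (sgnb (qform Q r c) * (sgnb (\<Sum>k\<in>S. bb (c(j := \<not> c j)) k) * \<psi> (c(j := \<not> c j))))"
      by (simp add: diagop_def majY_def PY_def Zprod_sgnb fS S_def[symmetric] del: sum_of_bool_eq fun_upd_apply)
    also have "\<dots> = (if c j then \<i> else - \<i>) * (sgnb (\<Sum>k\<in>S'. bb (c(j := \<not> c j)) k) * (sgnb (qform Q r (c(j := \<not> c j))) * \<psi> (c(j := \<not> c j))))"
      unfolding e1 using key[of c] by (simp add: mult_ac)
    also have "\<dots> = (majY Q m' j \<circ> diagop (qform Q r)) \<psi> c"
      by (simp add: diagop_def majY_def PY_def Zprod_sgnb fS S'_def[symmetric] del: sum_of_bool_eq fun_upd_apply)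
    finally show "(diagop (qform Q r) \<circ> majY Q m j) \<psi> c = (majY Q m' j \<circ> diagop (qform Q r)) \<psi> c" .
  qed
qed


fun clg :: "gate \<Rightarrow> config \<Rightarrow> config" where
  "clg (CNOT a b) c = c(b := (c b \<noteq> c a))"
| "clg (G1 j U) c = c"
| "clg (CZ a b) c = c"

definition run :: "gate list \<Rightarrow> config \<Rightarrow> config" where "run gs c = fold clg gs c"

definition Zm :: mat2 where "Zm = mat2_mult Smat Smat"

fun gph :: "gate \<Rightarrow> config \<Rightarrow> bit" where
  "gph (CZ a b) c = of_bool (c a \<and> c b)"
| "gph (G1 j U) c = of_bool (c j)"
| "gph (CNOT a b) c = 0"

fun dgate :: "gate \<Rightarrow> bool" where
  "dgate (CZ a b) = True"
| "dgate (G1 j U) = (U = Zm)"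
| "dgate (CNOT a b) = False"

fun cgate :: "gate \<Rightarrow> bool" where
  "cgate (CNOT a b) = (a \<noteq> b)"
| "cgate (G1 j U) = False"
| "cgate (CZ a b) = False"

definition isD :: "gate list \<Rightarrow> (config \<Rightarrow> bit) \<Rightarrow> bool" where
  "isD gs \<phi> \<longleftrightarrow> fold apply_gate gs = diagop \<phi>"

lemma circuit_unitary_concat: "circuit_unitary C = fold apply_gate (concat C)"
  unfolding circuit_unitary_def apply_layer_def
  by (induction C) auto

lemma Zm_clifford: "Zm \<in> clifford1"
  unfolding Zm_def by (intro cl_mult cl_S)

lemma Zm_eq: "Zm a b = (if a = b then (if a then -1 else 1) else 0)"
  by (cases a; cases b) (simp_all add: Zm_def mat2_mult_def Smat_def UNIV_bool)

lemma dgate_apply: "dgate g \<Longrightarrow> apply_gate g = diagop (gph g)"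
proof (cases g)
  case (G1 j U)
  assume "dgate g"
  then have U: "U = Zm" using G1 by simp
  show ?thesis
  proof (rule ext, rule ext)
    fix \<psi> c
    show "apply_gate g \<psi> c = diagop (gph g) \<psi> c"
      using G1 U by (cases "c j") (simp_all add: UNIV_bool Zm_eq diagop_def sgnb_def fun_upd_idem)
  qed
next
  case (CZ a b)
  then show ?thesis by (auto simp: diagop_def sgnb_def fun_eq_iff)
qed simp

lemma diagop_comp: "diagop \<chi> \<circ> diagop \<phi> = diagop (\<lambda>c. \<phi> c + \<chi> c)"
  by (auto simp: diagop_def fun_eq_iff sgnb_add)

lemma diagop_zero: "diagop (\<lambda>c. 0) = id"
  by (auto simp: diagop_def fun_eq_iff sgnb_def)

lemma diagop_invol: "diagop \<phi> \<circ> diagop \<phi> = id"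
  by (auto simp: diagop_def fun_eq_iff sgnb_sq mult.assoc[symmetric])

lemma isD_nil: "isD [] (\<lambda>c. 0)"
  by (simp add: isD_def diagop_zero id_def)

lemma isD_append: "isD A \<phi> \<Longrightarrow> isD B \<chi> \<Longrightarrow> isD (A @ B) (\<lambda>c. \<phi> c + \<chi> c)"
  unfolding isD_def by (simp add: fold_append diagop_comp)

lemma isD_cong: "isD A \<phi> \<Longrightarrow> (\<And>c. \<phi> c = \<chi> c) \<Longrightarrow> isD A \<chi>"
proof -
  assume "isD A \<phi>" "\<And>c. \<phi> c = \<chi> c"
  then have "\<phi> = \<chi>" by auto
  then show "isD A \<chi>" using \<open>isD A \<phi>\<close> by simp
qed

lemma isD_dgates: "\<forall>g\<in>set gs. dgate g \<Longrightarrow> isD gs (\<lambda>c. sum_list (map (\<lambda>g. gph g c) gs))"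
proof (induction gs rule: rev_induct)
  case Nil
  then show ?case using isD_nil by simp
next
  case (snoc g gs)
  have "isD [g] (gph g)" using snoc.prems by (simp add: isD_def dgate_apply)
  from isD_append[OF snoc.IH this] snoc.prems show ?case by simp
qed

lemma cnot_fold: "\<forall>g\<in>set A. cgate g \<Longrightarrow> fold apply_gate A \<psi> = \<psi> \<circ> run (rev A)"
proof (induction A arbitrary: \<psi>)
  case Nil
  then show ?case by (simp add: run_def)
next
  case (Cons g A)
  then obtain a b where g: "g = CNOT a b" by (cases g) auto
  have "fold apply_gate (g # A) \<psi> = fold apply_gate A (\<psi> \<circ> clg g)"
    using g by (simp add: comp_def)
  also have "\<dots> = \<psi> \<circ> clg g \<circ> run (rev A)" using Cons by (simp add: comp_def)
  also have "\<dots> = \<psi> \<circ> run (rev (g # A))" by (simp add: run_def fun_eq_iff)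
  finally show ?case .
qed

lemma clg_invol: "cgate g \<Longrightarrow> clg g (clg g c) = c"
  by (cases g) (auto simp: fun_eq_iff)

lemma run_inv: "\<forall>g\<in>set A. cgate g \<Longrightarrow> run (rev A) (run A c) = c"
proof (induction A arbitrary: c)
  case Nil
  then show ?case by (simp add: run_def)
next
  case (Cons g A)
  have "run (rev (g # A)) (run (g # A) c) = clg g (run (rev A) (run A (clg g c)))"
    by (simp add: run_def)
  also have "\<dots> = c" using Cons by (simp add: clg_invol)
  finally show ?case .
qed

lemma isD_conj:
  assumes A: "\<forall>g\<in>set A. cgate g" and D: "isD D \<phi>"
  shows "isD (A @ D @ rev A) (\<lambda>c. \<phi> (run A c))"
  unfolding isD_def
proof (rule ext)
  fix \<psi>
  have A': "\<forall>g\<in>set (rev A). cgate g" using A by simp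
  have "fold apply_gate (A @ D @ rev A) \<psi> = fold apply_gate (rev A) (diagop \<phi> (\<psi> \<circ> run (rev A)))"
    using D by (simp add: isD_def cnot_fold[OF A])
  also have "\<dots> = diagop \<phi> (\<psi> \<circ> run (rev A)) \<circ> run A"
    using cnot_fold[OF A'] by simp
  also have "\<dots> = diagop (\<lambda>c. \<phi> (run A c)) \<psi>"
    by (simp add: diagop_def fun_eq_iff run_inv[OF A])
  finally show "fold apply_gate (A @ D @ rev A) \<psi> = diagop (\<lambda>c. \<phi> (run A c)) \<psi>" .
qed

definition revc :: "circuit \<Rightarrow> circuit" where "revc C = rev (map rev C)"

lemma concat_revc: "concat (revc C) = rev (concat C)"
  by (simp add: revc_def rev_concat rev_map)

lemma valid_circuit_append: "valid_circuit L d (A @ B) \<longleftrightarrow> valid_circuit L d A \<and> valid_circuit L d B"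
  by (auto simp: valid_circuit_def)

lemma valid_layer_rev: "valid_layer L d l \<Longrightarrow> valid_layer L d (rev l)"
proof -
  assume v: "valid_layer L d l"
  have "distinct (concat (map gate_qubits (rev l)))"
  proof -
    have e1: "set (concat (map gate_qubits (rev l))) = set (concat (map gate_qubits l))" by auto
    have e2: "length (concat (map gate_qubits (rev l))) = length (concat (map gate_qubits l))"
      by (simp add: length_concat rev_map[symmetric] sum_list_rev)
    have "card (set (concat (map gate_qubits l))) = length (concat (map gate_qubits l))"
      using v unfolding valid_layer_def by (intro distinct_card) simp
    then show ?thesis using e1 e2 by (intro card_distinct) simp
  qed
  then show ?thesis using v by (simp add: valid_layer_def)
qed

lemma valid_circuit_revc: "valid_circuit L d C \<Longrightarrow> valid_circuit L d (revc C)"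
  by (auto simp: valid_circuit_def revc_def intro: valid_layer_rev)

lemma depth_append: "depth (A @ B) = depth A + depth B" by (simp add: depth_def)
lemma depth_revc: "depth (revc C) = depth C" by (simp add: depth_def revc_def)
lemma gate_count_append: "gate_count (A @ B) = gate_count A + gate_count B" by (simp add: gate_count_def)
lemma gate_count_revc: "gate_count (revc C) = gate_count C"
  by (simp add: gate_count_def revc_def rev_map[symmetric] sum_list_rev o_def)
lemma gate_count_concat: "gate_count C = length (concat C)"
  by (simp add: gate_count_def length_concat)

lemma circuit_unitary_append: "circuit_unitary (A @ B) = circuit_unitary B \<circ> circuit_unitary A"
  by (simp add: circuit_unitary_concat fold_append)

lemma maps_encoding_trans:
  "maps_encoding Q W1 m m' \<Longrightarrow> maps_encoding Q W2 m' m'' \<Longrightarrow> maps_encoding Q (W2 \<circ> W1) m m''"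
  unfolding maps_encoding_def
proof (intro ballI conjI)
  fix j assume j: "j \<in> Q"
  assume a: "\<forall>j\<in>Q. W1 \<circ> majX Q m j = majX Q m' j \<circ> W1 \<and> W1 \<circ> majY Q m j = majY Q m' j \<circ> W1"
    and b: "\<forall>j\<in>Q. W2 \<circ> majX Q m' j = majX Q m'' j \<circ> W2 \<and> W2 \<circ> majY Q m' j = majY Q m'' j \<circ> W2"
  have "W2 \<circ> W1 \<circ> majX Q m j = W2 \<circ> (W1 \<circ> majX Q m j)" by (simp only: comp_assoc)
  also have "\<dots> = (W2 \<circ> majX Q m' j) \<circ> W1" using a j by (simp only: comp_assoc)
  also have "\<dots> = majX Q m'' j \<circ> (W2 \<circ> W1)" using b j by (simp only: comp_assoc)
  finally show "W2 \<circ> W1 \<circ> majX Q m j = majX Q m'' j \<circ> (W2 \<circ> W1)" .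
  have "W2 \<circ> W1 \<circ> majY Q m j = W2 \<circ> (W1 \<circ> majY Q m j)" by (simp only: comp_assoc)
  also have "\<dots> = (W2 \<circ> majY Q m' j) \<circ> W1" using a j by (simp only: comp_assoc)
  also have "\<dots> = majY Q m'' j \<circ> (W2 \<circ> W1)" using b j by (simp only: comp_assoc)
  finally show "W2 \<circ> W1 \<circ> majY Q m j = majY Q m'' j \<circ> (W2 \<circ> W1)" .
qed

lemma maps_encoding_sym:
  assumes inv: "W \<circ> W = id" and me: "maps_encoding Q W m m'"
  shows "maps_encoding Q W m' m"
  unfolding maps_encoding_def
proof (intro ballI conjI)
  fix j assume j: "j \<in> Q"
  have x: "W \<circ> majX Q m j = majX Q m' j \<circ> W" and y: "W \<circ> majY Q m j = majY Q m' j \<circ> W"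
    using me j by (auto simp: maps_encoding_def)
  have "W \<circ> majX Q m' j = W \<circ> majX Q m' j \<circ> (W \<circ> W)" using inv by simp
  also have "\<dots> = W \<circ> (W \<circ> majX Q m j) \<circ> W" using x by (simp add: comp_assoc)
  also have "\<dots> = majX Q m j \<circ> W" using inv by (simp add: comp_assoc[symmetric])
  finally show "W \<circ> majX Q m' j = majX Q m j \<circ> W" .
  have "W \<circ> majY Q m' j = W \<circ> majY Q m' j \<circ> (W \<circ> W)" using inv by simp
  also have "\<dots> = W \<circ> (W \<circ> majY Q m j) \<circ> W" using y by (simp add: comp_assoc)
  also have "\<dots> = majY Q m j \<circ> W" using inv by (simp add: comp_assoc[symmetric])
  finally show "W \<circ> majY Q m' j = majY Q m j \<circ> W" .
qed

lemma run_cons: "run (g # gs) c = run gs (clg g c)" by (simp add: run_def)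
lemma run_append: "run (A @ B) c = run B (run A c)" by (simp add: run_def)
lemma run_concat: "run (concat ls) c = fold run ls c"
  by (induction ls arbitrary: c) (simp_all add: run_def)

lemma run_layer:
  assumes dist: "distinct (map g ws)" and ctl: "\<forall>w\<in>set ws. f w \<notin> g ` set ws"
  shows "(v \<notin> g ` set ws \<longrightarrow> run (map (\<lambda>w. CNOT (f w) (g w)) ws) x v = x v)
       \<and> (v \<in> set ws \<longrightarrow> run (map (\<lambda>w. CNOT (f w) (g w)) ws) x (g v) = (x (g v) \<noteq> x (f v)))"
  using dist ctl
proof (induction ws arbitrary: x v)
  case Nil
  then show ?case by (simp add: run_def)
next
  case (Cons w0 ws)
  define x' where "x' = x(g w0 := (x (g w0) \<noteq> x (f w0)))"
  have r: "run (CNOT (f w0) (g w0) # map (\<lambda>w. CNOT (f w) (g w)) ws) x = run (map (\<lambda>w. CNOT (f w) (g w)) ws) x'"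
    by (simp add: run_cons x'_def)
  have d: "distinct (map g ws)" "\<forall>w\<in>set ws. f w \<notin> g ` set ws" using Cons.prems by auto
  note IH = Cons.IH[OF d, where x=x' and v=v]
  show ?case
  proof (intro conjI impI)
    assume vn: "v \<notin> g ` set (w0 # ws)"
    have "run (map (\<lambda>w. CNOT (f w) (g w)) (w0 # ws)) x v = run (map (\<lambda>w. CNOT (f w) (g w)) ws) x' v"
      by (simp only: list.map r)
    also have "\<dots> = x' v" using IH vn by auto
    also have "\<dots> = x v" using vn by (simp add: x'_def)
    finally show "run (map (\<lambda>w. CNOT (f w) (g w)) (w0 # ws)) x v = x v" .
  next
    assume v: "v \<in> set (w0 # ws)"
    show "run (map (\<lambda>w. CNOT (f w) (g w)) (w0 # ws)) x (g v) = (x (g v) \<noteq> x (f v))"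
    proof (cases "v = w0")
      case True
      have n: "g w0 \<notin> g ` set ws" using Cons.prems(1) by auto
      have "run (map (\<lambda>w. CNOT (f w) (g w)) (w0 # ws)) x (g v) = run (map (\<lambda>w. CNOT (f w) (g w)) ws) x' (g w0)"
        using True by (simp only: list.map r)
      also have "\<dots> = x' (g w0)" using Cons.IH[OF d, where x=x' and v="g w0"] n by auto
      finally show ?thesis using True by (simp add: x'_def)
    next
      case False
      then have vws: "v \<in> set ws" using v by simp
      have "g v \<noteq> g w0" using Cons.prems(1) vws by (auto simp: image_iff)
      moreover have "f v \<noteq> g w0" using Cons.prems(2) vws by auto
      ultimately have xx: "x' (g v) = x (g v)" "x' (f v) = x (f v)" by (simp_all add: x'_def)
      have "run (map (\<lambda>w. CNOT (f w) (g w)) (w0 # ws)) x (g v) = run (map (\<lambda>w. CNOT (f w) (g w)) ws) x' (g v)"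
        by (simp only: list.map r)
      also have "\<dots> = (x' (g v) \<noteq> x' (f v))" using IH vws by blast
      finally show ?thesis using xx by simp
    qed
  qed
qed


definition sl :: "nat \<Rightarrow> nat \<Rightarrow> nat list list" where "sl L d = List.n_lists d [0..<L]"

lemma set_sl: "set (sl L d) = sites L d"
  by (auto simp: sl_def set_n_lists sites_def)

lemma distinct_sl: "distinct (sl L d)"
  by (simp add: sl_def distinct_n_lists)

lemma length_sl: "length (sl L d) = L ^ d"
  by (simp add: sl_def length_n_lists)

lemma card_sites: "card (sites L d) = L ^ d"
  using distinct_card[OF distinct_sl, of L d] by (simp add: set_sl length_sl)

lemma in_sites: "v \<in> sites L d \<longleftrightarrow> length v = d \<and> (\<forall>i<d. v ! i < L)"
  by (auto simp: sites_def all_set_conv_all_nth)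

lemma sites_upd: "v \<in> sites L d \<Longrightarrow> s < L \<Longrightarrow> v[p := s] \<in> sites L d"
  unfolding sites_def using set_update_subset_insert[of v p s] by auto

lemma l1dist_upd:
  assumes "p < length v"
  shows "l1dist (v[p := a]) v = nat \<bar>int a - int (v ! p)\<bar>"
proof -
  have "l1dist (v[p := a]) v = (\<Sum>i<length v. if i = p then nat \<bar>int a - int (v ! p)\<bar> else 0)"
    unfolding l1dist_def using assms by (intro sum.cong) (auto simp: nth_list_update)
  also have "\<dots> = nat \<bar>int a - int (v ! p)\<bar>" using assms by (simp add: sum.delta)
  finally show ?thesis .
qed

lemma of_bool_neq: "(of_bool (a \<noteq> b) :: bit) = of_bool a + of_bool b"
  by (cases a; cases b) simp_all

lemma distinct_pairs:
  "distinct (map f ws) \<Longrightarrow> distinct (map g ws) \<Longrightarrow> f ` set ws \<inter> g ` set ws = {}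
   \<Longrightarrow> distinct (concat (map (\<lambda>w. [f w, g w]) ws))"
proof (induction ws)
  case Nil
  then show ?case by simp
next
  case (Cons w ws)
  have "set (concat (map (\<lambda>w. [f w, g w]) ws)) = f ` set ws \<union> g ` set ws" by auto
  then show ?case using Cons by auto
qed

lemma distinct_singles:
  "distinct (map f ws) \<Longrightarrow> distinct (concat (map (\<lambda>w. [f w]) ws))"
  by (induction ws) auto

lemma sum_filter_lengths:
  assumes "distinct ks" "distinct xs"
    and ex: "\<And>k k' v. k \<in> set ks \<Longrightarrow> k' \<in> set ks \<Longrightarrow> P k v \<Longrightarrow> P k' v \<Longrightarrow> k = k'"
  shows "sum_list (map (\<lambda>k. length (filter (P k) xs)) ks) \<le> length xs"
proof -
  have d: "distinct (concat (map (\<lambda>k. filter (P k) xs) ks))"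
    using assms
  proof (induction ks)
    case Nil then show ?case by simp
  next
    case (Cons k ks)
    have "distinct (concat (map (\<lambda>k. filter (P k) xs) ks))"
      using Cons by (intro Cons.IH) auto
    moreover have "set (filter (P k) xs) \<inter> set (concat (map (\<lambda>k. filter (P k) xs) ks)) = {}"
      using Cons.prems(1) Cons.prems(3)[of k] by fastforce
    ultimately show ?case using Cons.prems by simp
  qed
  have "sum_list (map (\<lambda>k. length (filter (P k) xs)) ks) = length (concat (map (\<lambda>k. filter (P k) xs) ks))"
    by (simp add: length_concat o_def)
  also have "\<dots> = card (set (concat (map (\<lambda>k. filter (P k) xs) ks)))"
    using distinct_card[OF d] by simp
  also have "\<dots> \<le> card (set xs)" by (intro card_mono) auto
  also have "\<dots> = length xs" using distinct_card[OF assms(2)] by simp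
  finally show ?thesis .
qed

definition pos :: "bool \<Rightarrow> nat \<Rightarrow> nat \<Rightarrow> nat" where
  "pos dir L t = (if dir then t else L - 1 - t)"

definition cmpd :: "bool \<Rightarrow> nat \<Rightarrow> nat \<Rightarrow> bool" where
  "cmpd dir s t = (if dir then s \<le> t else t \<le> s)"

lemma pos_lt: "t < L \<Longrightarrow> pos dir L t < L" by (auto simp: pos_def)
lemma pos_pos: "t < L \<Longrightarrow> pos dir L (pos dir L t) = t" by (auto simp: pos_def)
lemma pos_inj: "s < L \<Longrightarrow> t < L \<Longrightarrow> pos dir L s = pos dir L t \<longleftrightarrow> s = t" by (auto simp: pos_def)
lemma cmpd_pos: "s < L \<Longrightarrow> t < L \<Longrightarrow> cmpd dir s t \<longleftrightarrow> pos dir L s \<le> pos dir L t"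
  by (auto simp: pos_def cmpd_def)

definition tlayer :: "nat \<Rightarrow> nat \<Rightarrow> nat \<Rightarrow> bool \<Rightarrow> nat \<Rightarrow> gate list" where
  "tlayer L d p dir k = map (\<lambda>v. CNOT (v[p := pos dir L (k - 1)]) v)
       (filter (\<lambda>v. v ! p = pos dir L k) (sl L d))"

definition tcirc :: "nat \<Rightarrow> nat \<Rightarrow> nat \<Rightarrow> bool \<Rightarrow> circuit" where
  "tcirc L d p dir = map (tlayer L d p dir) [1..<L]"

definition tcircs :: "nat \<Rightarrow> nat \<Rightarrow> (nat \<times> bool) list \<Rightarrow> circuit" where
  "tcircs L d axs = concat (map (\<lambda>(p, dir). tcirc L d p dir) axs)"

lemma tlayer_run:
  assumes p: "p < d" and k: "1 \<le> k" "k < L" and v: "v \<in> sites L d"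
  shows "run (tlayer L d p dir k) y v =
     (if v ! p = pos dir L k then (y v \<noteq> y (v[p := pos dir L (k - 1)])) else y v)"
proof -
  define ws where "ws = filter (\<lambda>v. v ! p = pos dir L k) (sl L d)"
  have lenv: "length v = d" using v by (simp add: in_sites)
  have ne: "pos dir L (k - 1) \<noteq> pos dir L k" using k by (simp add: pos_inj)
  have dist: "distinct (map (\<lambda>w. w) ws)" using distinct_sl by (simp add: ws_def)
  have ctl: "\<forall>w\<in>set ws. w[p := pos dir L (k - 1)] \<notin> (\<lambda>w. w) ` set ws"
    using ne p by (auto simp: ws_def set_sl in_sites)
  note rl = run_layer[OF dist ctl, of v y]
  have tl: "tlayer L d p dir k = map (\<lambda>w. CNOT (w[p := pos dir L (k - 1)]) w) ws"
    by (simp add: tlayer_def ws_def)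
  show ?thesis
  proof (cases "v ! p = pos dir L k")
    case True
    then have "v \<in> set ws" using v by (simp add: ws_def set_sl)
    then show ?thesis using rl True by (simp add: tl)
  next
    case False
    then have "v \<notin> set ws" by (simp add: ws_def)
    then show ?thesis using rl False by (simp add: tl)
  qed
qed

lemma tcirc_inv:
  assumes p: "p < d" and k: "k < L"
  shows "\<forall>v\<in>sites L d. bb (fold run (map (tlayer L d p dir) [1..<Suc k]) x) v =
     (if pos dir L (v ! p) \<le> k then (\<Sum>s\<in>{s. s < L \<and> pos dir L s \<le> pos dir L (v ! p)}. bb x (v[p := s]))
      else bb x v)"
  using k
proof (induction k)
  case 0
  show ?case
  proof
    fix v assume v: "v \<in> sites L d"
    have vp: "v ! p < L" using v p by (simp add: in_sites)
    show "bb (fold run (map (tlayer L d p dir) [1..<Suc 0]) x) v =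
     (if pos dir L (v ! p) \<le> 0 then (\<Sum>s\<in>{s. s < L \<and> pos dir L s \<le> pos dir L (v ! p)}. bb x (v[p := s]))
      else bb x v)"
    proof (cases "pos dir L (v ! p) = 0")
      case True
      have "{s. s < L \<and> pos dir L s \<le> pos dir L (v ! p)} = {v ! p}"
      proof (intro set_eqI iffI)
        fix s assume "s \<in> {s. s < L \<and> pos dir L s \<le> pos dir L (v ! p)}"
        then have "s < L" "pos dir L s = pos dir L (v ! p)" using True by auto
        then show "s \<in> {v ! p}" using pos_inj vp by blast
      next
        fix s assume "s \<in> {v ! p}" then show "s \<in> {s. s < L \<and> pos dir L s \<le> pos dir L (v ! p)}" using vp by auto
      qed
      then show ?thesis using True by simp
    next
      case False
      then show ?thesis by simp
    qed
  qed
next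
  case (Suc k)
  define R where "R = fold run (map (tlayer L d p dir) [1..<Suc k]) x"
  have IH: "\<forall>v\<in>sites L d. bb R v = (if pos dir L (v ! p) \<le> k then (\<Sum>s\<in>{s. s < L \<and> pos dir L s \<le> pos dir L (v ! p)}. bb x (v[p := s]))
      else bb x v)" using Suc by (simp add: R_def)
  have eq: "fold run (map (tlayer L d p dir) [1..<Suc (Suc k)]) x = run (tlayer L d p dir (Suc k)) R"
    by (simp add: R_def)
  show ?case
  proof
    fix v assume v: "v \<in> sites L d"
    have vp: "v ! p < L" and lenv: "length v = d" using v p by (auto simp: in_sites)
    note tr = tlayer_run[OF p _ Suc.prems v, of dir R]
    show "bb (fold run (map (tlayer L d p dir) [1..<Suc (Suc k)]) x) v =
     (if pos dir L (v ! p) \<le> Suc k then (\<Sum>s\<in>{s. s < L \<and> pos dir L s \<le> pos dir L (v ! p)}. bb x (v[p := s]))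
      else bb x v)"
    proof (cases "v ! p = pos dir L (Suc k)")
      case True
      have pv: "pos dir L (v ! p) = Suc k" using True Suc.prems by (simp add: pos_pos)
      define u where "u = v[p := pos dir L k]"
      have u: "u \<in> sites L d" using v Suc.prems by (simp add: u_def sites_upd pos_lt)
      have up: "u ! p = pos dir L k" using p lenv by (simp add: u_def)
      have pu: "pos dir L (u ! p) = k" using up Suc.prems by (simp add: pos_pos)
      have us: "u[p := s] = v[p := s]" for s by (simp add: u_def)
      have bu: "bb R u = (\<Sum>s\<in>{s. s < L \<and> pos dir L s \<le> k}. bb x (v[p := s]))"
        using IH u pu by (simp add: us)
      have bv: "bb R v = bb x v" using IH v pv by simp
      have set_eq: "{s. s < L \<and> pos dir L s \<le> pos dir L (v ! p)} = insert (v ! p) {s. s < L \<and> pos dir L s \<le> k}"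
      proof (intro set_eqI iffI)
        fix s assume s: "s \<in> {s. s < L \<and> pos dir L s \<le> pos dir L (v ! p)}"
        show "s \<in> insert (v ! p) {s. s < L \<and> pos dir L s \<le> k}"
        proof (cases "s = v ! p")
          case False
          then have "pos dir L s \<noteq> pos dir L (v ! p)" using pos_inj[of s L "v ! p" dir] s vp by auto
          then show ?thesis using s pv by auto
        qed simp
      next
        fix s assume "s \<in> insert (v ! p) {s. s < L \<and> pos dir L s \<le> k}"
        then show "s \<in> {s. s < L \<and> pos dir L s \<le> pos dir L (v ! p)}" using pv vp by auto
      qed
      have nin: "v ! p \<notin> {s. s < L \<and> pos dir L s \<le> k}" using pv by auto
      have "bb (run (tlayer L d p dir (Suc k)) R) v = bb R v + bb R u"
        using tr True by (simp add: u_def of_bool_neq)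
      also have "\<dots> = (\<Sum>s\<in>{s. s < L \<and> pos dir L s \<le> pos dir L (v ! p)}. bb x (v[p := s]))"
        unfolding set_eq bv bu using nin by simp
      finally show ?thesis using eq pv by simp
    next
      case False
      have pv: "pos dir L (v ! p) \<noteq> Suc k" using False vp Suc.prems by (metis pos_pos)
      have "bb (run (tlayer L d p dir (Suc k)) R) v = bb R v" using tr False by simp
      then show ?thesis using eq IH v pv by auto
    qed
  qed
qed

lemma tcirc_run:
  assumes p: "p < d" and v: "v \<in> sites L d"
  shows "bb (run (concat (tcirc L d p dir)) x) v = (\<Sum>s\<in>{s. s < L \<and> cmpd dir s (v ! p)}. bb x (v[p := s]))"
proof -
  have vp: "v ! p < L" using v p by (simp add: in_sites)
  then have L: "L = Suc (L - 1)" by simp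
  have L': "Suc (L - 1) = L" using vp by simp
  have r: "run (concat (tcirc L d p dir)) x = fold run (map (tlayer L d p dir) [1..<L]) x"
    by (simp only: tcirc_def run_concat)
  have inv: "\<forall>v\<in>sites L d. bb (fold run (map (tlayer L d p dir) [1..<L]) x) v =
     (if pos dir L (v ! p) \<le> L - 1 then (\<Sum>s\<in>{s. s < L \<and> pos dir L s \<le> pos dir L (v ! p)}. bb x (v[p := s]))
      else bb x v)"
    using tcirc_inv[OF p, where k="L - 1" and dir=dir and x=x] vp unfolding L' by simp
  have "pos dir L (v ! p) \<le> L - 1" using pos_lt[OF vp, of dir] by simp
  moreover have "{s. s < L \<and> pos dir L s \<le> pos dir L (v ! p)} = {s. s < L \<and> cmpd dir s (v ! p)}"
    using vp cmpd_pos by auto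
  ultimately show ?thesis using inv v unfolding r by simp
qed

definition relx :: "(nat \<times> bool) list \<Rightarrow> nat \<Rightarrow> nat \<Rightarrow> nat \<Rightarrow> bool" where
  "relx axs q a b = (case map_of axs q of None \<Rightarrow> a = b | Some dir \<Rightarrow> cmpd dir a b)"

lemma tcircs_run:
  assumes "distinct (map fst axs)" "\<forall>a\<in>set axs. fst a < d" "v \<in> sites L d"
  shows "bb (run (concat (tcircs L d axs)) x) v = (\<Sum>u\<in>{u\<in>sites L d. \<forall>q<d. relx axs q (u ! q) (v ! q)}. bb x u)"
  using assms
proof (induction axs arbitrary: v rule: rev_induct)
  case Nil
  have "{u\<in>sites L d. \<forall>q<d. relx [] q (u ! q) (v ! q)} = {v}"
    using Nil.prems by (auto simp: relx_def in_sites intro: nth_equalityI)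
  then show ?case by (simp add: tcircs_def run_def)
next
  case (snoc a axs)
  obtain p dir where a: "a = (p, dir)" by (cases a)
  have p: "p < d" and pn: "p \<notin> fst ` set axs" and dax: "distinct (map fst axs)"
    and axd: "\<forall>a\<in>set axs. fst a < d" using snoc.prems a by auto
  have mp: "map_of axs p = None" using pn by (simp add: map_of_eq_None_iff)
  define R where "R = run (concat (tcircs L d axs)) x"
  have "run (concat (tcircs L d (axs @ [a]))) x = run (concat (tcirc L d p dir)) R"
    by (simp add: tcircs_def R_def run_append a)
  then have "bb (run (concat (tcircs L d (axs @ [a]))) x) v
      = (\<Sum>s\<in>{s. s < L \<and> cmpd dir s (v ! p)}. bb R (v[p := s]))"
    using tcirc_run[OF p snoc.prems(3)] by simp
  also have "\<dots> = (\<Sum>s\<in>{s. s < L \<and> cmpd dir s (v ! p)}.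
        \<Sum>u\<in>{u\<in>{u\<in>sites L d. \<forall>q<d. relx (axs @ [a]) q (u ! q) (v ! q)}. u ! p = s}. bb x u)"
  proof (rule sum.cong[OF refl])
    fix s assume s: "s \<in> {s. s < L \<and> cmpd dir s (v ! p)}"
    have vs: "v[p := s] \<in> sites L d" using snoc.prems(3) s by (simp add: sites_upd)
    have lenv: "length v = d" using snoc.prems(3) by (simp add: in_sites)
    have "bb R (v[p := s]) = (\<Sum>u\<in>{u\<in>sites L d. \<forall>q<d. relx axs q (u ! q) (v[p := s] ! q)}. bb x u)"
      unfolding R_def by (rule snoc.IH[OF dax axd vs])
    also have "{u\<in>sites L d. \<forall>q<d. relx axs q (u ! q) (v[p := s] ! q)}
        = {u\<in>{u\<in>sites L d. \<forall>q<d. relx (axs @ [a]) q (u ! q) (v ! q)}. u ! p = s}"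
    proof -
      have r1: "relx axs q x1 x2 = relx (axs @ [a]) q x1 x2" if "q \<noteq> p" for q x1 x2
        using that by (simp add: relx_def a map_add_def split: option.splits)
      have r2: "relx axs p x1 x2 = (x1 = x2)" for x1 x2 using mp by (simp add: relx_def)
      have r3: "relx (axs @ [a]) p x1 x2 = cmpd dir x1 x2" for x1 x2
        using mp by (simp add: relx_def a map_add_def)
      show ?thesis
      proof (intro set_eqI iffI)
        fix u assume u: "u \<in> {u\<in>sites L d. \<forall>q<d. relx axs q (u ! q) (v[p := s] ! q)}"
        then have up: "u ! p = s" using r2[of "u ! p" s] p lenv by auto
        have "\<forall>q<d. relx (axs @ [a]) q (u ! q) (v ! q)"
        proof (intro allI impI)
          fix q assume q: "q < d"
          show "relx (axs @ [a]) q (u ! q) (v ! q)"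
          proof (cases "q = p")
            case True then show ?thesis using r3 up s by simp
          next
            case False
            have "relx axs q (u ! q) (v[p := s] ! q)" using u q by simp
            then have "relx axs q (u ! q) (v ! q)" using False by simp
            then show ?thesis using r1[OF False] by simp
          qed
        qed
        then show "u \<in> {u\<in>{u\<in>sites L d. \<forall>q<d. relx (axs @ [a]) q (u ! q) (v ! q)}. u ! p = s}"
          using u up by simp
      next
        fix u assume u: "u \<in> {u\<in>{u\<in>sites L d. \<forall>q<d. relx (axs @ [a]) q (u ! q) (v ! q)}. u ! p = s}"
        have "\<forall>q<d. relx axs q (u ! q) (v[p := s] ! q)"
        proof (intro allI impI)
          fix q assume q: "q < d"
          show "relx axs q (u ! q) (v[p := s] ! q)"
          proof (cases "q = p")
            case True then show ?thesis using r2 u lenv p by simp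
          next
            case False then show ?thesis using u q r1[OF False] by simp
          qed
        qed
        then show "u \<in> {u\<in>sites L d. \<forall>q<d. relx axs q (u ! q) (v[p := s] ! q)}" using u by simp
      qed
    qed
    finally show "bb R (v[p := s]) = (\<Sum>u\<in>{u\<in>{u\<in>sites L d. \<forall>q<d. relx (axs @ [a]) q (u ! q) (v ! q)}. u ! p = s}. bb x u)" .
  qed
  also have "\<dots> = (\<Sum>u\<in>{u\<in>sites L d. \<forall>q<d. relx (axs @ [a]) q (u ! q) (v ! q)}. bb x u)"
  proof (rule sum.group)
    show "finite {u\<in>sites L d. \<forall>q<d. relx (axs @ [a]) q (u ! q) (v ! q)}" using finite_sites by simp
    show "finite {s. s < L \<and> cmpd dir s (v ! p)}" by simp
    show "(\<lambda>u. u ! p) ` {u\<in>sites L d. \<forall>q<d. relx (axs @ [a]) q (u ! q) (v ! q)} \<subseteq> {s. s < L \<and> cmpd dir s (v ! p)}"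
    proof
      fix s assume "s \<in> (\<lambda>u. u ! p) ` {u\<in>sites L d. \<forall>q<d. relx (axs @ [a]) q (u ! q) (v ! q)}"
      then obtain u where u: "u \<in> sites L d" "\<forall>q<d. relx (axs @ [a]) q (u ! q) (v ! q)" "s = u ! p" by auto
      have "relx (axs @ [a]) p (u ! p) (v ! p)" using u(2) p by simp
      then have "cmpd dir (u ! p) (v ! p)" using mp by (simp add: relx_def a map_add_def)
      moreover have "u ! p < L" using u(1) p by (simp add: in_sites)
      ultimately show "s \<in> {s. s < L \<and> cmpd dir s (v ! p)}" using u(3) by simp
    qed
  qed
  finally show ?case .
qed


lemma l1dist_one:
  assumes "length u = length v" "p < length v" "\<And>i. i < length v \<Longrightarrow> i \<noteq> p \<Longrightarrow> u ! i = v ! i"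
  shows "l1dist u v = nat \<bar>int (u ! p) - int (v ! p)\<bar>"
proof -
  have "l1dist u v = (\<Sum>i<length v. if i = p then nat \<bar>int (u ! p) - int (v ! p)\<bar> else 0)"
    unfolding l1dist_def using assms by (intro sum.cong) auto
  also have "\<dots> = nat \<bar>int (u ! p) - int (v ! p)\<bar>" using assms by (simp add: sum.delta)
  finally show ?thesis .
qed

lemma valid_layer_CNOT:
  assumes "\<forall>w\<in>set ws. f w \<in> sites L d \<and> g w \<in> sites L d \<and> l1dist (f w) (g w) = 1"
    "distinct (map f ws)" "distinct (map g ws)" "f ` set ws \<inter> g ` set ws = {}"
  shows "valid_layer L d (map (\<lambda>w. CNOT (f w) (g w)) ws)"
proof -
  have "concat (map gate_qubits (map (\<lambda>w. CNOT (f w) (g w)) ws)) = concat (map (\<lambda>w. [f w, g w]) ws)"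
    by (simp add: o_def)
  then show ?thesis using assms distinct_pairs[of f ws g] by (auto simp: valid_layer_def)
qed

lemma valid_layer_CZ:
  assumes "\<forall>w\<in>set ws. f w \<in> sites L d \<and> g w \<in> sites L d \<and> l1dist (f w) (g w) = 1"
    "distinct (map f ws)" "distinct (map g ws)" "f ` set ws \<inter> g ` set ws = {}"
  shows "valid_layer L d (map (\<lambda>w. CZ (f w) (g w)) ws)"
proof -
  have "concat (map gate_qubits (map (\<lambda>w. CZ (f w) (g w)) ws)) = concat (map (\<lambda>w. [f w, g w]) ws)"
    by (simp add: o_def)
  then show ?thesis using assms distinct_pairs[of f ws g] by (auto simp: valid_layer_def)
qed

lemma valid_layer_Z:
  assumes "\<forall>w\<in>set ws. f w \<in> sites L d" "distinct (map f ws)"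
  shows "valid_layer L d (map (\<lambda>w. G1 (f w) Zm) ws)"
proof -
  have "concat (map gate_qubits (map (\<lambda>w. G1 (f w) Zm) ws)) = concat (map (\<lambda>w. [f w]) ws)"
    by (simp add: o_def)
  then show ?thesis using assms distinct_singles[of f ws] Zm_clifford by (auto simp: valid_layer_def)
qed

lemma length_filter_sl: "length (filter P (sl L d)) \<le> L ^ d"
  using length_filter_le[of P "sl L d"] by (simp add: length_sl)

lemma upd_inj: "v ! p = w ! p \<Longrightarrow> v[p := a] = w[p := a] \<Longrightarrow> v = w"
  by (metis list_update_id list_update_overwrite)

lemma tlayer_valid:
  assumes p: "p < d" and k: "1 \<le> k" "k < L"
  shows "valid_layer L d (tlayer L d p dir k)"
proof -
  define ws where "ws = filter (\<lambda>v. v ! p = pos dir L k) (sl L d)"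
  have ne: "pos dir L (k - 1) \<noteq> pos dir L k" using k by (simp add: pos_inj)
  have diff: "nat \<bar>int (pos dir L (k - 1)) - int (pos dir L k)\<bar> = 1"
    using k by (auto simp: pos_def)
  have t: "tlayer L d p dir k = map (\<lambda>w. CNOT (w[p := pos dir L (k - 1)]) w) ws"
    by (simp add: tlayer_def ws_def)
  have A: "\<forall>w\<in>set ws. w[p := pos dir L (k - 1)] \<in> sites L d \<and> (\<lambda>w. w) w \<in> sites L d \<and> l1dist (w[p := pos dir L (k - 1)]) ((\<lambda>w. w) w) = 1"
  proof
    fix w assume w: "w \<in> set ws"
    then have ws: "w \<in> sites L d" "w ! p = pos dir L k" by (auto simp: ws_def set_sl)
    have lw: "length w = d" using ws by (simp add: in_sites)
    have "l1dist (w[p := pos dir L (k - 1)]) w = 1"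
      using l1dist_one[of "w[p := pos dir L (k - 1)]" w p] p lw ws diff by simp
    then show "w[p := pos dir L (k - 1)] \<in> sites L d \<and> (\<lambda>w. w) w \<in> sites L d \<and> l1dist (w[p := pos dir L (k - 1)]) ((\<lambda>w. w) w) = 1"
      using ws k by (simp add: sites_upd pos_lt)
  qed
  have B: "distinct (map (\<lambda>w. w[p := pos dir L (k - 1)]) ws)"
  proof -
    have "inj_on (\<lambda>w. w[p := pos dir L (k - 1)]) (set ws)"
    proof (rule inj_onI)
      fix x y assume xy: "x \<in> set ws" "y \<in> set ws" "x[p := pos dir L (k - 1)] = y[p := pos dir L (k - 1)]"
      then have "x ! p = y ! p" by (simp add: ws_def)
      then show "x = y" by (rule upd_inj[OF _ xy(3)])
    qed
    moreover have "distinct ws" using distinct_sl by (simp add: ws_def)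
    ultimately show ?thesis by (simp add: distinct_map)
  qed
  have C: "distinct (map (\<lambda>w. w) ws)" using distinct_sl by (simp add: ws_def)
  have D: "(\<lambda>w. w[p := pos dir L (k - 1)]) ` set ws \<inter> (\<lambda>w. w) ` set ws = {}"
  proof (rule ccontr)
    assume "(\<lambda>w. w[p := pos dir L (k - 1)]) ` set ws \<inter> (\<lambda>w. w) ` set ws \<noteq> {}"
    then obtain w w' where w: "w \<in> set ws" "w' \<in> set ws" "w[p := pos dir L (k - 1)] = w'" by auto
    have lw: "length w = d" using w(1) by (simp add: ws_def set_sl in_sites)
    have w': "w' ! p = pos dir L k" using w(2) by (simp add: ws_def)
    have "w[p := pos dir L (k - 1)] ! p = pos dir L (k - 1)" using p lw by simp
    then show False using w(3) w' ne by simp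
  qed
  have "valid_layer L d (map (\<lambda>w. CNOT (w[p := pos dir L (k - 1)]) ((\<lambda>w. w) w)) ws)"
    by (rule valid_layer_CNOT[OF A B C D])
  then show ?thesis unfolding t by simp
qed

lemma tcirc_valid: "p < d \<Longrightarrow> valid_circuit L d (tcirc L d p dir)"
  by (auto simp: valid_circuit_def tcirc_def intro: tlayer_valid)

lemma tcirc_depth: "depth (tcirc L d p dir) = L - 1"
  by (simp add: depth_def tcirc_def)

lemma tcirc_count: "gate_count (tcirc L d p dir) \<le> L ^ d"
proof -
  have "gate_count (tcirc L d p dir) = sum_list (map (\<lambda>k. length (filter (\<lambda>v. v ! p = pos dir L k) (sl L d))) [1..<L])"
    by (simp add: gate_count_def tcirc_def tlayer_def o_def)
  also have "\<dots> \<le> length (sl L d)"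
    by (rule sum_filter_lengths) (auto simp: distinct_sl pos_inj)
  finally show ?thesis by (simp add: length_sl)
qed

lemma tcirc_cgate: "p < d \<Longrightarrow> \<forall>g\<in>set (concat (tcirc L d p dir)). cgate g"
proof -
  assume p: "p < d"
  show ?thesis
  proof
    fix g assume "g \<in> set (concat (tcirc L d p dir))"
    then obtain k v where k: "1 \<le> k" "k < L" and v: "v \<in> sites L d" "v ! p = pos dir L k"
      and g: "g = CNOT (v[p := pos dir L (k - 1)]) v"
      by (auto simp: tcirc_def tlayer_def set_sl)
    have "pos dir L (k - 1) \<noteq> pos dir L k" using k by (simp add: pos_inj)
    then have "v[p := pos dir L (k - 1)] \<noteq> v" using v p
      by (metis in_sites nth_list_update_eq)
    then show "cgate g" using g by simp
  qed
qed

lemma tcircs_valid: "\<forall>a\<in>set axs. fst a < d \<Longrightarrow> valid_circuit L d (tcircs L d axs)"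
  by (auto simp: tcircs_def valid_circuit_def tcirc_valid[unfolded valid_circuit_def])

lemma tcircs_depth: "depth (tcircs L d axs) = length axs * (L - 1)"
  by (induction axs) (auto simp: tcircs_def depth_def tcirc_def)

lemma tcircs_count: "gate_count (tcircs L d axs) \<le> length axs * L ^ d"
proof (induction axs)
  case Nil then show ?case by (simp add: tcircs_def gate_count_def)
next
  case (Cons a axs)
  obtain p dir where a: "a = (p, dir)" by (cases a)
  have "gate_count (tcircs L d (a # axs)) = gate_count (tcirc L d p dir) + gate_count (tcircs L d axs)"
    by (simp add: tcircs_def a gate_count_append)
  then show ?case using Cons tcirc_count[of L d p dir] by simp
qed

lemma tcircs_cgate: "\<forall>a\<in>set axs. fst a < d \<Longrightarrow> \<forall>g\<in>set (concat (tcircs L d axs)). cgate g"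
  using tcirc_cgate by (fastforce simp: tcircs_def)

lemma isD_concat_list:
  assumes "\<And>e. e \<in> set es \<Longrightarrow> isD (F e) (\<Phi> e)"
  shows "isD (concat (map F es)) (\<lambda>c. sum_list (map (\<lambda>e. \<Phi> e c) es))"
  using assms
proof (induction es)
  case Nil then show ?case using isD_nil by simp
next
  case (Cons e es)
  have "isD (F e @ concat (map F es)) (\<lambda>c. \<Phi> e c + sum_list (map (\<lambda>e. \<Phi> e c) es))"
    using Cons by (intro isD_append) auto
  then show ?case by simp
qed

lemma sum_list_dgates_map:
  "sum_list (map (\<lambda>g. gph g c) (map F ws)) = sum_list (map (\<lambda>w. gph (F w) c) ws)"
  by (simp add: o_def)


declare finite_sites[simp]

lemma parity_dn: "1 \<le> (b::nat) \<Longrightarrow> (b - 1) mod 2 \<noteq> b mod 2" by (cases b) (auto simp: mod_Suc)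

lemma bit_sq: "(x::bit) * x = x" by (cases x) simp_all

definition zY :: "nat list \<Rightarrow> nat list \<Rightarrow> nat list" where
  "zY Y w = map (\<lambda>q. if q \<in> set Y then 0 else w ! q) [0..<length w]"

lemma zY_length[simp]: "length (zY Y w) = length w" by (simp add: zY_def)
lemma zY_nth: "q < length w \<Longrightarrow> zY Y w ! q = (if q \<in> set Y then 0 else w ! q)"
  by (simp add: zY_def)

lemma zY_sites: "w \<in> sites L d \<Longrightarrow> zY Y w \<in> sites L d"
  by (auto simp: in_sites zY_nth)

definition Sz :: "nat \<Rightarrow> nat \<Rightarrow> nat list \<Rightarrow> nat list set" where
  "Sz L d Y = {w\<in>sites L d. \<forall>y\<in>set Y. w ! y = 0}"

lemma zY_Sz: "w \<in> sites L d \<Longrightarrow> \<forall>y\<in>set Y. y < d \<Longrightarrow> zY Y w \<in> Sz L d Y"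
  by (auto simp: Sz_def zY_sites zY_nth in_sites)

lemma zY_eq_iff:
  assumes "w \<in> sites L d" "r \<in> Sz L d Y" "\<forall>y\<in>set Y. y < d"
  shows "zY Y w = r \<longleftrightarrow> (\<forall>q<d. q \<notin> set Y \<longrightarrow> w ! q = r ! q)"
proof
  assume "zY Y w = r"
  then show "\<forall>q<d. q \<notin> set Y \<longrightarrow> w ! q = r ! q" using assms by (auto simp: zY_nth in_sites)
next
  assume a: "\<forall>q<d. q \<notin> set Y \<longrightarrow> w ! q = r ! q"
  show "zY Y w = r"
  proof (rule nth_equalityI)
    show "length (zY Y w) = length r" using assms by (simp add: in_sites Sz_def)
    fix q assume "q < length (zY Y w)"
    then have q: "q < d" using assms by (simp add: in_sites)
    then show "zY Y w ! q = r ! q" using a assms by (auto simp: zY_nth in_sites Sz_def)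
  qed
qed

definition axsA :: "nat list \<Rightarrow> nat \<Rightarrow> (nat \<times> bool) list" where
  "axsA Y p = map (\<lambda>y. (y, False)) Y @ [(p, True)]"

lemma map_of_axsA: "p \<notin> set Y \<Longrightarrow> map_of (axsA Y p) q =
   (if q \<in> set Y then Some False else if q = p then Some True else None)"
proof -
  assume pY: "p \<notin> set Y"
  have m: "map_of (map (\<lambda>y. (y, False)) Y) q = (if q \<in> set Y then Some False else None)"
    by (induction Y) auto
  show ?thesis using pY by (auto simp: axsA_def map_add_def m split: option.splits)
qed

definition WA :: "nat \<Rightarrow> nat \<Rightarrow> nat list \<Rightarrow> nat \<Rightarrow> (nat list \<Rightarrow> bool) \<Rightarrow> nat \<Rightarrow> nat list list" where
  "WA L d Y p sel e = filter (\<lambda>w. (\<forall>y\<in>set Y. w ! y = 0) \<and> sel w \<and> 1 \<le> w ! p \<and> w ! p mod 2 = e) (sl L d)"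

definition dnA :: "nat \<Rightarrow> nat list \<Rightarrow> nat list" where "dnA p w = w[p := w ! p - 1]"

definition phAl :: "nat \<Rightarrow> nat \<Rightarrow> nat list \<Rightarrow> nat \<Rightarrow> (nat list \<Rightarrow> bool) \<Rightarrow> nat \<Rightarrow> circuit" where
  "phAl L d Y p sel e = [map (\<lambda>w. CZ w (dnA p w)) (WA L d Y p sel e), map (\<lambda>w. G1 (dnA p w) Zm) (WA L d Y p sel e)]"

definition phA :: "nat \<Rightarrow> nat \<Rightarrow> nat list \<Rightarrow> nat \<Rightarrow> (nat list \<Rightarrow> bool) \<Rightarrow> circuit" where
  "phA L d Y p sel = phAl L d Y p sel 0 @ phAl L d Y p sel 1"

definition engA :: "nat \<Rightarrow> nat \<Rightarrow> nat list \<Rightarrow> nat \<Rightarrow> (nat list \<Rightarrow> bool) \<Rightarrow> circuit" where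
  "engA L d Y p sel = tcircs L d (axsA Y p) @ phA L d Y p sel @ revc (tcircs L d (axsA Y p))"

definition boxA :: "nat \<Rightarrow> nat list \<Rightarrow> nat \<Rightarrow> nat list \<Rightarrow> nat list \<Rightarrow> bool" where
  "boxA d Y p w u = ((\<forall>q<d. q \<notin> set Y \<longrightarrow> q \<noteq> p \<longrightarrow> u ! q = w ! q) \<and> u ! p < w ! p)"

locale engA_ctx =
  fixes L d :: nat and Y :: "nat list" and p :: nat and sel :: "nat list \<Rightarrow> bool"
  assumes Yd: "\<forall>y\<in>set Y. y < d" and distY: "distinct Y" and pd: "p < d" and pY: "p \<notin> set Y"
    and sel_inv: "\<And>w w'. w \<in> sites L d \<Longrightarrow> w' \<in> sites L d \<Longrightarrow>
        (\<forall>q<d. q \<notin> set Y \<longrightarrow> w ! q = w' ! q) \<Longrightarrow> sel w = sel w'"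
begin

lemma axs_ok: "distinct (map fst (axsA Y p))" "\<forall>a\<in>set (axsA Y p). fst a < d"
  using distY pY Yd pd by (auto simp: axsA_def o_def)

lemma WA_mem: "w \<in> set (WA L d Y p sel e) \<longleftrightarrow>
   w \<in> Sz L d Y \<and> sel w \<and> 1 \<le> w ! p \<and> w ! p mod 2 = e"
  by (auto simp: WA_def set_sl Sz_def)

lemma dnA_sites: "w \<in> sites L d \<Longrightarrow> dnA p w \<in> sites L d"
proof -
  assume w: "w \<in> sites L d"
  then have "w ! p < L" using pd by (simp add: in_sites)
  then have "w ! p - 1 < L" by simp
  then show ?thesis unfolding dnA_def using w by (rule sites_upd[rotated])
qed

lemma dnA_p: "w \<in> sites L d \<Longrightarrow> dnA p w ! p = w ! p - 1"
  using pd by (simp add: dnA_def in_sites)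

lemma dnA_q: "q \<noteq> p \<Longrightarrow> dnA p w ! q = w ! q"
  by (simp add: dnA_def)

lemma dnA_Sz: "w \<in> Sz L d Y \<Longrightarrow> dnA p w \<in> Sz L d Y"
proof -
  assume w: "w \<in> Sz L d Y"
  have "\<forall>y\<in>set Y. dnA p w ! y = 0"
  proof
    fix y assume y: "y \<in> set Y"
    then have "y \<noteq> p" using pY by auto
    then show "dnA p w ! y = 0" using w y by (simp add: dnA_q Sz_def)
  qed
  then show ?thesis using w dnA_sites by (simp add: Sz_def)
qed

lemma l1_dnA: "w \<in> sites L d \<Longrightarrow> 1 \<le> w ! p \<Longrightarrow> l1dist w (dnA p w) = 1"
proof -
  assume w: "w \<in> sites L d" "1 \<le> w ! p"
  have "l1dist w (dnA p w) = nat \<bar>int (w ! p) - int (dnA p w ! p)\<bar>"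
    using w pd by (intro l1dist_one) (auto simp: dnA_def in_sites)
  then show ?thesis using w by (simp add: dnA_p)
qed

lemma phAl_valid: "valid_circuit L d (phAl L d Y p sel e)"
proof -
  define W where "W = WA L d Y p sel e"
  have Wm: "\<And>w. w \<in> set W \<Longrightarrow> w \<in> sites L d \<and> 1 \<le> w ! p \<and> w ! p mod 2 = e"
    by (simp add: W_def WA_mem Sz_def)
  have dW: "distinct W" using distinct_sl by (simp add: W_def WA_def)
  have inj: "inj_on (dnA p) (set W)"
  proof (rule inj_onI)
    fix x y assume xy: "x \<in> set W" "y \<in> set W" "dnA p x = dnA p y"
    then have "dnA p x ! p = dnA p y ! p" by simp
    then have "x ! p - 1 = y ! p - 1" using Wm[OF xy(1)] Wm[OF xy(2)] dnA_p by simp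
    then have "x ! p = y ! p" using Wm[OF xy(1)] Wm[OF xy(2)] by arith
    then show "x = y" using xy(3) upd_inj[of x p y "x ! p - 1"] unfolding dnA_def by simp
  qed
  have dd: "distinct (map (dnA p) W)" using inj dW by (simp add: distinct_map)
  have disj: "(\<lambda>w. w) ` set W \<inter> dnA p ` set W = {}"
  proof (rule ccontr)
    assume "(\<lambda>w. w) ` set W \<inter> dnA p ` set W \<noteq> {}"
    then obtain x y where xy: "x \<in> set W" "y \<in> set W" "x = dnA p y" by auto
    have "x ! p = y ! p - 1" using xy(3) Wm[OF xy(2)] dnA_p by simp
    moreover have "x ! p mod 2 = e" "y ! p mod 2 = e" "1 \<le> y ! p" using Wm[OF xy(1)] Wm[OF xy(2)] by auto
    ultimately show False using parity_dn[of "y ! p"] by simp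
  qed
  have l1: "valid_layer L d (map (\<lambda>w. CZ ((\<lambda>w. w) w) (dnA p w)) W)"
    by (rule valid_layer_CZ) (use Wm dnA_sites l1_dnA dW dd disj in auto)
  have l2: "valid_layer L d (map (\<lambda>w. G1 (dnA p w) Zm) W)"
    by (rule valid_layer_Z) (use Wm dnA_sites dd in auto)
  show ?thesis using l1 l2 by (simp add: phAl_def valid_circuit_def W_def)
qed

lemma phAl_count: "gate_count (phAl L d Y p sel e) \<le> 2 * L ^ d"
proof -
  have "length (WA L d Y p sel e) \<le> L ^ d" unfolding WA_def by (rule length_filter_sl)
  then show ?thesis by (simp add: phAl_def gate_count_def)
qed

lemma phAl_isD: "isD (concat (phAl L d Y p sel e))
   (\<lambda>R. \<Sum>w\<in>set (WA L d Y p sel e). bb R w * bb R (dnA p w) + bb R (dnA p w))"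
proof -
  define W where "W = WA L d Y p sel e"
  have dW: "distinct W" using distinct_sl by (simp add: W_def WA_def)
  have c: "concat (phAl L d Y p sel e) = map (\<lambda>w. CZ w (dnA p w)) W @ map (\<lambda>w. G1 (dnA p w) Zm) W"
    by (simp add: phAl_def W_def)
  have "isD (concat (phAl L d Y p sel e)) (\<lambda>R. sum_list (map (\<lambda>g. gph g R) (concat (phAl L d Y p sel e))))"
    by (rule isD_dgates) (auto simp: c)
  moreover have "sum_list (map (\<lambda>g. gph g R) (concat (phAl L d Y p sel e)))
     = (\<Sum>w\<in>set W. bb R w * bb R (dnA p w) + bb R (dnA p w))" for R
  proof -
    have "sum_list (map (\<lambda>g. gph g R) (concat (phAl L d Y p sel e)))
       = sum_list (map (\<lambda>w. bb R w * bb R (dnA p w)) W) + sum_list (map (\<lambda>w. bb R (dnA p w)) W)"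
      by (simp add: c o_def of_bool_conj)
    also have "\<dots> = (\<Sum>w\<in>set W. bb R w * bb R (dnA p w)) + (\<Sum>w\<in>set W. bb R (dnA p w))"
      using dW by (simp add: sum_list_distinct_conv_sum_set)
    finally show ?thesis by (simp add: sum.distrib)
  qed
  ultimately show ?thesis by (simp add: W_def)
qed

lemma phA_isD: "isD (concat (phA L d Y p sel))
   (\<lambda>R. \<Sum>w\<in>{w\<in>Sz L d Y. sel w \<and> 1 \<le> w ! p}. bb R w * bb R (dnA p w) + bb R (dnA p w))"
proof -
  have "isD (concat (phAl L d Y p sel 0) @ concat (phAl L d Y p sel 1))
     (\<lambda>R. (\<Sum>w\<in>set (WA L d Y p sel 0). bb R w * bb R (dnA p w) + bb R (dnA p w))
        + (\<Sum>w\<in>set (WA L d Y p sel 1). bb R w * bb R (dnA p w) + bb R (dnA p w)))"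
    by (rule isD_append[OF phAl_isD phAl_isD])
  moreover have "set (WA L d Y p sel 0) \<union> set (WA L d Y p sel 1) = {w\<in>Sz L d Y. sel w \<and> 1 \<le> w ! p}"
    by (auto simp: WA_mem)
  moreover have "set (WA L d Y p sel 0) \<inter> set (WA L d Y p sel 1) = {}"
    by (auto simp: WA_mem)
  ultimately show ?thesis
    by (simp add: phA_def sum.union_disjoint[symmetric])
qed

definition Aset :: "nat list \<Rightarrow> nat list set" where
  "Aset v = {u\<in>sites L d. (\<forall>q<d. q \<notin> set Y \<longrightarrow> q \<noteq> p \<longrightarrow> u ! q = v ! q) \<and> u ! p \<le> v ! p}"
definition Bx :: "nat list \<Rightarrow> nat list set" where
  "Bx v = {u\<in>sites L d. boxA d Y p v u}"
definition Sl :: "nat list \<Rightarrow> nat list set" where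
  "Sl v = {u\<in>sites L d. \<forall>q<d. q \<notin> set Y \<longrightarrow> u ! q = v ! q}"

lemma reg_A:
  assumes v: "v \<in> Sz L d Y"
  shows "bb (run (concat (tcircs L d (axsA Y p))) c) v = (\<Sum>u\<in>Aset v. bb c u)"
proof -
  have vs: "v \<in> sites L d" using v by (simp add: Sz_def)
  have "{u\<in>sites L d. \<forall>q<d. relx (axsA Y p) q (u ! q) (v ! q)} = Aset v"
  proof -
    have "relx (axsA Y p) q x (v ! q) = (if q \<in> set Y then True else if q = p then x \<le> v ! p else x = v ! q)" for q x
      using v pY by (auto simp: relx_def map_of_axsA cmpd_def Sz_def)
    then show ?thesis unfolding Aset_def using pd pY by (auto simp: in_sites)
  qed
  then show ?thesis using tcircs_run[OF axs_ok vs] by simp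
qed

lemma A_split: "v \<in> Sz L d Y \<Longrightarrow> Aset v = Sl v \<union> Bx v \<and> Sl v \<inter> Bx v = {}"
  unfolding Aset_def Sl_def Bx_def boxA_def using pd pY by (auto simp: nat_less_le)

lemma Bx_dn: "v \<in> Sz L d Y \<Longrightarrow> 1 \<le> v ! p \<Longrightarrow> Bx v = Aset (dnA p v)"
proof -
  assume v: "v \<in> Sz L d Y" "1 \<le> v ! p"
  have vs: "v \<in> sites L d" using v by (simp add: Sz_def)
  show ?thesis unfolding Aset_def Bx_def boxA_def using v dnA_p[OF vs] dnA_q by auto
qed

lemma Bx_zero: "v ! p = 0 \<Longrightarrow> Bx v = {}"
  by (auto simp: Bx_def boxA_def)

lemma Bx_cong: "(\<forall>q<d. q \<notin> set Y \<longrightarrow> w ! q = r ! q) \<Longrightarrow> Bx w = Bx r"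
  unfolding Bx_def boxA_def using pd pY by auto

lemma engA_identity:
  "(\<Sum>w\<in>{w\<in>Sz L d Y. sel w \<and> 1 \<le> w ! p}.
      bb (run (concat (tcircs L d (axsA Y p))) c) w * bb (run (concat (tcircs L d (axsA Y p))) c) (dnA p w)
      + bb (run (concat (tcircs L d (axsA Y p))) c) (dnA p w))
   = qform (sites L d) (\<lambda>w u. of_bool (sel w \<and> boxA d Y p w u)) c"
proof -
  define G where "G v = bb (run (concat (tcircs L d (axsA Y p))) c) v" for v
  define BS where "BS v = (\<Sum>u\<in>Bx v. bb c u)" for v
  define SS where "SS v = (\<Sum>u\<in>Sl v. bb c u)" for v
  have fin: "finite (sites L d)" by (rule finite_sites)
  have finS: "finite (Sz L d Y)" using fin by (simp add: Sz_def)
  have GA: "G v = SS v + BS v" if v: "v \<in> Sz L d Y" for v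
  proof -
    have "G v = (\<Sum>u\<in>Aset v. bb c u)" using reg_A[OF v] by (simp add: G_def)
    also have "\<dots> = SS v + BS v"
    proof -
      have f: "finite (Sl v)" "finite (Bx v)" using fin by (auto simp: Sl_def Bx_def)
      show ?thesis using A_split[OF v] sum.union_disjoint[OF f, of "bb c"] unfolding SS_def BS_def by simp
    qed
    finally show ?thesis .
  qed
  have SSr: "SS v = G v + BS v" if "v \<in> Sz L d Y" for v
    using GA[OF that] by (simp add: add.assoc)
  have BSr: "BS v = (if 1 \<le> v ! p then G (dnA p v) else 0)" if v: "v \<in> Sz L d Y" for v
  proof (cases "1 \<le> v ! p")
    case True
    have "BS v = (\<Sum>u\<in>Aset (dnA p v). bb c u)" using Bx_dn[OF v True] by (simp add: BS_def)
    also have "\<dots> = G (dnA p v)" using reg_A[OF dnA_Sz[OF v]] by (simp add: G_def)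
    finally show ?thesis using True by simp
  next
    case False
    then show ?thesis using Bx_zero[of v] by (simp add: BS_def)
  qed
  have "qform (sites L d) (\<lambda>w u. of_bool (sel w \<and> boxA d Y p w u)) c
      = (\<Sum>w\<in>sites L d. of_bool (sel w) * bb c w * BS w)"
  proof -
    have per_w: "(\<Sum>u\<in>sites L d. of_bool (sel w \<and> boxA d Y p w u) * bb c w * bb c u) = of_bool (sel w) * bb c w * BS w" for w
    proof -
      have "(\<Sum>u\<in>sites L d. of_bool (sel w \<and> boxA d Y p w u) * bb c w * bb c u)
          = of_bool (sel w) * bb c w * (\<Sum>u\<in>sites L d. of_bool (boxA d Y p w u) * bb c u)"
        by (simp add: sum_distrib_left of_bool_conj mult_ac del: sum_of_bool_mult_eq)
      also have "(\<Sum>u\<in>sites L d. of_bool (boxA d Y p w u) * bb c u) = BS w"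
        by (simp add: BS_def Bx_def Int_def conj_commute)
      finally show ?thesis .
    qed
    show ?thesis unfolding qform_def by (rule sum.cong[OF refl]) (rule per_w)
  qed
  also have "\<dots> = (\<Sum>r\<in>Sz L d Y. \<Sum>w\<in>{w\<in>sites L d. zY Y w = r}. of_bool (sel w) * bb c w * BS w)"
    by (rule sum.group[symmetric]) (use fin finS zY_Sz Yd in auto)
  also have "\<dots> = (\<Sum>r\<in>Sz L d Y. of_bool (sel r) * BS r * SS r)"
  proof (rule sum.cong[OF refl])
    fix r assume r: "r \<in> Sz L d Y"
    have rs: "r \<in> sites L d" using r by (simp add: Sz_def)
    have set_eq: "{w\<in>sites L d. zY Y w = r} = Sl r"
      unfolding Sl_def using zY_eq_iff[OF _ r Yd] by auto
    have "(\<Sum>w\<in>{w\<in>sites L d. zY Y w = r}. of_bool (sel w) * bb c w * BS w)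
        = (\<Sum>w\<in>Sl r. of_bool (sel r) * BS r * bb c w)"
    proof (rule sum.cong)
      show "{w\<in>sites L d. zY Y w = r} = Sl r" by (rule set_eq)
      fix w assume w: "w \<in> Sl r"
      then have ws: "w \<in> sites L d" and eqc: "\<forall>q<d. q \<notin> set Y \<longrightarrow> w ! q = r ! q" by (auto simp: Sl_def)
      have "sel w = sel r" using sel_inv[OF ws rs eqc] .
      moreover have "BS w = BS r" using Bx_cong[OF eqc] by (simp add: BS_def)
      ultimately show "of_bool (sel w) * bb c w * BS w = of_bool (sel r) * BS r * bb c w"
        by (simp add: mult_ac)
    qed
    also have "\<dots> = of_bool (sel r) * BS r * SS r" by (simp add: SS_def sum_distrib_left)
    finally show "(\<Sum>w\<in>{w\<in>sites L d. zY Y w = r}. of_bool (sel w) * bb c w * BS w) = of_bool (sel r) * BS r * SS r" .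
  qed
  also have "\<dots> = (\<Sum>r\<in>Sz L d Y. of_bool (sel r \<and> 1 \<le> r ! p) * (G r * G (dnA p r) + G (dnA p r)))"
  proof (rule sum.cong[OF refl])
    fix r assume r: "r \<in> Sz L d Y"
    show "of_bool (sel r) * BS r * SS r = of_bool (sel r \<and> 1 \<le> r ! p) * (G r * G (dnA p r) + G (dnA p r))"
      unfolding SSr[OF r] BSr[OF r]
      by (cases "1 \<le> r ! p"; cases "sel r") (simp_all add: algebra_simps bit_sq)
  qed
  also have "\<dots> = (\<Sum>w\<in>{w\<in>Sz L d Y. sel w \<and> 1 \<le> w ! p}. G w * G (dnA p w) + G (dnA p w))"
    using finS by (simp add: Int_def)
  finally show ?thesis by (simp add: G_def)
qed

lemma phA_depth: "depth (phA L d Y p sel) = 4"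
  by (simp add: phA_def phAl_def depth_def)

theorem engA_props:
  "valid_circuit L d (engA L d Y p sel)
   \<and> depth (engA L d Y p sel) = 2 * (Suc (length Y) * (L - 1)) + 4
   \<and> gate_count (engA L d Y p sel) \<le> (2 * Suc (length Y) + 4) * L ^ d
   \<and> isD (concat (engA L d Y p sel)) (qform (sites L d) (\<lambda>w u. of_bool (sel w \<and> boxA d Y p w u)))"
proof (intro conjI)
  have tv: "valid_circuit L d (tcircs L d (axsA Y p))" by (rule tcircs_valid[OF axs_ok(2)])
  show "valid_circuit L d (engA L d Y p sel)"
    using tv valid_circuit_revc[OF tv] phAl_valid
    by (simp add: engA_def valid_circuit_append phA_def)
  show "depth (engA L d Y p sel) = 2 * (Suc (length Y) * (L - 1)) + 4"
    by (simp only: engA_def depth_append depth_revc tcircs_depth phA_depth) (simp add: axsA_def)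
  have tc: "gate_count (tcircs L d (axsA Y p)) \<le> Suc (length Y) * L ^ d"
    using tcircs_count[of L d "axsA Y p"] by (simp add: axsA_def)
  show "gate_count (engA L d Y p sel) \<le> (2 * Suc (length Y) + 4) * L ^ d"
    using tc phAl_count[of 0] phAl_count[of 1]
    by (simp add: engA_def gate_count_append gate_count_revc phA_def algebra_simps)
  have cg: "\<forall>g\<in>set (concat (tcircs L d (axsA Y p))). cgate g" by (rule tcircs_cgate[OF axs_ok(2)])
  have "isD (concat (tcircs L d (axsA Y p)) @ concat (phA L d Y p sel) @ rev (concat (tcircs L d (axsA Y p))))
      (\<lambda>c. (\<Sum>w\<in>{w\<in>Sz L d Y. sel w \<and> 1 \<le> w ! p}.
      bb (run (concat (tcircs L d (axsA Y p))) c) w * bb (run (concat (tcircs L d (axsA Y p))) c) (dnA p w)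
      + bb (run (concat (tcircs L d (axsA Y p))) c) (dnA p w)))"
    by (rule isD_conj[OF cg phA_isD])
  then show "isD (concat (engA L d Y p sel)) (qform (sites L d) (\<lambda>w u. of_bool (sel w \<and> boxA d Y p w u)))"
    unfolding engA_identity by (simp add: engA_def concat_revc)
qed

end


lemma concat_concat': "concat (concat xss) = concat (map concat xss)"
  by (induction xss) auto

lemma sum_list_len_concat: "sum_list (map length (concat xss)) = sum_list (map (\<lambda>xs. sum_list (map length xs)) xss)"
  by (induction xss) auto

lemma bit_move: "u + i = s \<Longrightarrow> u = s + (i::bit)"
proof -
  assume h: "u + i = s"
  have "u = u + i + i" by (simp add: add.assoc)
  then show ?thesis using h by simp
qed

definition axsB :: "nat list \<Rightarrow> nat \<Rightarrow> nat \<Rightarrow> (nat \<times> bool) list" where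
  "axsB Y a b = map (\<lambda>y. (y, False)) Y @ [(a, False), (b, True)]"

lemma map_of_axsB: "a \<notin> set Y \<Longrightarrow> b \<notin> set Y \<Longrightarrow> a \<noteq> b \<Longrightarrow> map_of (axsB Y a b) q =
   (if q \<in> set Y then Some False else if q = a then Some False else if q = b then Some True else None)"
proof -
  assume "a \<notin> set Y" "b \<notin> set Y" "a \<noteq> b"
  moreover have m: "map_of (map (\<lambda>y. (y, False)) Y) q = (if q \<in> set Y then Some False else None)"
    by (induction Y) auto
  ultimately show ?thesis by (auto simp: axsB_def map_add_def m split: option.splits)
qed

definition WB :: "nat \<Rightarrow> nat \<Rightarrow> nat list \<Rightarrow> nat \<Rightarrow> nat \<Rightarrow> nat \<times> nat \<Rightarrow> nat list list" where
  "WB L d Y a b e = filter (\<lambda>w. (\<forall>y\<in>set Y. w ! y = 0) \<and> w ! a + 1 < L \<and> 1 \<le> w ! b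
      \<and> (w ! a mod 2, w ! b mod 2) = e) (sl L d)"

definition zz :: "nat \<Rightarrow> nat list \<Rightarrow> nat list" where "zz a w = w[a := w ! a + 1]"
definition yy :: "nat \<Rightarrow> nat list \<Rightarrow> nat list" where "yy b w = w[b := w ! b - 1]"
definition xx :: "nat \<Rightarrow> nat \<Rightarrow> nat list \<Rightarrow> nat list" where "xx a b w = (w[a := w ! a + 1])[b := w ! b - 1]"

definition phBl :: "nat \<Rightarrow> nat \<Rightarrow> nat list \<Rightarrow> nat \<Rightarrow> nat \<Rightarrow> nat \<times> nat \<Rightarrow> circuit" where
  "phBl L d Y a b e = (let W = WB L d Y a b e in
     [map (\<lambda>w. CNOT w (zz a w)) W, map (\<lambda>w. CZ (xx a b w) (zz a w)) W,
      rev (map (\<lambda>w. CNOT w (zz a w)) W), map (\<lambda>w. CZ (yy b w) (xx a b w)) W,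
      map (\<lambda>w. G1 (xx a b w) Zm) W])"

definition classes :: "(nat \<times> nat) list" where "classes = [(0,0), (0,1), (1,0), (1,1)]"

definition phB :: "nat \<Rightarrow> nat \<Rightarrow> nat list \<Rightarrow> nat \<Rightarrow> nat \<Rightarrow> circuit" where
  "phB L d Y a b = concat (map (phBl L d Y a b) classes)"

definition engB :: "nat \<Rightarrow> nat \<Rightarrow> nat list \<Rightarrow> nat \<Rightarrow> nat \<Rightarrow> circuit" where
  "engB L d Y a b = tcircs L d (axsB Y a b) @ phB L d Y a b @ revc (tcircs L d (axsB Y a b))"

definition boxB :: "nat \<Rightarrow> nat list \<Rightarrow> nat \<Rightarrow> nat \<Rightarrow> nat list \<Rightarrow> nat list \<Rightarrow> bool" where
  "boxB d Y a b w u = ((\<forall>q<d. q \<notin> set Y \<longrightarrow> q \<noteq> a \<longrightarrow> q \<noteq> b \<longrightarrow> u ! q = w ! q) \<and> w ! a < u ! a \<and> u ! b < w ! b)"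

locale engB_ctx =
  fixes L d :: nat and Y :: "nat list" and a b :: nat
  assumes Yd: "\<forall>y\<in>set Y. y < d" and distY: "distinct Y" and ad: "a < d" and bd: "b < d"
    and aY: "a \<notin> set Y" and bY: "b \<notin> set Y" and ab: "a \<noteq> b"
begin

lemma axs_ok: "distinct (map fst (axsB Y a b))" "\<forall>x\<in>set (axsB Y a b). fst x < d"
  using distY aY bY ab Yd ad bd by (auto simp: axsB_def o_def)

lemma WB_mem: "w \<in> set (WB L d Y a b e) \<longleftrightarrow>
   w \<in> Sz L d Y \<and> w ! a + 1 < L \<and> 1 \<le> w ! b \<and> (w ! a mod 2, w ! b mod 2) = e"
  by (auto simp: WB_def set_sl Sz_def)

lemma len: "w \<in> sites L d \<Longrightarrow> length w = d" by (simp add: in_sites)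

lemma zz_nth: "w \<in> sites L d \<Longrightarrow> zz a w ! q = (if q = a then w ! a + 1 else w ! q)"
  using ad by (simp add: zz_def len nth_list_update)
lemma yy_nth: "w \<in> sites L d \<Longrightarrow> yy b w ! q = (if q = b then w ! b - 1 else w ! q)"
  using bd by (simp add: yy_def len nth_list_update)
lemma xx_nth: "w \<in> sites L d \<Longrightarrow> xx a b w ! q = (if q = b then w ! b - 1 else if q = a then w ! a + 1 else w ! q)"
  using ad bd ab by (simp add: xx_def len nth_list_update)

lemma zz_len[simp]: "length (zz a w) = length w" by (simp add: zz_def)
lemma yy_len[simp]: "length (yy b w) = length w" by (simp add: yy_def)
lemma xx_len[simp]: "length (xx a b w) = length w" by (simp add: xx_def)

lemma in_sites_nth: "length v = d \<Longrightarrow> (\<forall>i<d. v ! i < L) \<Longrightarrow> v \<in> sites L d"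
  by (simp add: in_sites)

lemma zz_sites: "w \<in> sites L d \<Longrightarrow> w ! a + 1 < L \<Longrightarrow> zz a w \<in> sites L d"
  by (intro in_sites_nth) (auto simp: len zz_nth in_sites)
lemma yy_sites: "w \<in> sites L d \<Longrightarrow> yy b w \<in> sites L d"
proof (intro in_sites_nth)
  assume w: "w \<in> sites L d"
  show "length (yy b w) = d" using w by (simp add: len)
  show "\<forall>i<d. yy b w ! i < L"
  proof (intro allI impI)
    fix i assume i: "i < d"
    have "w ! i < L" "w ! b < L" using w i bd by (simp_all add: in_sites)
    then show "yy b w ! i < L" using w by (auto simp: yy_nth intro: less_imp_diff_less)
  qed
qed
lemma xx_sites: "w \<in> sites L d \<Longrightarrow> w ! a + 1 < L \<Longrightarrow> xx a b w \<in> sites L d"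
proof (intro in_sites_nth)
  assume w: "w \<in> sites L d" and wa: "w ! a + 1 < L"
  show "length (xx a b w) = d" using w by (simp add: len)
  show "\<forall>i<d. xx a b w ! i < L"
  proof (intro allI impI)
    fix i assume i: "i < d"
    have "w ! i < L" "w ! b < L" using w i bd by (simp_all add: in_sites)
    then show "xx a b w ! i < L" using w wa by (auto simp: xx_nth intro: less_imp_diff_less)
  qed
qed

lemma list_eqI: "length x = d \<Longrightarrow> length y = d \<Longrightarrow> (\<And>q. q < d \<Longrightarrow> x ! q = y ! q) \<Longrightarrow> x = y"
  by (rule nth_equalityI) auto

lemma Sz_upd: "w \<in> Sz L d Y \<Longrightarrow> v \<in> sites L d \<Longrightarrow> (\<forall>y\<in>set Y. v ! y = w ! y) \<Longrightarrow> v \<in> Sz L d Y"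
  by (auto simp: Sz_def)

lemma parity_up: "(Suc n) mod 2 \<noteq> (n::nat) mod 2" by (simp add: mod_Suc)

lemma class_valid: "valid_circuit L d (phBl L d Y a b e)"
proof -
  define W where "W = WB L d Y a b e"
  have Wm: "\<And>w. w \<in> set W \<Longrightarrow> w \<in> sites L d \<and> w ! a + 1 < L \<and> 1 \<le> w ! b \<and> (w ! a mod 2, w ! b mod 2) = e"
    by (simp add: W_def WB_mem Sz_def)
  have dW: "distinct W" using distinct_sl by (simp add: W_def WB_def)
  have injz: "inj_on (zz a) (set W)"
  proof (rule inj_onI)
    fix x y assume xy: "x \<in> set W" "y \<in> set W" "zz a x = zz a y"
    have xs: "x \<in> sites L d" and ys: "y \<in> sites L d" using Wm xy by auto
    show "x = y"
    proof (rule list_eqI[OF len[OF xs] len[OF ys]])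
      fix q assume "q < d"
      have "zz a x ! q = zz a y ! q" using xy by simp
      then show "x ! q = y ! q" using xs ys by (simp add: zz_nth split: if_splits)
    qed
  qed
  have injx: "inj_on (xx a b) (set W)"
  proof (rule inj_onI)
    fix x y assume xy: "x \<in> set W" "y \<in> set W" "xx a b x = xx a b y"
    have xs: "x \<in> sites L d" and ys: "y \<in> sites L d" using Wm xy by auto
    have b1: "1 \<le> x ! b" "1 \<le> y ! b" using Wm xy by auto
    show "x = y"
    proof (rule list_eqI[OF len[OF xs] len[OF ys]])
      fix q assume "q < d"
      have "xx a b x ! q = xx a b y ! q" using xy by simp
      then show "x ! q = y ! q" using xs ys b1 ab by (simp add: xx_nth split: if_splits)
    qed
  qed
  have injy: "inj_on (yy b) (set W)"
  proof (rule inj_onI)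
    fix x y assume xy: "x \<in> set W" "y \<in> set W" "yy b x = yy b y"
    have xs: "x \<in> sites L d" and ys: "y \<in> sites L d" using Wm xy by auto
    have b1: "1 \<le> x ! b" "1 \<le> y ! b" using Wm xy by auto
    show "x = y"
    proof (rule list_eqI[OF len[OF xs] len[OF ys]])
      fix q assume "q < d"
      have "yy b x ! q = yy b y ! q" using xy by simp
      then show "x ! q = y ! q" using xs ys b1 by (simp add: yy_nth split: if_splits)
    qed
  qed
  have dz: "distinct (map (zz a) W)" using injz dW by (simp add: distinct_map)
  have dx: "distinct (map (xx a b) W)" using injx dW by (simp add: distinct_map)
  have dy: "distinct (map (yy b) W)" using injy dW by (simp add: distinct_map)
  have did: "distinct (map (\<lambda>w. w) W)" using dW by simp
  have pa: "\<And>x y. x \<in> set W \<Longrightarrow> y \<in> set W \<Longrightarrow> x ! a mod 2 = y ! a mod 2"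
    and pb: "\<And>x y. x \<in> set W \<Longrightarrow> y \<in> set W \<Longrightarrow> x ! b mod 2 = y ! b mod 2"
    using Wm by (metis prod.inject)+
  have pdn: "\<And>n::nat. 1 \<le> n \<Longrightarrow> (n - 1) mod 2 \<noteq> n mod 2" by (rule parity_dn)
  have disj1: "(\<lambda>w. w) ` set W \<inter> zz a ` set W = {}"
  proof (rule ccontr)
    assume "(\<lambda>w. w) ` set W \<inter> zz a ` set W \<noteq> {}"
    then obtain x y where xy: "x \<in> set W" "y \<in> set W" "x = zz a y" by auto
    have "x ! a = Suc (y ! a)" using xy Wm[OF xy(2)] by (simp add: zz_nth)
    then show False using pa[OF xy(1) xy(2)] parity_up by metis
  qed
  have disj2: "xx a b ` set W \<inter> zz a ` set W = {}"
  proof (rule ccontr)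
    assume "xx a b ` set W \<inter> zz a ` set W \<noteq> {}"
    then obtain x y where xy: "x \<in> set W" "y \<in> set W" "xx a b x = zz a y" by auto
    have "xx a b x ! b = zz a y ! b" using xy by simp
    then have "x ! b - 1 = y ! b" using Wm[OF xy(1)] Wm[OF xy(2)] ab by (simp add: xx_nth zz_nth)
    then show False using pb[OF xy(1) xy(2)] pdn Wm[OF xy(1)] by metis
  qed
  have disj3: "yy b ` set W \<inter> xx a b ` set W = {}"
  proof (rule ccontr)
    assume "yy b ` set W \<inter> xx a b ` set W \<noteq> {}"
    then obtain x y where xy: "x \<in> set W" "y \<in> set W" "yy b x = xx a b y" by auto
    have "yy b x ! a = xx a b y ! a" using xy by simp
    then have "x ! a = Suc (y ! a)" using Wm[OF xy(1)] Wm[OF xy(2)] ab by (simp add: xx_nth yy_nth)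
    then show False using pa[OF xy(1) xy(2)] parity_up by metis
  qed
  have l1d_z: "l1dist w (zz a w) = 1" if "w \<in> set W" for w
  proof -
    have ws: "w \<in> sites L d" using Wm that by auto
    have "l1dist w (zz a w) = nat \<bar>int (w ! a) - int (zz a w ! a)\<bar>"
      using ws ad by (intro l1dist_one) (auto simp: len zz_nth)
    then show ?thesis using ws by (simp add: zz_nth)
  qed
  have l1d_xz: "l1dist (xx a b w) (zz a w) = 1" if "w \<in> set W" for w
  proof -
    have ws: "w \<in> sites L d" and b1: "1 \<le> w ! b" using Wm that by auto
    have "l1dist (xx a b w) (zz a w) = nat \<bar>int (xx a b w ! b) - int (zz a w ! b)\<bar>"
      using ws bd ab by (intro l1dist_one) (auto simp: len zz_nth xx_nth)
    then show ?thesis using ws b1 ab by (simp add: zz_nth xx_nth)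
  qed
  have l1d_yx: "l1dist (yy b w) (xx a b w) = 1" if "w \<in> set W" for w
  proof -
    have ws: "w \<in> sites L d" and b1: "1 \<le> w ! b" using Wm that by auto
    have "l1dist (yy b w) (xx a b w) = nat \<bar>int (yy b w ! a) - int (xx a b w ! a)\<bar>"
      using ws ad ab by (intro l1dist_one) (auto simp: len yy_nth xx_nth)
    then show ?thesis using ws b1 ab by (simp add: yy_nth xx_nth)
  qed
  have v1: "valid_layer L d (map (\<lambda>w. CNOT ((\<lambda>w. w) w) (zz a w)) W)"
    by (rule valid_layer_CNOT) (use Wm zz_sites l1d_z did dz disj1 in auto)
  have v2: "valid_layer L d (map (\<lambda>w. CZ (xx a b w) (zz a w)) W)"
    by (rule valid_layer_CZ) (use Wm zz_sites xx_sites l1d_xz dx dz disj2 in auto)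
  have v4: "valid_layer L d (map (\<lambda>w. CZ (yy b w) (xx a b w)) W)"
    by (rule valid_layer_CZ) (use Wm yy_sites xx_sites l1d_yx dy dx disj3 in auto)
  have v5: "valid_layer L d (map (\<lambda>w. G1 (xx a b w) Zm) W)"
    by (rule valid_layer_Z) (use Wm xx_sites dx in auto)
  have v3: "valid_layer L d (rev (map (\<lambda>w. CNOT w (zz a w)) W))"
    using valid_layer_rev v1 by simp
  show ?thesis using v1 v2 v3 v4 v5 by (simp add: phBl_def Let_def W_def valid_circuit_def)
qed

lemma class_count: "gate_count (phBl L d Y a b e) \<le> 5 * L ^ d"
proof -
  have "length (WB L d Y a b e) \<le> L ^ d" unfolding WB_def by (rule length_filter_sl)
  then show ?thesis by (simp add: phBl_def Let_def gate_count_def)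
qed

lemma class_depth: "depth (phBl L d Y a b e) = 5"
  by (simp add: phBl_def Let_def depth_def)

lemma class_isD: "isD (concat (phBl L d Y a b e))
   (\<lambda>R. \<Sum>w\<in>set (WB L d Y a b e). (bb R w + bb R (zz a w) + bb R (yy b w) + bb R (xx a b w)) * bb R (xx a b w))"
proof -
  define W where "W = WB L d Y a b e"
  have Wm: "\<And>w. w \<in> set W \<Longrightarrow> w \<in> sites L d \<and> w ! a + 1 < L \<and> 1 \<le> w ! b \<and> (w ! a mod 2, w ! b mod 2) = e"
    by (simp add: W_def WB_mem Sz_def)
  have dW: "distinct W" using distinct_sl by (simp add: W_def WB_def)
  define A1 where "A1 = map (\<lambda>w. CNOT ((\<lambda>w. w) w) (zz a w)) W"
  have cA: "\<forall>g\<in>set A1. cgate g"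
  proof
    fix g assume "g \<in> set A1"
    then obtain w where w: "w \<in> set W" "g = CNOT w (zz a w)" by (auto simp: A1_def)
    have "w ! a \<noteq> zz a w ! a" using Wm[OF w(1)] by (simp add: zz_nth)
    then show "cgate g" using w by auto
  qed
  have D2: "isD (map (\<lambda>w. CZ (xx a b w) (zz a w)) W) (\<lambda>R. \<Sum>w\<in>set W. bb R (xx a b w) * bb R (zz a w))"
  proof -
    have "isD (map (\<lambda>w. CZ (xx a b w) (zz a w)) W) (\<lambda>R. sum_list (map (\<lambda>g. gph g R) (map (\<lambda>w. CZ (xx a b w) (zz a w)) W)))"
      by (rule isD_dgates) auto
    then show ?thesis using dW by (simp add: o_def sum_list_distinct_conv_sum_set of_bool_conj)
  qed
  have conj: "isD (A1 @ map (\<lambda>w. CZ (xx a b w) (zz a w)) W @ rev A1)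
      (\<lambda>c. \<Sum>w\<in>set W. bb (run A1 c) (xx a b w) * bb (run A1 c) (zz a w))"
    by (rule isD_conj[OF cA D2])
  have injz: "distinct (map (zz a) W)"
  proof -
    have "inj_on (zz a) (set W)"
    proof (rule inj_onI)
      fix x y assume xy: "x \<in> set W" "y \<in> set W" "zz a x = zz a y"
      have xs: "x \<in> sites L d" and ys: "y \<in> sites L d" using Wm xy by auto
      show "x = y"
      proof (rule list_eqI[OF len[OF xs] len[OF ys]])
        fix q assume "q < d"
        have "zz a x ! q = zz a y ! q" using xy by simp
        then show "x ! q = y ! q" using xs ys by (simp add: zz_nth split: if_splits)
      qed
    qed
    then show ?thesis using dW by (simp add: distinct_map)
  qed
  have pa: "\<And>x y. x \<in> set W \<Longrightarrow> y \<in> set W \<Longrightarrow> x ! a mod 2 = y ! a mod 2"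
    and pb: "\<And>x y. x \<in> set W \<Longrightarrow> y \<in> set W \<Longrightarrow> x ! b mod 2 = y ! b mod 2"
    using Wm by (metis prod.inject)+
  have ctl: "\<forall>w\<in>set W. (\<lambda>w. w) w \<notin> zz a ` set W"
  proof (intro ballI notI)
    fix x assume x: "x \<in> set W" "(\<lambda>w. w) x \<in> zz a ` set W"
    then obtain y where y: "y \<in> set W" "x = zz a y" by auto
    have "x ! a = Suc (y ! a)" using y Wm[OF y(1)] by (simp add: zz_nth)
    then show False using pa[OF x(1) y(1)] parity_up by metis
  qed
  note rl = run_layer[OF injz ctl]
  have xnot: "xx a b w \<notin> zz a ` set W" if w: "w \<in> set W" for w
  proof
    assume "xx a b w \<in> zz a ` set W"
    then obtain y where y: "y \<in> set W" "xx a b w = zz a y" by auto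
    have "xx a b w ! b = zz a y ! b" using y by simp
    then have "w ! b - 1 = y ! b" using Wm[OF w] Wm[OF y(1)] ab by (simp add: xx_nth zz_nth)
    then show False using pb[OF w y(1)] parity_dn Wm[OF w] by metis
  qed
  have runx: "run A1 c (xx a b w) = c (xx a b w)" if "w \<in> set W" for w c
    using rl[of "xx a b w" c] xnot[OF that] by (simp add: A1_def)
  have runz: "run A1 c (zz a w) = (c (zz a w) \<noteq> c w)" if "w \<in> set W" for w c
    using rl[of w c] that by (simp add: A1_def)
  have D45: "isD (map (\<lambda>w. CZ (yy b w) (xx a b w)) W @ map (\<lambda>w. G1 (xx a b w) Zm) W)
      (\<lambda>R. \<Sum>w\<in>set W. bb R (yy b w) * bb R (xx a b w) + bb R (xx a b w))"
  proof -
    have "isD (map (\<lambda>w. CZ (yy b w) (xx a b w)) W @ map (\<lambda>w. G1 (xx a b w) Zm) W)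
       (\<lambda>R. sum_list (map (\<lambda>g. gph g R) (map (\<lambda>w. CZ (yy b w) (xx a b w)) W @ map (\<lambda>w. G1 (xx a b w) Zm) W)))"
      by (rule isD_dgates) auto
    then show ?thesis using dW by (simp add: o_def sum_list_distinct_conv_sum_set of_bool_conj sum.distrib)
  qed
  have all: "isD ((A1 @ map (\<lambda>w. CZ (xx a b w) (zz a w)) W @ rev A1) @
        (map (\<lambda>w. CZ (yy b w) (xx a b w)) W @ map (\<lambda>w. G1 (xx a b w) Zm) W))
      (\<lambda>c. (\<Sum>w\<in>set W. bb (run A1 c) (xx a b w) * bb (run A1 c) (zz a w))
         + (\<Sum>w\<in>set W. bb c (yy b w) * bb c (xx a b w) + bb c (xx a b w)))"
    by (rule isD_append[OF conj D45])
  show ?thesis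
  proof (rule isD_cong)
    show "isD (concat (phBl L d Y a b e)) (\<lambda>c. (\<Sum>w\<in>set W. bb (run A1 c) (xx a b w) * bb (run A1 c) (zz a w))
         + (\<Sum>w\<in>set W. bb c (yy b w) * bb c (xx a b w) + bb c (xx a b w)))"
      using all by (simp add: phBl_def Let_def W_def A1_def)
    fix c
    have "(\<Sum>w\<in>set W. bb (run A1 c) (xx a b w) * bb (run A1 c) (zz a w))
        = (\<Sum>w\<in>set W. bb c (xx a b w) * (bb c (zz a w) + bb c w))"
      by (rule sum.cong[OF refl]) (simp add: runx runz of_bool_neq)
    then show "(\<Sum>w\<in>set W. bb (run A1 c) (xx a b w) * bb (run A1 c) (zz a w))
         + (\<Sum>w\<in>set W. bb c (yy b w) * bb c (xx a b w) + bb c (xx a b w))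
       = (\<Sum>w\<in>set (WB L d Y a b e). (bb c w + bb c (zz a w) + bb c (yy b w) + bb c (xx a b w)) * bb c (xx a b w))"
      by (simp add: W_def[symmetric] sum.distrib[symmetric] algebra_simps bit_sq)
  qed
qed


definition WBs :: "nat list set" where
  "WBs = {w\<in>Sz L d Y. w ! a + 1 < L \<and> 1 \<le> w ! b}"

lemma phB_isD: "isD (concat (phB L d Y a b))
   (\<lambda>R. \<Sum>w\<in>WBs. (bb R w + bb R (zz a w) + bb R (yy b w) + bb R (xx a b w)) * bb R (xx a b w))"
proof -
  define f where "f R w = (bb R w + bb R (zz a w) + bb R (yy b w) + bb R (xx a b w)) * bb R (xx a b w)" for R w
  have c: "concat (phB L d Y a b) = concat (map (\<lambda>e. concat (phBl L d Y a b e)) classes)"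
    by (simp add: phB_def concat_concat' o_def)
  have "isD (concat (map (\<lambda>e. concat (phBl L d Y a b e)) classes))
     (\<lambda>R. sum_list (map (\<lambda>e. \<Sum>w\<in>set (WB L d Y a b e). f R w) classes))"
    by (rule isD_concat_list) (unfold f_def, rule class_isD)
  moreover have "sum_list (map (\<lambda>e. \<Sum>w\<in>set (WB L d Y a b e). f R w) classes) = (\<Sum>w\<in>WBs. f R w)" for R
  proof -
    have "sum_list (map (\<lambda>e. \<Sum>w\<in>set (WB L d Y a b e). f R w) classes)
        = (\<Sum>e\<in>set classes. \<Sum>w\<in>set (WB L d Y a b e). f R w)"
      by (simp add: sum_list_distinct_conv_sum_set classes_def)
    also have "\<dots> = (\<Sum>e\<in>set classes. \<Sum>w\<in>{w\<in>WBs. (w ! a mod 2, w ! b mod 2) = e}. f R w)"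
      by (rule sum.cong[OF refl]) (rule sum.cong, auto simp: WB_mem WBs_def)
    also have "\<dots> = (\<Sum>w\<in>WBs. f R w)"
    proof (rule sum.group)
      show "finite WBs" by (simp add: WBs_def Sz_def)
      show "finite (set classes)" by simp
      show "(\<lambda>w. (w ! a mod 2, w ! b mod 2)) ` WBs \<subseteq> set classes"
      proof
        fix e assume "e \<in> (\<lambda>w. (w ! a mod 2, w ! b mod 2)) ` WBs"
        then obtain w where "e = (w ! a mod 2, w ! b mod 2)" by auto
        moreover have "w ! a mod 2 = 0 \<or> w ! a mod 2 = 1" "w ! b mod 2 = 0 \<or> w ! b mod 2 = 1" by auto
        ultimately show "e \<in> set classes" by (auto simp: classes_def)
      qed
    qed
    finally show ?thesis .
  qed
  ultimately show ?thesis unfolding c f_def by simp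
qed

definition AsB :: "nat list \<Rightarrow> nat list set" where
  "AsB v = {u\<in>sites L d. (\<forall>q<d. q \<notin> set Y \<longrightarrow> q \<noteq> a \<longrightarrow> q \<noteq> b \<longrightarrow> u ! q = v ! q) \<and> v ! a \<le> u ! a \<and> u ! b \<le> v ! b}"
definition BxB :: "nat list \<Rightarrow> nat list set" where
  "BxB v = {u\<in>sites L d. boxB d Y a b v u}"
definition SlB :: "nat list \<Rightarrow> nat list set" where
  "SlB v = {u\<in>sites L d. \<forall>q<d. q \<notin> set Y \<longrightarrow> u ! q = v ! q}"

lemma reg_B:
  assumes v: "v \<in> Sz L d Y"
  shows "bb (run (concat (tcircs L d (axsB Y a b))) c) v = (\<Sum>u\<in>AsB v. bb c u)"
proof -
  have vs: "v \<in> sites L d" using v by (simp add: Sz_def)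
  have "{u\<in>sites L d. \<forall>q<d. relx (axsB Y a b) q (u ! q) (v ! q)} = AsB v"
  proof -
    have "relx (axsB Y a b) q x (v ! q) = (if q \<in> set Y then True else if q = a then v ! a \<le> x
        else if q = b then x \<le> v ! b else x = v ! q)" for q x
      using v aY bY ab by (auto simp: relx_def map_of_axsB cmpd_def Sz_def)
    then show ?thesis unfolding AsB_def using ad bd aY bY ab by (auto simp: in_sites)
  qed
  then show ?thesis using tcircs_run[OF axs_ok vs] by simp
qed

lemma AsB_zz: "r \<in> sites L d \<Longrightarrow> u \<in> AsB (zz a r) \<longleftrightarrow> u \<in> sites L d \<and>
   (\<forall>q<d. q \<notin> set Y \<longrightarrow> q \<noteq> a \<longrightarrow> q \<noteq> b \<longrightarrow> u ! q = r ! q) \<and> r ! a < u ! a \<and> u ! b \<le> r ! b"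
  using ab by (auto simp: AsB_def zz_nth)
lemma AsB_yy: "r \<in> sites L d \<Longrightarrow> u \<in> AsB (yy b r) \<longleftrightarrow> u \<in> sites L d \<and>
   (\<forall>q<d. q \<notin> set Y \<longrightarrow> q \<noteq> a \<longrightarrow> q \<noteq> b \<longrightarrow> u ! q = r ! q) \<and> r ! a \<le> u ! a \<and> u ! b \<le> r ! b - 1"
  using ab by (auto simp: AsB_def yy_nth)
lemma AsB_xx: "r \<in> sites L d \<Longrightarrow> u \<in> AsB (xx a b r) \<longleftrightarrow> u \<in> sites L d \<and>
   (\<forall>q<d. q \<notin> set Y \<longrightarrow> q \<noteq> a \<longrightarrow> q \<noteq> b \<longrightarrow> u ! q = r ! q) \<and> r ! a < u ! a \<and> u ! b \<le> r ! b - 1"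
  using ab by (auto simp: AsB_def xx_nth)

lemma split_B:
  assumes r: "r \<in> WBs"
  shows "AsB r = SlB r \<union> (AsB (zz a r) \<union> AsB (yy b r))"
    "SlB r \<inter> (AsB (zz a r) \<union> AsB (yy b r)) = {}"
    "AsB (zz a r) \<inter> AsB (yy b r) = AsB (xx a b r)"
    "BxB r = AsB (xx a b r)"
proof -
  have rs: "r \<in> sites L d" and b1: "1 \<le> r ! b" using r by (auto simp: WBs_def Sz_def)
  show "AsB r = SlB r \<union> (AsB (zz a r) \<union> AsB (yy b r))"
  proof (intro set_eqI iffI)
    fix u assume u: "u \<in> AsB r"
    show "u \<in> SlB r \<union> (AsB (zz a r) \<union> AsB (yy b r))"
    proof (cases "u ! a = r ! a \<and> u ! b = r ! b")
      case True
      then have "u \<in> SlB r" using u by (auto simp: AsB_def SlB_def)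
      then show ?thesis by simp
    next
      case False
      have u1: "u \<in> sites L d" "\<forall>q<d. q \<notin> set Y \<longrightarrow> q \<noteq> a \<longrightarrow> q \<noteq> b \<longrightarrow> u ! q = r ! q"
        "r ! a \<le> u ! a" "u ! b \<le> r ! b" using u by (auto simp: AsB_def)
      show ?thesis
      proof (cases "u ! a = r ! a")
        case True
        then have "u ! b \<le> r ! b - 1" using False u1 by auto
        then have "u \<in> AsB (yy b r)" using u1 by (simp add: AsB_yy[OF rs])
        then show ?thesis by simp
      next
        case F2: False
        then have "r ! a < u ! a" using u1 by auto
        then have "u \<in> AsB (zz a r)" using u1 by (simp add: AsB_zz[OF rs])
        then show ?thesis by simp
      qed
    qed
  next
    fix u assume "u \<in> SlB r \<union> (AsB (zz a r) \<union> AsB (yy b r))"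
    then consider "u \<in> SlB r" | "u \<in> AsB (zz a r)" | "u \<in> AsB (yy b r)" by blast
    then show "u \<in> AsB r"
    proof cases
      case 1 then show ?thesis using ad bd aY bY by (auto simp: SlB_def AsB_def)
    next
      case 2
      then have "u \<in> sites L d \<and> (\<forall>q<d. q \<notin> set Y \<longrightarrow> q \<noteq> a \<longrightarrow> q \<noteq> b \<longrightarrow> u ! q = r ! q) \<and> r ! a < u ! a \<and> u ! b \<le> r ! b"
        using AsB_zz[OF rs] by blast
      then show ?thesis by (auto simp: AsB_def)
    next
      case 3
      then have "u \<in> sites L d \<and> (\<forall>q<d. q \<notin> set Y \<longrightarrow> q \<noteq> a \<longrightarrow> q \<noteq> b \<longrightarrow> u ! q = r ! q) \<and> r ! a \<le> u ! a \<and> u ! b \<le> r ! b - 1"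
        using AsB_yy[OF rs] by blast
      then show ?thesis by (auto simp: AsB_def)
    qed
  qed
  show "SlB r \<inter> (AsB (zz a r) \<union> AsB (yy b r)) = {}"
    using ad bd aY bY b1 by (auto simp: AsB_zz[OF rs] AsB_yy[OF rs] SlB_def)
  show "AsB (zz a r) \<inter> AsB (yy b r) = AsB (xx a b r)"
    by (auto simp: AsB_zz[OF rs] AsB_yy[OF rs] AsB_xx[OF rs])
  show "BxB r = AsB (xx a b r)"
    using b1 by (auto simp: BxB_def boxB_def AsB_xx[OF rs])
qed

lemma BxB_empty: "r \<in> Sz L d Y \<Longrightarrow> r \<notin> WBs \<Longrightarrow> BxB r = {}"
proof -
  assume r: "r \<in> Sz L d Y" "r \<notin> WBs"
  then have "\<not> (r ! a + 1 < L) \<or> r ! b = 0" by (auto simp: WBs_def)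
  moreover have "u ! a < L" if "u \<in> sites L d" for u using that ad by (simp add: in_sites)
  ultimately show ?thesis
  proof (intro equals0I)
    fix u assume h: "\<not> (r ! a + 1 < L) \<or> r ! b = 0" "\<And>u. u \<in> sites L d \<Longrightarrow> u ! a < L" "u \<in> BxB r"
    then have "u \<in> sites L d" "r ! a < u ! a" "u ! b < r ! b" by (auto simp: BxB_def boxB_def)
    then show False using h(1) h(2)[of u] by arith
  qed
qed

lemma BxB_cong: "(\<forall>q<d. q \<notin> set Y \<longrightarrow> w ! q = r ! q) \<Longrightarrow> BxB w = BxB r"
  unfolding BxB_def boxB_def using ad bd aY bY by auto

lemma WBs_Sz: "r \<in> WBs \<Longrightarrow> zz a r \<in> Sz L d Y \<and> yy b r \<in> Sz L d Y \<and> xx a b r \<in> Sz L d Y"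
proof -
  assume r: "r \<in> WBs"
  then have rs: "r \<in> sites L d" and ra: "r ! a + 1 < L" and rz: "\<forall>y\<in>set Y. r ! y = 0"
    by (auto simp: WBs_def Sz_def)
  have ya: "\<And>y. y \<in> set Y \<Longrightarrow> y \<noteq> a" "\<And>y. y \<in> set Y \<Longrightarrow> y \<noteq> b" using aY bY by auto
  show ?thesis using rs ra rz ya
    by (auto simp: Sz_def zz_sites yy_sites xx_sites zz_nth yy_nth xx_nth)
qed

lemma engB_identity:
  "(\<Sum>w\<in>WBs. (bb (run (concat (tcircs L d (axsB Y a b))) c) w + bb (run (concat (tcircs L d (axsB Y a b))) c) (zz a w)
      + bb (run (concat (tcircs L d (axsB Y a b))) c) (yy b w) + bb (run (concat (tcircs L d (axsB Y a b))) c) (xx a b w))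
      * bb (run (concat (tcircs L d (axsB Y a b))) c) (xx a b w))
   = qform (sites L d) (\<lambda>w u. of_bool (boxB d Y a b w u)) c"
proof -
  define G where "G v = bb (run (concat (tcircs L d (axsB Y a b))) c) v" for v
  define BS where "BS v = (\<Sum>u\<in>BxB v. bb c u)" for v
  define SS where "SS v = (\<Sum>u\<in>SlB v. bb c u)" for v
  have fin: "finite (sites L d)" by simp
  have finS: "finite (Sz L d Y)" by (simp add: Sz_def)
  have finA: "finite (AsB v)" for v by (simp add: AsB_def)
  have key: "SS r = G r + G (zz a r) + G (yy b r) + G (xx a b r)" and bsr: "BS r = G (xx a b r)"
    if r: "r \<in> WBs" for r
  proof -
    have rS: "r \<in> Sz L d Y" using r by (simp add: WBs_def)
    note sp = split_B[OF r]
    note zs = WBs_Sz[OF r]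
    have fSl: "finite (SlB r)" by (simp add: SlB_def)
    have "G r = (\<Sum>u\<in>AsB r. bb c u)" using reg_B[OF rS] by (simp add: G_def)
    also have "\<dots> = SS r + (\<Sum>u\<in>AsB (zz a r) \<union> AsB (yy b r). bb c u)"
      unfolding sp(1) SS_def by (rule sum.union_disjoint) (simp_all add: fSl finA sp(2))
    also have "(\<Sum>u\<in>AsB (zz a r) \<union> AsB (yy b r). bb c u)
        = (\<Sum>u\<in>AsB (zz a r). bb c u) + (\<Sum>u\<in>AsB (yy b r). bb c u) + (\<Sum>u\<in>AsB (xx a b r). bb c u)"
    proof -
      have "(\<Sum>u\<in>AsB (zz a r) \<union> AsB (yy b r). bb c u) + (\<Sum>u\<in>AsB (zz a r) \<inter> AsB (yy b r). bb c u)
          = (\<Sum>u\<in>AsB (zz a r). bb c u) + (\<Sum>u\<in>AsB (yy b r). bb c u)"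
        by (rule sum.union_inter) (simp_all add: finA)
      then show ?thesis unfolding sp(3) by (rule bit_move)
    qed
    finally have "G r = SS r + (G (zz a r) + G (yy b r) + G (xx a b r))"
      using reg_B zs by (simp add: G_def)
    then have "SS r + (G (zz a r) + G (yy b r) + G (xx a b r)) = G r" by simp
    then have "SS r = G r + (G (zz a r) + G (yy b r) + G (xx a b r))" by (rule bit_move)
    then show "SS r = G r + G (zz a r) + G (yy b r) + G (xx a b r)" by (simp add: add.assoc)
    show "BS r = G (xx a b r)" using sp(4) reg_B zs by (simp add: BS_def G_def)
  qed
  have "qform (sites L d) (\<lambda>w u. of_bool (boxB d Y a b w u)) c = (\<Sum>w\<in>sites L d. bb c w * BS w)"
  proof -
    have per_w: "(\<Sum>u\<in>sites L d. of_bool (boxB d Y a b w u) * bb c w * bb c u) = bb c w * BS w" for w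
    proof -
      have "(\<Sum>u\<in>sites L d. of_bool (boxB d Y a b w u) * bb c w * bb c u)
          = bb c w * (\<Sum>u\<in>sites L d. of_bool (boxB d Y a b w u) * bb c u)"
        by (simp add: sum_distrib_left mult_ac del: sum_of_bool_mult_eq)
      also have "(\<Sum>u\<in>sites L d. of_bool (boxB d Y a b w u) * bb c u) = BS w"
        by (simp add: BS_def BxB_def Int_def conj_commute)
      finally show ?thesis .
    qed
    show ?thesis unfolding qform_def by (rule sum.cong[OF refl]) (rule per_w)
  qed
  also have "\<dots> = (\<Sum>r\<in>Sz L d Y. \<Sum>w\<in>{w\<in>sites L d. zY Y w = r}. bb c w * BS w)"
    by (rule sum.group[symmetric]) (use fin finS zY_Sz Yd in auto)
  also have "\<dots> = (\<Sum>r\<in>Sz L d Y. BS r * SS r)"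
  proof (rule sum.cong[OF refl])
    fix r assume r: "r \<in> Sz L d Y"
    have set_eq: "{w\<in>sites L d. zY Y w = r} = SlB r"
      unfolding SlB_def using zY_eq_iff[OF _ r Yd] by auto
    have "(\<Sum>w\<in>{w\<in>sites L d. zY Y w = r}. bb c w * BS w) = (\<Sum>w\<in>SlB r. BS r * bb c w)"
    proof (rule sum.cong)
      show "{w\<in>sites L d. zY Y w = r} = SlB r" by (rule set_eq)
      fix w assume w: "w \<in> SlB r"
      then have eqc: "\<forall>q<d. q \<notin> set Y \<longrightarrow> w ! q = r ! q" by (auto simp: SlB_def)
      have "BS w = BS r" using BxB_cong[OF eqc] by (simp add: BS_def)
      then show "bb c w * BS w = BS r * bb c w" by (simp add: mult_ac)
    qed
    also have "\<dots> = BS r * SS r" by (simp add: SS_def sum_distrib_left)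
    finally show "(\<Sum>w\<in>{w\<in>sites L d. zY Y w = r}. bb c w * BS w) = BS r * SS r" .
  qed
  also have "\<dots> = (\<Sum>r\<in>WBs. BS r * SS r)"
  proof (rule sum.mono_neutral_right)
    show "finite (Sz L d Y)" by (rule finS)
    show "WBs \<subseteq> Sz L d Y" by (auto simp: WBs_def)
    show "\<forall>r\<in>Sz L d Y - WBs. BS r * SS r = 0" using BxB_empty by (simp add: BS_def)
  qed
  also have "\<dots> = (\<Sum>r\<in>WBs. (G r + G (zz a r) + G (yy b r) + G (xx a b r)) * G (xx a b r))"
    by (rule sum.cong[OF refl]) (simp add: key bsr mult.commute)
  finally show ?thesis by (simp add: G_def)
qed

lemma phB_depth: "depth (phB L d Y a b) = 20"
  by (simp add: phB_def classes_def depth_def class_depth[unfolded depth_def])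

lemma phB_count: "gate_count (phB L d Y a b) \<le> 20 * L ^ d"
proof -
  have "gate_count (phB L d Y a b) = (\<Sum>e\<leftarrow>classes. gate_count (phBl L d Y a b e))"
    by (simp add: phB_def gate_count_def sum_list_len_concat o_def)
  also have "\<dots> \<le> (\<Sum>e\<leftarrow>classes. 5 * L ^ d)"
    by (rule sum_list_mono) (rule class_count)
  finally show ?thesis by (simp add: classes_def)
qed

lemma phB_valid: "valid_circuit L d (phB L d Y a b)"
  using class_valid by (auto simp: phB_def valid_circuit_def)

theorem engB_props:
  "valid_circuit L d (engB L d Y a b)
   \<and> depth (engB L d Y a b) = 2 * ((length Y + 2) * (L - 1)) + 20
   \<and> gate_count (engB L d Y a b) \<le> (2 * (length Y + 2) + 20) * L ^ d
   \<and> isD (concat (engB L d Y a b)) (qform (sites L d) (\<lambda>w u. of_bool (boxB d Y a b w u)))"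
proof (intro conjI)
  have tv: "valid_circuit L d (tcircs L d (axsB Y a b))" by (rule tcircs_valid[OF axs_ok(2)])
  show "valid_circuit L d (engB L d Y a b)"
    using tv valid_circuit_revc[OF tv] phB_valid
    by (simp add: engB_def valid_circuit_append)
  show "depth (engB L d Y a b) = 2 * ((length Y + 2) * (L - 1)) + 20"
    by (simp only: engB_def depth_append depth_revc tcircs_depth phB_depth) (simp add: axsB_def)
  have tc: "gate_count (tcircs L d (axsB Y a b)) \<le> (length Y + 2) * L ^ d"
    using tcircs_count[of L d "axsB Y a b"] by (simp add: axsB_def)
  show "gate_count (engB L d Y a b) \<le> (2 * (length Y + 2) + 20) * L ^ d"
    using tc phB_count by (simp add: engB_def gate_count_append gate_count_revc algebra_simps)
  have cg: "\<forall>g\<in>set (concat (tcircs L d (axsB Y a b))). cgate g" by (rule tcircs_cgate[OF axs_ok(2)])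
  have "isD (concat (tcircs L d (axsB Y a b)) @ concat (phB L d Y a b) @ rev (concat (tcircs L d (axsB Y a b))))
      (\<lambda>c. (\<Sum>w\<in>WBs. (bb (run (concat (tcircs L d (axsB Y a b))) c) w + bb (run (concat (tcircs L d (axsB Y a b))) c) (zz a w)
      + bb (run (concat (tcircs L d (axsB Y a b))) c) (yy b w) + bb (run (concat (tcircs L d (axsB Y a b))) c) (xx a b w))
      * bb (run (concat (tcircs L d (axsB Y a b))) c) (xx a b w)))"
    by (rule isD_conj[OF cg phB_isD])
  then show "isD (concat (engB L d Y a b)) (qform (sites L d) (\<lambda>w u. of_bool (boxB d Y a b w u)))"
    unfolding engB_identity by (simp add: engB_def concat_revc)
qed

end


definition key :: "nat \<Rightarrow> nat \<Rightarrow> (nat \<Rightarrow> nat) \<Rightarrow> nat" where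
  "key L d x = (\<Sum>i=1..d. L ^ (i - 1) * x i)"

lemma key_Suc: "key L (Suc m) x = key L m x + L ^ m * x (Suc m)"
  by (simp add: key_def)

lemma key_cong: "(\<And>i. 1 \<le> i \<Longrightarrow> i \<le> d \<Longrightarrow> x i = y i) \<Longrightarrow> key L d x = key L d y"
  unfolding key_def by (rule sum.cong) auto

lemma digits_bound: "(\<forall>i. 1 \<le> i \<and> i \<le> m \<longrightarrow> x i < L) \<Longrightarrow> key L m x < L ^ m"
proof (induction m)
  case 0 then show ?case by (simp add: key_def)
next
  case (Suc m)
  have h: "key L m x < L ^ m" using Suc by auto
  have xs: "x (Suc m) < L" using Suc.prems by auto
  have "key L (Suc m) x = key L m x + L ^ m * x (Suc m)" by (rule key_Suc)
  also have "\<dots> < L ^ m + L ^ m * x (Suc m)" using h by simp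
  also have "\<dots> = L ^ m * Suc (x (Suc m))" by simp
  also have "\<dots> \<le> L ^ m * L" using xs by (intro mult_le_mono2) simp
  finally show ?case by (simp add: mult.commute)
qed

lemma key_less:
  assumes "\<forall>i. 1 \<le> i \<and> i \<le> d \<longrightarrow> x i < L" "\<forall>i. 1 \<le> i \<and> i \<le> d \<longrightarrow> y i < L"
    and "1 \<le> l" "l \<le> d" "\<forall>k. l < k \<and> k \<le> d \<longrightarrow> x k = y k" "x l < y l"
  shows "key L d x < key L d y"
  using assms
proof (induction d)
  case 0 then show ?case by simp
next
  case (Suc d)
  show ?case
  proof (cases "l = Suc d")
    case True
    have h: "key L d x < L ^ d" using Suc.prems(1) by (intro digits_bound) auto
    have "key L (Suc d) x = key L d x + L ^ d * x l" using True by (simp add: key_Suc)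
    also have "\<dots> < L ^ d + L ^ d * x l" using h by simp
    also have "\<dots> = L ^ d * Suc (x l)" by simp
    also have "\<dots> \<le> L ^ d * y l" using Suc.prems(6) by (intro mult_le_mono2) simp
    also have "\<dots> \<le> key L (Suc d) y" using True by (simp add: key_Suc)
    finally show ?thesis .
  next
    case False
    then have "key L d x < key L d y" using Suc.prems by (intro Suc.IH) auto
    moreover have "x (Suc d) = y (Suc d)" using Suc.prems(5) False Suc.prems(3,4) by auto
    ultimately show ?thesis by (simp add: key_Suc)
  qed
qed

lemma key_cmp:
  assumes "\<forall>i. 1 \<le> i \<and> i \<le> d \<longrightarrow> x i < L" "\<forall>i. 1 \<le> i \<and> i \<le> d \<longrightarrow> y i < L"
    and "1 \<le> l" "l \<le> d" "\<forall>k. l < k \<and> k \<le> d \<longrightarrow> x k = y k" "x l \<noteq> y l"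
  shows "key L d x < key L d y \<longleftrightarrow> x l < y l"
proof
  assume k: "key L d x < key L d y"
  show "x l < y l"
  proof (rule ccontr)
    assume "\<not> x l < y l"
    then have "y l < x l" using assms(6) by simp
    then have "key L d y < key L d x" using assms by (intro key_less[of d y L x l]) auto
    then show False using k by simp
  qed
next
  assume "x l < y l"
  then show "key L d x < key L d y" using assms by (intro key_less) auto
qed

lemma hier_range: "hierarchy d \<tau> \<Longrightarrow> 1 \<le> k \<Longrightarrow> k \<le> d \<Longrightarrow> 1 \<le> \<tau> k \<and> \<tau> k \<le> d"
  unfolding hierarchy_def bij_betw_def by auto

lemma hier_inj: "hierarchy d \<tau> \<Longrightarrow> 1 \<le> k \<Longrightarrow> k \<le> d \<Longrightarrow> 1 \<le> k' \<Longrightarrow> k' \<le> d \<Longrightarrow> \<tau> k = \<tau> k' \<Longrightarrow> k = k'"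
proof -
  assume h: "hierarchy d \<tau>" and k: "1 \<le> k" "k \<le> d" "1 \<le> k'" "k' \<le> d" "\<tau> k = \<tau> k'"
  have i: "inj_on \<tau> {1..d}" using h by (simp add: hierarchy_def bij_betw_def)
  show "k = k'" by (rule inj_onD[OF i k(5)]) (use k in auto)
qed

lemma hier_surj: "hierarchy d \<tau> \<Longrightarrow> q < d \<Longrightarrow> \<exists>k. 1 \<le> k \<and> k \<le> d \<and> \<tau> k - 1 = q"
proof -
  assume h: "hierarchy d \<tau>" "q < d"
  then have "Suc q \<in> \<tau> ` {1..d}" unfolding hierarchy_def bij_betw_def by auto
  then obtain k where "k \<in> {1..d}" "Suc q = \<tau> k" by auto
  then show ?thesis by (intro exI[of _ k]) auto
qed

lemma coord_lt: "v \<in> sites L d \<Longrightarrow> hierarchy d \<tau> \<Longrightarrow> 1 \<le> k \<Longrightarrow> k \<le> d \<Longrightarrow> coord v (\<tau> k) < L"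
proof -
  assume a: "v \<in> sites L d" "hierarchy d \<tau>" "1 \<le> k" "k \<le> d"
  then have "1 \<le> \<tau> k" "\<tau> k \<le> d" using hier_range by auto
  then show ?thesis using a(1) by (simp add: coord_def in_sites)
qed

lemma top_level:
  assumes h: "hierarchy d \<tau>" and u: "u \<in> sites L d" and w: "w \<in> sites L d" and ne: "u \<noteq> w"
  shows "\<exists>l. 1 \<le> l \<and> l \<le> d \<and> coord u (\<tau> l) \<noteq> coord w (\<tau> l)
           \<and> (\<forall>k. l < k \<and> k \<le> d \<longrightarrow> coord u (\<tau> k) = coord w (\<tau> k))"
proof -
  define D where "D = {k. 1 \<le> k \<and> k \<le> d \<and> coord u (\<tau> k) \<noteq> coord w (\<tau> k)}"
  have "\<exists>q<d. u ! q \<noteq> w ! q"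
  proof (rule ccontr)
    assume "\<not> (\<exists>q<d. u ! q \<noteq> w ! q)"
    then have "u = w" using u w by (intro nth_equalityI) (auto simp: in_sites)
    then show False using ne by simp
  qed
  then obtain q where q: "q < d" "u ! q \<noteq> w ! q" by auto
  obtain k where k: "1 \<le> k" "k \<le> d" "\<tau> k - 1 = q" using hier_surj[OF h q(1)] by auto
  have "k \<in> D" using k q by (simp add: D_def coord_def)
  then have Dne: "D \<noteq> {}" by auto
  have Dfin: "finite D" by (simp add: D_def)
  define l where "l = Max D"
  have lD: "l \<in> D" using Dne Dfin by (simp add: l_def)
  have "\<forall>k. l < k \<and> k \<le> d \<longrightarrow> coord u (\<tau> k) = coord w (\<tau> k)"
  proof (intro allI impI)
    fix k assume k: "l < k \<and> k \<le> d"
    have "k \<notin> D"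
    proof
      assume "k \<in> D"
      then have "k \<le> l" using Max_ge[OF Dfin] by (simp add: l_def)
      then show False using k by simp
    qed
    moreover have "1 \<le> k" using k lD by (simp add: D_def)
    ultimately show "coord u (\<tau> k) = coord w (\<tau> k)" using k by (simp add: D_def)
  qed
  then show ?thesis using lD by (auto simp: D_def)
qed

lemma lev_eq:
  assumes h: "hierarchy d \<tau>" and m: "m \<le> d" and lu: "length u = d" and lw: "length w = d"
  shows "(\<forall>q<d. q \<notin> (\<lambda>k. \<tau> k - 1) ` {1..m} \<longrightarrow> u ! q = w ! q)
     \<longleftrightarrow> (\<forall>k. m < k \<and> k \<le> d \<longrightarrow> coord u (\<tau> k) = coord w (\<tau> k))"
proof
  assume a: "\<forall>q<d. q \<notin> (\<lambda>k. \<tau> k - 1) ` {1..m} \<longrightarrow> u ! q = w ! q"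
  show "\<forall>k. m < k \<and> k \<le> d \<longrightarrow> coord u (\<tau> k) = coord w (\<tau> k)"
  proof (intro allI impI)
    fix k assume k: "m < k \<and> k \<le> d"
    have r: "1 \<le> \<tau> k" "\<tau> k \<le> d" using hier_range[OF h] k by auto
    have "\<tau> k - 1 \<notin> (\<lambda>k. \<tau> k - 1) ` {1..m}"
    proof
      assume "\<tau> k - 1 \<in> (\<lambda>k. \<tau> k - 1) ` {1..m}"
      then obtain k' where k': "1 \<le> k'" "k' \<le> m" "\<tau> k - 1 = \<tau> k' - 1" by auto
      have "1 \<le> \<tau> k'" using hier_range[OF h, of k'] k' m by auto
      then have "\<tau> k = \<tau> k'" using k' r by arith
      then have "k = k'" using hier_inj[OF h, of k k'] k k' m by auto
      then show False using k k' by simp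
    qed
    then show "coord u (\<tau> k) = coord w (\<tau> k)" using a r by (simp add: coord_def)
  qed
next
  assume a: "\<forall>k. m < k \<and> k \<le> d \<longrightarrow> coord u (\<tau> k) = coord w (\<tau> k)"
  show "\<forall>q<d. q \<notin> (\<lambda>k. \<tau> k - 1) ` {1..m} \<longrightarrow> u ! q = w ! q"
  proof (intro allI impI)
    fix q assume q: "q < d" "q \<notin> (\<lambda>k. \<tau> k - 1) ` {1..m}"
    obtain k where k: "1 \<le> k" "k \<le> d" "\<tau> k - 1 = q" using hier_surj[OF h q(1)] by auto
    have "\<not> k \<le> m" using q(2) k by auto
    then have "coord u (\<tau> k) = coord w (\<tau> k)" using a k by auto
    then show "u ! q = w ! q" using k by (simp add: coord_def)
  qed
qed

lemma rho_lt: "t < L \<Longrightarrow> rho L s t < L" by (auto simp: rho_def)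
lemma rho_cmp: "t < L \<Longrightarrow> t' < L \<Longrightarrow> rho L s t < rho L s t' \<longleftrightarrow> (if even s then t < t' else t' < t)"
  by (auto simp: rho_def)
lemma rho_inj: "t < L \<Longrightarrow> t' < L \<Longrightarrow> rho L s t = rho L s t' \<longleftrightarrow> t = t'"
  by (auto simp: rho_def)

definition sS :: "(nat \<Rightarrow> nat) \<Rightarrow> nat \<Rightarrow> nat list \<Rightarrow> nat \<Rightarrow> nat" where
  "sS \<sigma> d v i = (\<Sum>k=i+1..d. coord v (\<sigma> k))"

lemma snake_key: "snake L d \<sigma> v = key L d (\<lambda>i. rho L (sS \<sigma> d v i) (coord v (\<sigma> i)))"
  by (simp add: snake_def key_def sS_def)

definition raster :: "nat \<Rightarrow> nat \<Rightarrow> (nat \<Rightarrow> nat) \<Rightarrow> nat list \<Rightarrow> nat" where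
  "raster L d \<tau> v = key L d (\<lambda>i. coord v (\<tau> i))"

lemma sS_eq: "(\<forall>k. l < k \<and> k \<le> d \<longrightarrow> coord u (\<sigma> k) = coord w (\<sigma> k)) \<Longrightarrow> l \<le> i \<Longrightarrow> sS \<sigma> d u i = sS \<sigma> d w i"
  unfolding sS_def by (rule sum.cong) auto

lemma snake_cmp:
  assumes h: "hierarchy d \<sigma>" and u: "u \<in> sites L d" and w: "w \<in> sites L d"
    and l: "1 \<le> l" "l \<le> d" "coord u (\<sigma> l) \<noteq> coord w (\<sigma> l)"
    and above: "\<forall>k. l < k \<and> k \<le> d \<longrightarrow> coord u (\<sigma> k) = coord w (\<sigma> k)"
  shows "snake L d \<sigma> u < snake L d \<sigma> w \<longleftrightarrow>
     (if even (sS \<sigma> d w l) then coord u (\<sigma> l) < coord w (\<sigma> l) else coord w (\<sigma> l) < coord u (\<sigma> l))"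
proof -
  have cu: "coord u (\<sigma> i) < L" and cw: "coord w (\<sigma> i) < L" if "1 \<le> i" "i \<le> d" for i
    using coord_lt[OF u h that] coord_lt[OF w h that] by auto
  have ss: "sS \<sigma> d u l = sS \<sigma> d w l" using sS_eq[OF above] by simp
  have "snake L d \<sigma> u < snake L d \<sigma> w \<longleftrightarrow>
      rho L (sS \<sigma> d u l) (coord u (\<sigma> l)) < rho L (sS \<sigma> d w l) (coord w (\<sigma> l))"
    unfolding snake_key
  proof (rule key_cmp[where l = l])
    show "\<forall>i. 1 \<le> i \<and> i \<le> d \<longrightarrow> rho L (sS \<sigma> d u i) (coord u (\<sigma> i)) < L" using cu rho_lt by auto
    show "\<forall>i. 1 \<le> i \<and> i \<le> d \<longrightarrow> rho L (sS \<sigma> d w i) (coord w (\<sigma> i)) < L" using cw rho_lt by auto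
    show "1 \<le> l" "l \<le> d" using l by auto
    show "\<forall>k. l < k \<and> k \<le> d \<longrightarrow> rho L (sS \<sigma> d u k) (coord u (\<sigma> k)) = rho L (sS \<sigma> d w k) (coord w (\<sigma> k))"
      using above sS_eq[OF above] by auto
    show "rho L (sS \<sigma> d u l) (coord u (\<sigma> l)) \<noteq> rho L (sS \<sigma> d w l) (coord w (\<sigma> l))"
      using ss rho_inj cu cw l by auto
  qed
  also have "\<dots> \<longleftrightarrow> (if even (sS \<sigma> d w l) then coord u (\<sigma> l) < coord w (\<sigma> l) else coord w (\<sigma> l) < coord u (\<sigma> l))"
    using ss rho_cmp cu cw l by auto
  finally show ?thesis .
qed

lemma raster_cmp:
  assumes h: "hierarchy d \<tau>" and u: "u \<in> sites L d" and w: "w \<in> sites L d"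
    and l: "1 \<le> l" "l \<le> d" "coord u (\<tau> l) \<noteq> coord w (\<tau> l)"
    and above: "\<forall>k. l < k \<and> k \<le> d \<longrightarrow> coord u (\<tau> k) = coord w (\<tau> k)"
  shows "raster L d \<tau> u < raster L d \<tau> w \<longleftrightarrow> coord u (\<tau> l) < coord w (\<tau> l)"
  unfolding raster_def
  by (rule key_cmp) (use l above coord_lt[OF u h] coord_lt[OF w h] in auto)


lemma depth_concat_le: "(\<forall>x\<in>set xs. depth (f x) \<le> B) \<Longrightarrow> depth (concat (map f xs)) \<le> length xs * B"
  by (induction xs) (auto simp: depth_def)

lemma count_concat_le: "(\<forall>x\<in>set xs. gate_count (f x) \<le> B) \<Longrightarrow> gate_count (concat (map f xs)) \<le> length xs * B"
  by (induction xs) (auto simp: gate_count_def)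

lemma valid_concat: "(\<forall>x\<in>set xs. valid_circuit L d (f x)) \<Longrightarrow> valid_circuit L d (concat (map f xs))"
  by (auto simp: valid_circuit_def)

lemma isD_circ_concat:
  "(\<And>x. x \<in> set xs \<Longrightarrow> isD (concat (f x)) (\<Phi> x)) \<Longrightarrow>
   isD (concat (concat (map f xs))) (\<lambda>c. sum_list (map (\<lambda>x. \<Phi> x c) xs))"
proof -
  assume a: "\<And>x. x \<in> set xs \<Longrightarrow> isD (concat (f x)) (\<Phi> x)"
  have "concat (concat (map f xs)) = concat (map (\<lambda>x. concat (f x)) xs)"
    by (simp add: concat_concat' o_def)
  then show ?thesis using isD_concat_list[of xs "\<lambda>x. concat (f x)" \<Phi>] a by simp
qed

lemma qform_sum: "finite I \<Longrightarrow> (\<Sum>i\<in>I. qform Q (r i) c) = qform Q (\<lambda>w u. \<Sum>i\<in>I. r i w u) c"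
  unfolding qform_def by (simp add: sum_distrib_right sum.swap[of _ I] del: sum_mult_of_bool_eq sum_of_bool_mult_eq)

lemma sum_single: "finite A \<Longrightarrow> l \<in> A \<Longrightarrow> (\<And>i. i \<in> A \<Longrightarrow> i \<noteq> l \<Longrightarrow> f i = 0) \<Longrightarrow> sum f A = f l"
proof -
  assume a: "finite A" "l \<in> A" "\<And>i. i \<in> A \<Longrightarrow> i \<noteq> l \<Longrightarrow> f i = 0"
  have "sum f A = f l + sum f (A - {l})" using a by (simp add: sum.remove)
  also have "sum f (A - {l}) = 0" using a by (intro sum.neutral) auto
  finally show ?thesis by simp
qed

definition Ys :: "(nat \<Rightarrow> nat) \<Rightarrow> nat \<Rightarrow> nat list" where "Ys \<sigma> i = map (\<lambda>k. \<sigma> k - 1) [1..<i]"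
definition selS :: "(nat \<Rightarrow> nat) \<Rightarrow> nat \<Rightarrow> nat \<Rightarrow> nat list \<Rightarrow> bool" where
  "selS \<sigma> d i v = odd (sS \<sigma> d v i)"

lemma set_Ys: "set (Ys \<sigma> i) = (\<lambda>k. \<sigma> k - 1) ` {1..i - 1}"
  by (auto simp: Ys_def)

lemma set_Ys_p: "1 \<le> i \<Longrightarrow> insert (\<sigma> i - 1) (set (Ys \<sigma> i)) = (\<lambda>k. \<sigma> k - 1) ` {1..i}"
proof -
  assume i: "1 \<le> i"
  have "{1..i} = insert i {1..i - 1}" using i by auto
  then show ?thesis by (simp add: set_Ys)
qed

lemma engA_ctx_inst:
  assumes h: "hierarchy d \<sigma>" and i: "1 \<le> i" "i \<le> d"
  shows "engA_ctx L d (Ys \<sigma> i) (\<sigma> i - 1) (selS \<sigma> d i)"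
proof
  show "\<forall>y\<in>set (Ys \<sigma> i). y < d" using hier_range[OF h] i by (fastforce simp: Ys_def)
  show "distinct (Ys \<sigma> i)"
  proof -
    have "inj_on (\<lambda>k. \<sigma> k - 1) {1..<i}"
    proof (rule inj_onI)
      fix x y assume xy: "x \<in> {1..<i}" "y \<in> {1..<i}" "\<sigma> x - 1 = \<sigma> y - 1"
      have "1 \<le> \<sigma> x" "1 \<le> \<sigma> y" using hier_range[OF h] xy i by auto
      then have "\<sigma> x = \<sigma> y" using xy(3) by arith
      then show "x = y" using hier_inj[OF h, of x y] xy i by auto
    qed
    then show ?thesis by (simp add: Ys_def distinct_map)
  qed
  show "\<sigma> i - 1 < d" using hier_range[OF h i] by auto
  show "\<sigma> i - 1 \<notin> set (Ys \<sigma> i)"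
  proof
    assume "\<sigma> i - 1 \<in> set (Ys \<sigma> i)"
    then obtain k where k: "1 \<le> k" "k < i" "\<sigma> i - 1 = \<sigma> k - 1" by (auto simp: Ys_def)
    have "1 \<le> \<sigma> k" "1 \<le> \<sigma> i" using hier_range[OF h] k i by auto
    then have "\<sigma> i = \<sigma> k" using k by arith
    then show False using hier_inj[OF h, of i k] k i by auto
  qed
  fix w w' assume w: "w \<in> sites L d" "w' \<in> sites L d"
    and eq: "\<forall>q<d. q \<notin> set (Ys \<sigma> i) \<longrightarrow> w ! q = w' ! q"
  have "\<forall>k. i - 1 < k \<and> k \<le> d \<longrightarrow> coord w (\<sigma> k) = coord w' (\<sigma> k)"
    using lev_eq[OF h _ _ _, of "i - 1" w w'] eq w i by (simp add: set_Ys in_sites)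
  then have "sS \<sigma> d w i = sS \<sigma> d w' i" unfolding sS_def by (intro sum.cong) auto
  then show "selS \<sigma> d i w = selS \<sigma> d i w'" by (simp add: selS_def)
qed

definition boxL :: "(nat \<Rightarrow> nat) \<Rightarrow> nat \<Rightarrow> nat \<Rightarrow> nat list \<Rightarrow> nat list \<Rightarrow> bool" where
  "boxL \<sigma> d i w u = ((\<forall>k. i < k \<and> k \<le> d \<longrightarrow> coord u (\<sigma> k) = coord w (\<sigma> k)) \<and> coord u (\<sigma> i) < coord w (\<sigma> i))"

lemma boxA_boxL:
  assumes h: "hierarchy d \<sigma>" and i: "1 \<le> i" "i \<le> d" and w: "w \<in> sites L d" and u: "u \<in> sites L d"
  shows "boxA d (Ys \<sigma> i) (\<sigma> i - 1) w u = boxL \<sigma> d i w u"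
proof -
  have "(\<forall>q<d. q \<notin> set (Ys \<sigma> i) \<longrightarrow> q \<noteq> \<sigma> i - 1 \<longrightarrow> u ! q = w ! q)
      = (\<forall>q<d. q \<notin> (\<lambda>k. \<sigma> k - 1) ` {1..i} \<longrightarrow> u ! q = w ! q)"
    using set_Ys_p[OF i(1), of \<sigma>] by auto
  also have "\<dots> = (\<forall>k. i < k \<and> k \<le> d \<longrightarrow> coord u (\<sigma> k) = coord w (\<sigma> k))"
    using lev_eq[OF h i(2)] u w by (simp add: in_sites)
  finally show ?thesis by (simp add: boxA_def boxL_def coord_def)
qed

definition rA :: "nat \<Rightarrow> nat \<Rightarrow> (nat \<Rightarrow> nat) \<Rightarrow> nat list \<Rightarrow> nat list \<Rightarrow> bit" where
  "rA L d \<sigma> w u = (\<Sum>i\<in>{1..d}. of_bool (selS \<sigma> d i w \<and> boxA d (Ys \<sigma> i) (\<sigma> i - 1) w u))"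

lemma rA_pointwise:
  assumes h: "hierarchy d \<sigma>" and j: "j \<in> sites L d" and u: "u \<in> sites L d" and ne: "u \<noteq> j"
  shows "rA L d \<sigma> j u + rA L d \<sigma> u j = of_bool (snake L d \<sigma> u < snake L d \<sigma> j) + of_bool (raster L d \<sigma> u < raster L d \<sigma> j)"
proof -
  obtain l where l: "1 \<le> l" "l \<le> d" "coord u (\<sigma> l) \<noteq> coord j (\<sigma> l)"
    and above: "\<forall>k. l < k \<and> k \<le> d \<longrightarrow> coord u (\<sigma> k) = coord j (\<sigma> k)"
    using top_level[OF h u j ne] by blast
  define T where "T i = of_bool (selS \<sigma> d i j \<and> boxL \<sigma> d i j u) + (of_bool (selS \<sigma> d i u \<and> boxL \<sigma> d i u j) :: bit)" for i
  have "rA L d \<sigma> j u + rA L d \<sigma> u j = (\<Sum>i\<in>{1..d}. T i)"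
    unfolding rA_def T_def sum.distrib[symmetric]
  proof (rule sum.cong[OF refl])
    fix i assume "i \<in> {1..d}"
    then have i: "1 \<le> i" "i \<le> d" by auto
    show "of_bool (selS \<sigma> d i j \<and> boxA d (Ys \<sigma> i) (\<sigma> i - 1) j u) + of_bool (selS \<sigma> d i u \<and> boxA d (Ys \<sigma> i) (\<sigma> i - 1) u j) =
        of_bool (selS \<sigma> d i j \<and> boxL \<sigma> d i j u) + (of_bool (selS \<sigma> d i u \<and> boxL \<sigma> d i u j) :: bit)"
      by (simp only: boxA_boxL[OF h i j u] boxA_boxL[OF h i u j])
  qed
  also have "\<dots> = T l"
  proof (rule sum_single)
    show "finite {1..d}" by simp
    show "l \<in> {1..d}" using l by simp
    fix i assume i: "i \<in> {1..d}" "i \<noteq> l"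
    show "T i = 0"
    proof (cases "i < l")
      case True
      then have "\<not> boxL \<sigma> d i j u" "\<not> boxL \<sigma> d i u j" using l by (auto simp: boxL_def)
      then show ?thesis by (simp add: T_def)
    next
      case False
      then have "l < i" using i by simp
      then have "coord u (\<sigma> i) = coord j (\<sigma> i)" using above i by auto
      then have "\<not> boxL \<sigma> d i j u" "\<not> boxL \<sigma> d i u j" by (auto simp: boxL_def)
      then show ?thesis by (simp add: T_def)
    qed
  qed
  also have "T l = of_bool (snake L d \<sigma> u < snake L d \<sigma> j) + of_bool (raster L d \<sigma> u < raster L d \<sigma> j)"
  proof -
    have ss: "sS \<sigma> d u l = sS \<sigma> d j l" using sS_eq[OF above] by simp
    have sn: "snake L d \<sigma> u < snake L d \<sigma> j \<longleftrightarrow>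
     (if even (sS \<sigma> d j l) then coord u (\<sigma> l) < coord j (\<sigma> l) else coord j (\<sigma> l) < coord u (\<sigma> l))"
      by (rule snake_cmp[OF h u j l above])
    have ra: "raster L d \<sigma> u < raster L d \<sigma> j \<longleftrightarrow> coord u (\<sigma> l) < coord j (\<sigma> l)"
      by (rule raster_cmp[OF h u j l above])
    have b1: "boxL \<sigma> d l j u \<longleftrightarrow> coord u (\<sigma> l) < coord j (\<sigma> l)" using above by (auto simp: boxL_def)
    have b2: "boxL \<sigma> d l u j \<longleftrightarrow> coord j (\<sigma> l) < coord u (\<sigma> l)" using above by (auto simp: boxL_def)
    show ?thesis unfolding T_def sn ra b1 b2 selS_def ss using l(3)
      by (cases "even (sS \<sigma> d j l)"; cases "coord u (\<sigma> l) < coord j (\<sigma> l)") auto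
  qed
  finally show ?thesis .
qed

definition CA :: "nat \<Rightarrow> nat \<Rightarrow> (nat \<Rightarrow> nat) \<Rightarrow> circuit" where
  "CA L d \<sigma> = concat (map (\<lambda>i. engA L d (Ys \<sigma> i) (\<sigma> i - 1) (selS \<sigma> d i)) [1..<Suc d])"

theorem CA_props:
  assumes h: "hierarchy d \<sigma>"
  shows "valid_circuit L d (CA L d \<sigma>)
   \<and> depth (CA L d \<sigma>) \<le> d * (2 * d * L + 4)
   \<and> gate_count (CA L d \<sigma>) \<le> d * ((2 * d + 4) * L ^ d)
   \<and> isD (concat (CA L d \<sigma>)) (qform (sites L d) (rA L d \<sigma>))"
proof (intro conjI)
  have P: "\<And>i. i \<in> set [1..<Suc d] \<Longrightarrow>
     valid_circuit L d (engA L d (Ys \<sigma> i) (\<sigma> i - 1) (selS \<sigma> d i))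
   \<and> depth (engA L d (Ys \<sigma> i) (\<sigma> i - 1) (selS \<sigma> d i)) = 2 * (Suc (length (Ys \<sigma> i)) * (L - 1)) + 4
   \<and> gate_count (engA L d (Ys \<sigma> i) (\<sigma> i - 1) (selS \<sigma> d i)) \<le> (2 * Suc (length (Ys \<sigma> i)) + 4) * L ^ d
   \<and> isD (concat (engA L d (Ys \<sigma> i) (\<sigma> i - 1) (selS \<sigma> d i)))
        (qform (sites L d) (\<lambda>w u. of_bool (selS \<sigma> d i w \<and> boxA d (Ys \<sigma> i) (\<sigma> i - 1) w u)))"
  proof -
    fix i assume "i \<in> set [1..<Suc d]"
    then have i: "1 \<le> i" "i \<le> d" by auto
    show "?thesis i" by (rule engA_ctx.engA_props[OF engA_ctx_inst[OF h i]])
  qed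
  have lenY: "length (Ys \<sigma> i) = i - 1" for i by (simp add: Ys_def)
  show "valid_circuit L d (CA L d \<sigma>)" unfolding CA_def by (rule valid_concat) (use P in blast)
  show "depth (CA L d \<sigma>) \<le> d * (2 * d * L + 4)"
    unfolding CA_def
  proof -
    have "\<forall>i\<in>set [1..<Suc d]. depth (engA L d (Ys \<sigma> i) (\<sigma> i - 1) (selS \<sigma> d i)) \<le> 2 * d * L + 4"
    proof
      fix i assume i: "i \<in> set [1..<Suc d]"
      have "Suc (length (Ys \<sigma> i)) * (L - 1) \<le> d * L" using i lenY[of i]
        by (intro mult_le_mono) auto
      then show "depth (engA L d (Ys \<sigma> i) (\<sigma> i - 1) (selS \<sigma> d i)) \<le> 2 * d * L + 4" using P[OF i] by simp
    qed
    from depth_concat_le[OF this] show "depth (concat (map (\<lambda>i. engA L d (Ys \<sigma> i) (\<sigma> i - 1) (selS \<sigma> d i)) [1..<Suc d])) \<le> d * (2 * d * L + 4)"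
      by (simp del: upt_Suc)
  qed
  show "gate_count (CA L d \<sigma>) \<le> d * ((2 * d + 4) * L ^ d)"
    unfolding CA_def
  proof -
    have "\<forall>i\<in>set [1..<Suc d]. gate_count (engA L d (Ys \<sigma> i) (\<sigma> i - 1) (selS \<sigma> d i)) \<le> (2 * d + 4) * L ^ d"
    proof
      fix i assume i: "i \<in> set [1..<Suc d]"
      have "(2 * Suc (length (Ys \<sigma> i)) + 4) * L ^ d \<le> (2 * d + 4) * L ^ d" using i lenY[of i]
        by (intro mult_le_mono1) auto
      then show "gate_count (engA L d (Ys \<sigma> i) (\<sigma> i - 1) (selS \<sigma> d i)) \<le> (2 * d + 4) * L ^ d" using P[OF i] by linarith
    qed
    from count_concat_le[OF this] show "gate_count (concat (map (\<lambda>i. engA L d (Ys \<sigma> i) (\<sigma> i - 1) (selS \<sigma> d i)) [1..<Suc d])) \<le> d * ((2 * d + 4) * L ^ d)"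
      by (simp del: upt_Suc)
  qed
  have "isD (concat (CA L d \<sigma>)) (\<lambda>c. sum_list (map (\<lambda>i. qform (sites L d) (\<lambda>w u. of_bool (selS \<sigma> d i w \<and> boxA d (Ys \<sigma> i) (\<sigma> i - 1) w u)) c) [1..<Suc d]))"
    unfolding CA_def by (rule isD_circ_concat) (use P in blast)
  moreover have "sum_list (map (\<lambda>i. qform (sites L d) (\<lambda>w u. of_bool (selS \<sigma> d i w \<and> boxA d (Ys \<sigma> i) (\<sigma> i - 1) w u)) c) [1..<Suc d])
      = qform (sites L d) (rA L d \<sigma>) c" for c
  proof -
    have "sum_list (map (\<lambda>i. qform (sites L d) (\<lambda>w u. of_bool (selS \<sigma> d i w \<and> boxA d (Ys \<sigma> i) (\<sigma> i - 1) w u)) c) [1..<Suc d])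
       = (\<Sum>i\<in>{1..d}. qform (sites L d) (\<lambda>w u. of_bool (selS \<sigma> d i w \<and> boxA d (Ys \<sigma> i) (\<sigma> i - 1) w u)) c)"
      by (simp add: sum_list_distinct_conv_sum_set atLeastLessThanSuc_atLeastAtMost del: upt_Suc)
    also have "\<dots> = qform (sites L d) (rA L d \<sigma>) c"
      unfolding qform_sum[OF finite_atLeastAtMost] rA_def ..
    finally show ?thesis .
  qed
  ultimately show "isD (concat (CA L d \<sigma>)) (qform (sites L d) (rA L d \<sigma>))" by simp
qed

theorem CA_maps:
  assumes h: "hierarchy d \<sigma>"
  shows "maps_encoding (sites L d) (circuit_unitary (CA L d \<sigma>)) (snake L d \<sigma>) (raster L d \<sigma>)"
proof -
  have "circuit_unitary (CA L d \<sigma>) = diagop (qform (sites L d) (rA L d \<sigma>))"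
    using CA_props[OF h, of L] by (simp add: circuit_unitary_concat isD_def)
  moreover have "maps_encoding (sites L d) (diagop (qform (sites L d) (rA L d \<sigma>))) (snake L d \<sigma>) (raster L d \<sigma>)"
  proof (rule maps_encoding_qform)
    show "finite (sites L d)" by simp
    fix j assume j: "j \<in> sites L d"
    show "rA L d \<sigma> j j = 0" unfolding rA_def by (rule sum.neutral) (simp add: boxA_def)
    fix u assume u: "u \<in> sites L d" "u \<noteq> j"
    show "rA L d \<sigma> j u + rA L d \<sigma> u j = of_bool (snake L d \<sigma> u < snake L d \<sigma> j) + of_bool (raster L d \<sigma> u < raster L d \<sigma> j)"
      by (rule rA_pointwise[OF h j u])
  qed
  ultimately show ?thesis by simp
qed


definition sw :: "(nat \<Rightarrow> nat) \<Rightarrow> nat \<Rightarrow> nat \<Rightarrow> nat" where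
  "sw \<tau> i = \<tau>(i := \<tau> (Suc i), Suc i := \<tau> i)"

lemma sw_i: "sw \<tau> i i = \<tau> (Suc i)" by (simp add: sw_def)
lemma sw_Si: "sw \<tau> i (Suc i) = \<tau> i" by (simp add: sw_def)
lemma sw_other: "k \<noteq> i \<Longrightarrow> k \<noteq> Suc i \<Longrightarrow> sw \<tau> i k = \<tau> k" by (simp add: sw_def)

lemma sw_hier: assumes h: "hierarchy d \<tau>" and i: "1 \<le> i" "i < d" shows "hierarchy d (sw \<tau> i)"
proof -
  define t :: "nat \<Rightarrow> nat" where "t = id(i := Suc i, Suc i := i)"
  have tt: "t (t x) = x" for x by (simp add: t_def)
  have tA: "t ` {1..d} \<subseteq> {1..d}" using i by (auto simp: t_def)
  have bt: "bij_betw t {1..d} {1..d}"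
    by (rule bij_betw_byWitness[where f' = t]) (use tt tA in auto)
  have "sw \<tau> i = \<tau> \<circ> t" by (auto simp: sw_def t_def fun_eq_iff)
  then show ?thesis using bij_betw_trans[OF bt] h by (simp add: hierarchy_def)
qed

definition boxBL :: "(nat \<Rightarrow> nat) \<Rightarrow> nat \<Rightarrow> nat \<Rightarrow> nat list \<Rightarrow> nat list \<Rightarrow> bool" where
  "boxBL \<tau> d i w u = ((\<forall>k. Suc i < k \<and> k \<le> d \<longrightarrow> coord u (\<tau> k) = coord w (\<tau> k))
      \<and> coord w (\<tau> i) < coord u (\<tau> i) \<and> coord u (\<tau> (Suc i)) < coord w (\<tau> (Suc i)))"

lemma rasterB_pointwise:
  assumes h: "hierarchy d \<tau>" and i: "1 \<le> i" "i < d" and j: "j \<in> sites L d" and u: "u \<in> sites L d" and ne: "u \<noteq> j"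
  shows "of_bool (boxBL \<tau> d i j u) + of_bool (boxBL \<tau> d i u j)
     = of_bool (raster L d \<tau> u < raster L d \<tau> j) + (of_bool (raster L d (sw \<tau> i) u < raster L d (sw \<tau> i) j) :: bit)"
proof -
  have h': "hierarchy d (sw \<tau> i)" by (rule sw_hier[OF h i])
  obtain l where l: "1 \<le> l" "l \<le> d" "coord u (\<tau> l) \<noteq> coord j (\<tau> l)"
    and above: "\<forall>k. l < k \<and> k \<le> d \<longrightarrow> coord u (\<tau> k) = coord j (\<tau> k)"
    using top_level[OF h u j ne] by blast
  show ?thesis
  proof (cases "Suc i < l")
    case True
    have "\<not> boxBL \<tau> d i j u" "\<not> boxBL \<tau> d i u j" using True l by (auto simp: boxBL_def)
    moreover have "raster L d \<tau> u < raster L d \<tau> j \<longleftrightarrow> coord u (\<tau> l) < coord j (\<tau> l)"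
      by (rule raster_cmp[OF h u j l above])
    moreover have "raster L d (sw \<tau> i) u < raster L d (sw \<tau> i) j \<longleftrightarrow> coord u (\<tau> l) < coord j (\<tau> l)"
    proof -
      have e: "sw \<tau> i l = \<tau> l" using True by (simp add: sw_other)
      have a': "\<forall>k. l < k \<and> k \<le> d \<longrightarrow> coord u (sw \<tau> i k) = coord j (sw \<tau> i k)"
        using above True by (simp add: sw_other)
      show ?thesis using raster_cmp[OF h' u j l(1,2) _ a'] l(3) e by simp
    qed
    ultimately show ?thesis by simp
  next
    case False
    show ?thesis
    proof (cases "l < i")
      case True
      have eqa: "coord u (\<tau> i) = coord j (\<tau> i)" and eqb: "coord u (\<tau> (Suc i)) = coord j (\<tau> (Suc i))"
        using above True i by auto
      have "\<not> boxBL \<tau> d i j u" "\<not> boxBL \<tau> d i u j" using eqa by (auto simp: boxBL_def)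
      moreover have "raster L d \<tau> u < raster L d \<tau> j \<longleftrightarrow> coord u (\<tau> l) < coord j (\<tau> l)"
        by (rule raster_cmp[OF h u j l above])
      moreover have "raster L d (sw \<tau> i) u < raster L d (sw \<tau> i) j \<longleftrightarrow> coord u (\<tau> l) < coord j (\<tau> l)"
      proof -
        have e: "sw \<tau> i l = \<tau> l" using True by (simp add: sw_other)
        have a': "\<forall>k. l < k \<and> k \<le> d \<longrightarrow> coord u (sw \<tau> i k) = coord j (sw \<tau> i k)"
        proof (intro allI impI)
          fix k assume k: "l < k \<and> k \<le> d"
          show "coord u (sw \<tau> i k) = coord j (sw \<tau> i k)"
          proof (cases "k = i")
            case True then show ?thesis using eqb by (simp add: sw_i)
          next
            case F1: False
            show ?thesis
            proof (cases "k = Suc i")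
              case True then show ?thesis using eqa by (simp add: sw_Si)
            next
              case False then show ?thesis using F1 above k by (simp add: sw_other)
            qed
          qed
        qed
        show ?thesis using raster_cmp[OF h' u j l(1,2) _ a'] l(3) e by simp
      qed
      ultimately show ?thesis by simp
    next
      case F2: False
      then have lrange: "l = i \<or> l = Suc i" using False by auto
      have up: "\<forall>k. Suc i < k \<and> k \<le> d \<longrightarrow> coord u (\<tau> k) = coord j (\<tau> k)" using above lrange by auto
      define au where "au = coord u (\<tau> i)"
      define aj where "aj = coord j (\<tau> i)"
      define bu where "bu = coord u (\<tau> (Suc i))"
      define bj where "bj = coord j (\<tau> (Suc i))"
      have nb: "au \<noteq> aj \<or> bu \<noteq> bj" using lrange l(3) by (auto simp: au_def aj_def bu_def bj_def)
      have R1: "raster L d \<tau> u < raster L d \<tau> j \<longleftrightarrow> (if bu \<noteq> bj then bu < bj else au < aj)"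
      proof (cases "bu \<noteq> bj")
        case True
        have "raster L d \<tau> u < raster L d \<tau> j \<longleftrightarrow> coord u (\<tau> (Suc i)) < coord j (\<tau> (Suc i))"
          by (rule raster_cmp[OF h u j]) (use i True up in \<open>auto simp: bu_def bj_def\<close>)
        then show ?thesis using True by (simp add: bu_def bj_def)
      next
        case False
        then have an: "au \<noteq> aj" using nb by simp
        have "raster L d \<tau> u < raster L d \<tau> j \<longleftrightarrow> coord u (\<tau> i) < coord j (\<tau> i)"
        proof (rule raster_cmp[OF h u j])
          show "1 \<le> i" "i \<le> d" using i by auto
          show "coord u (\<tau> i) \<noteq> coord j (\<tau> i)" using an by (simp add: au_def aj_def)
          show "\<forall>k. i < k \<and> k \<le> d \<longrightarrow> coord u (\<tau> k) = coord j (\<tau> k)"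
          proof (intro allI impI)
            fix k assume k: "i < k \<and> k \<le> d"
            show "coord u (\<tau> k) = coord j (\<tau> k)"
              using k up False by (cases "k = Suc i") (auto simp: bu_def bj_def)
          qed
        qed
        then show ?thesis using False by (simp add: au_def aj_def)
      qed
      have R2: "raster L d (sw \<tau> i) u < raster L d (sw \<tau> i) j \<longleftrightarrow> (if au \<noteq> aj then au < aj else bu < bj)"
      proof -
        have up': "\<forall>k. Suc i < k \<and> k \<le> d \<longrightarrow> coord u (sw \<tau> i k) = coord j (sw \<tau> i k)"
          using up by (simp add: sw_other)
        show ?thesis
        proof (cases "au \<noteq> aj")
          case True
          have "raster L d (sw \<tau> i) u < raster L d (sw \<tau> i) j \<longleftrightarrow> coord u (sw \<tau> i (Suc i)) < coord j (sw \<tau> i (Suc i))"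
            by (rule raster_cmp[OF h' u j]) (use i True up' in \<open>auto simp: au_def aj_def sw_Si\<close>)
          then show ?thesis using True by (simp add: au_def aj_def sw_Si)
        next
          case False
          then have bn: "bu \<noteq> bj" using nb by simp
          have "raster L d (sw \<tau> i) u < raster L d (sw \<tau> i) j \<longleftrightarrow> coord u (sw \<tau> i i) < coord j (sw \<tau> i i)"
          proof (rule raster_cmp[OF h' u j])
            show "1 \<le> i" "i \<le> d" using i by auto
            show "coord u (sw \<tau> i i) \<noteq> coord j (sw \<tau> i i)" using bn by (simp add: bu_def bj_def sw_i)
            show "\<forall>k. i < k \<and> k \<le> d \<longrightarrow> coord u (sw \<tau> i k) = coord j (sw \<tau> i k)"
            proof (intro allI impI)
              fix k assume k: "i < k \<and> k \<le> d"
              show "coord u (sw \<tau> i k) = coord j (sw \<tau> i k)"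
                using k up' False by (cases "k = Suc i") (auto simp: au_def aj_def sw_Si)
            qed
          qed
          then show ?thesis using False by (simp add: bu_def bj_def sw_i)
        qed
      qed
      have B1: "boxBL \<tau> d i j u \<longleftrightarrow> aj < au \<and> bu < bj" using up by (auto simp: boxBL_def au_def aj_def bu_def bj_def)
      have B2: "boxBL \<tau> d i u j \<longleftrightarrow> au < aj \<and> bj < bu" using up by (auto simp: boxBL_def au_def aj_def bu_def bj_def)
      show ?thesis unfolding R1 R2 B1 B2 using nb
        by (cases "au < aj"; cases "aj < au"; cases "bu < bj"; cases "bj < bu") auto
    qed
  qed
qed

lemma engB_ctx_inst:
  assumes h: "hierarchy d \<tau>" and i: "1 \<le> i" "i < d"
  shows "engB_ctx d (Ys \<tau> i) (\<tau> i - 1) (\<tau> (Suc i) - 1)"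
proof -
  have r: "\<And>k. 1 \<le> k \<Longrightarrow> k \<le> d \<Longrightarrow> 1 \<le> \<tau> k \<and> \<tau> k \<le> d" using hier_range[OF h] by auto
  have inj': "\<And>x y. 1 \<le> x \<Longrightarrow> x \<le> d \<Longrightarrow> 1 \<le> y \<Longrightarrow> y \<le> d \<Longrightarrow> \<tau> x - 1 = \<tau> y - 1 \<Longrightarrow> x = y"
  proof -
    fix x y assume xy: "1 \<le> x" "x \<le> d" "1 \<le> y" "y \<le> d" "\<tau> x - 1 = \<tau> y - 1"
    have "1 \<le> \<tau> x" "1 \<le> \<tau> y" using r xy by auto
    then have "\<tau> x = \<tau> y" using xy(5) by arith
    then show "x = y" using hier_inj[OF h] xy by auto
  qed
  show ?thesis
  proof
    show "\<forall>y\<in>set (Ys \<tau> i). y < d" using r i by (fastforce simp: Ys_def)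
    show "distinct (Ys \<tau> i)"
    proof -
      have "inj_on (\<lambda>k. \<tau> k - 1) {1..<i}"
      proof (rule inj_onI)
        fix x y assume xy: "x \<in> {1..<i}" "y \<in> {1..<i}" "\<tau> x - 1 = \<tau> y - 1"
        show "x = y" using inj'[of x y] xy i by auto
      qed
      then show ?thesis by (simp add: Ys_def distinct_map)
    qed
    show "\<tau> i - 1 < d" "\<tau> (Suc i) - 1 < d" using r[of i] r[of "Suc i"] i by auto
    show "\<tau> i - 1 \<notin> set (Ys \<tau> i)"
    proof
      assume "\<tau> i - 1 \<in> set (Ys \<tau> i)"
      then obtain k where k: "1 \<le> k" "k < i" "\<tau> i - 1 = \<tau> k - 1" by (auto simp: Ys_def)
      then show False using inj'[of i k] i by auto
    qed
    show "\<tau> (Suc i) - 1 \<notin> set (Ys \<tau> i)"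
    proof
      assume "\<tau> (Suc i) - 1 \<in> set (Ys \<tau> i)"
      then obtain k where k: "1 \<le> k" "k < i" "\<tau> (Suc i) - 1 = \<tau> k - 1" by (auto simp: Ys_def)
      then show False using inj'[of "Suc i" k] i by auto
    qed
    show "\<tau> i - 1 \<noteq> \<tau> (Suc i) - 1" using inj'[of i "Suc i"] i by auto
  qed
qed

lemma boxB_boxBL:
  assumes h: "hierarchy d \<tau>" and i: "1 \<le> i" "i < d" and w: "w \<in> sites L d" and u: "u \<in> sites L d"
  shows "boxB d (Ys \<tau> i) (\<tau> i - 1) (\<tau> (Suc i) - 1) w u = boxBL \<tau> d i w u"
proof -
  have S: "insert (\<tau> i - 1) (insert (\<tau> (Suc i) - 1) (set (Ys \<tau> i))) = (\<lambda>k. \<tau> k - 1) ` {1..Suc i}"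
  proof -
    have "{1..Suc i} = insert i (insert (Suc i) {1..i - 1})" using i by auto
    then show ?thesis by (auto simp: set_Ys)
  qed
  have "(\<forall>q<d. q \<notin> set (Ys \<tau> i) \<longrightarrow> q \<noteq> \<tau> i - 1 \<longrightarrow> q \<noteq> \<tau> (Suc i) - 1 \<longrightarrow> u ! q = w ! q)
      = (\<forall>q<d. q \<notin> (\<lambda>k. \<tau> k - 1) ` {1..Suc i} \<longrightarrow> u ! q = w ! q)"
    unfolding S[symmetric] by auto
  also have "\<dots> = (\<forall>k. Suc i < k \<and> k \<le> d \<longrightarrow> coord u (\<tau> k) = coord w (\<tau> k))"
    using lev_eq[OF h, of "Suc i" u w] u w i by (simp add: in_sites)
  finally show ?thesis by (simp add: boxB_def boxBL_def coord_def)
qed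

theorem engB_maps:
  assumes h: "hierarchy d \<tau>" and i: "1 \<le> i" "i < d"
  shows "valid_circuit L d (engB L d (Ys \<tau> i) (\<tau> i - 1) (\<tau> (Suc i) - 1))
   \<and> depth (engB L d (Ys \<tau> i) (\<tau> i - 1) (\<tau> (Suc i) - 1)) \<le> 2 * (d * L) + 20
   \<and> gate_count (engB L d (Ys \<tau> i) (\<tau> i - 1) (\<tau> (Suc i) - 1)) \<le> (2 * d + 20) * L ^ d
   \<and> (\<exists>\<phi>. isD (concat (engB L d (Ys \<tau> i) (\<tau> i - 1) (\<tau> (Suc i) - 1))) \<phi>)
   \<and> maps_encoding (sites L d) (circuit_unitary (engB L d (Ys \<tau> i) (\<tau> i - 1) (\<tau> (Suc i) - 1))) (raster L d \<tau>) (raster L d (sw \<tau> i))"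
proof -
  note P = engB_ctx.engB_props[OF engB_ctx_inst[OF h i], of L]
  have lenY: "length (Ys \<tau> i) = i - 1" by (simp add: Ys_def)
  have d1: "(length (Ys \<tau> i) + 2) * (L - 1) \<le> d * L" using lenY i by (intro mult_le_mono) auto
  have d2: "(2 * (length (Ys \<tau> i) + 2) + 20) * L ^ d \<le> (2 * d + 20) * L ^ d" using lenY i by (intro mult_le_mono1) auto
  have me: "maps_encoding (sites L d) (diagop (qform (sites L d) (\<lambda>w u. of_bool (boxB d (Ys \<tau> i) (\<tau> i - 1) (\<tau> (Suc i) - 1) w u))))
      (raster L d \<tau>) (raster L d (sw \<tau> i))"
  proof (rule maps_encoding_qform)
    show "finite (sites L d)" by simp
    fix j assume j: "j \<in> sites L d"
    show "(of_bool (boxB d (Ys \<tau> i) (\<tau> i - 1) (\<tau> (Suc i) - 1) j j) :: bit) = 0" by (simp add: boxB_def)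
    fix u assume u: "u \<in> sites L d" "u \<noteq> j"
    show "of_bool (boxB d (Ys \<tau> i) (\<tau> i - 1) (\<tau> (Suc i) - 1) j u) + of_bool (boxB d (Ys \<tau> i) (\<tau> i - 1) (\<tau> (Suc i) - 1) u j)
        = of_bool (raster L d \<tau> u < raster L d \<tau> j) + (of_bool (raster L d (sw \<tau> i) u < raster L d (sw \<tau> i) j) :: bit)"
      unfolding boxB_boxBL[OF h i j u(1)] boxB_boxBL[OF h i u(1) j]
      using rasterB_pointwise[OF h i j u] by blast
  qed
  have cu: "circuit_unitary (engB L d (Ys \<tau> i) (\<tau> i - 1) (\<tau> (Suc i) - 1))
      = diagop (qform (sites L d) (\<lambda>w u. of_bool (boxB d (Ys \<tau> i) (\<tau> i - 1) (\<tau> (Suc i) - 1) w u)))"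
    using P by (simp add: circuit_unitary_concat isD_def)
  show ?thesis
  proof (intro conjI)
    show "valid_circuit L d (engB L d (Ys \<tau> i) (\<tau> i - 1) (\<tau> (Suc i) - 1))" by (rule P[THEN conjunct1])
    have dep: "depth (engB L d (Ys \<tau> i) (\<tau> i - 1) (\<tau> (Suc i) - 1)) = 2 * ((length (Ys \<tau> i) + 2) * (L - 1)) + 20"
      by (rule P[THEN conjunct2, THEN conjunct1])
    show "depth (engB L d (Ys \<tau> i) (\<tau> i - 1) (\<tau> (Suc i) - 1)) \<le> 2 * (d * L) + 20"
      unfolding dep by (rule add_le_mono1[OF mult_le_mono2[OF d1]])
    have cnt: "gate_count (engB L d (Ys \<tau> i) (\<tau> i - 1) (\<tau> (Suc i) - 1)) \<le> (2 * (length (Ys \<tau> i) + 2) + 20) * L ^ d"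
      by (rule P[THEN conjunct2, THEN conjunct2, THEN conjunct1])
    show "gate_count (engB L d (Ys \<tau> i) (\<tau> i - 1) (\<tau> (Suc i) - 1)) \<le> (2 * d + 20) * L ^ d"
      using cnt d2 by (rule le_trans)
    show "\<exists>\<phi>. isD (concat (engB L d (Ys \<tau> i) (\<tau> i - 1) (\<tau> (Suc i) - 1))) \<phi>"
      using P[THEN conjunct2, THEN conjunct2, THEN conjunct2] by blast
    show "maps_encoding (sites L d) (circuit_unitary (engB L d (Ys \<tau> i) (\<tau> i - 1) (\<tau> (Suc i) - 1))) (raster L d \<tau>) (raster L d (sw \<tau> i))"
      unfolding cu by (rule me)
  qed
qed


definition Mm :: "nat \<Rightarrow> (nat \<Rightarrow> nat) \<Rightarrow> nat" where
  "Mm d \<tau> = (\<Sum>k=1..d. k * \<tau> k)"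

lemma Mm_bound: "hierarchy d \<tau> \<Longrightarrow> Mm d \<tau> \<le> d * (d * d)"
proof -
  assume h: "hierarchy d \<tau>"
  have "Mm d \<tau> \<le> (\<Sum>k=1..d. d * d)" unfolding Mm_def
  proof (rule sum_mono)
    fix k assume "k \<in> {1..d}"
    then show "k * \<tau> k \<le> d * d" using hier_range[OF h, of k] by (intro mult_le_mono) auto
  qed
  then show ?thesis by simp
qed

lemma sum_two_change:
  fixes f g :: "nat \<Rightarrow> nat"
  assumes fin: "finite A" and a: "i \<in> A" "Suc i \<in> A" and eq: "\<And>k. k \<noteq> i \<Longrightarrow> k \<noteq> Suc i \<Longrightarrow> f k = g k"
  shows "sum f A + g i + g (Suc i) = sum g A + f i + f (Suc i)"
proof -
  have B: "sum h A = h i + (h (Suc i) + sum h (A - {i} - {Suc i}))" for h :: "nat \<Rightarrow> nat"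
  proof -
    have "sum h A = h i + sum h (A - {i})" using fin a by (simp add: sum.remove)
    also have "sum h (A - {i}) = h (Suc i) + sum h (A - {i} - {Suc i})" using fin a by (simp add: sum.remove)
    finally show ?thesis .
  qed
  have "sum f (A - {i} - {Suc i}) = sum g (A - {i} - {Suc i})" using eq by (intro sum.cong) auto
  then show ?thesis using B[of f] B[of g] by simp
qed

lemma Mm_sw:
  assumes i: "1 \<le> i" "i < d" and desc: "\<tau> (Suc i) < \<tau> i"
  shows "Mm d \<tau> < Mm d (sw \<tau> i)"
proof -
  have "Mm d (sw \<tau> i) + i * \<tau> i + Suc i * \<tau> (Suc i) = Mm d \<tau> + i * sw \<tau> i i + Suc i * sw \<tau> i (Suc i)"
    unfolding Mm_def by (rule sum_two_change) (use i in \<open>auto simp: sw_other\<close>)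
  then have "Mm d (sw \<tau> i) + i * \<tau> i + Suc i * \<tau> (Suc i) = Mm d \<tau> + i * \<tau> (Suc i) + Suc i * \<tau> i"
    by (simp add: sw_i sw_Si)
  moreover have "Suc i * \<tau> i = i * \<tau> i + \<tau> i" "Suc i * \<tau> (Suc i) = i * \<tau> (Suc i) + \<tau> (Suc i)" by simp_all
  ultimately show ?thesis using desc by linarith
qed

lemma no_descent_id:
  assumes h: "hierarchy d \<tau>" and nd: "\<forall>i. 1 \<le> i \<and> i < d \<longrightarrow> \<tau> i \<le> \<tau> (Suc i)"
  shows "\<forall>k. 1 \<le> k \<and> k \<le> d \<longrightarrow> \<tau> k = k"
proof -
  have inc: "\<tau> k < \<tau> (Suc k)" if "1 \<le> k" "k < d" for k
  proof -
    have "\<tau> k \<noteq> \<tau> (Suc k)" using hier_inj[OF h, of k "Suc k"] that by auto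
    then show ?thesis using nd that by (meson le_neq_implies_less)
  qed
  have lo: "k \<le> \<tau> k" if "1 \<le> k" "k \<le> d" for k
    using that
  proof (induction k)
    case 0 then show ?case by simp
  next
    case (Suc k)
    show ?case
    proof (cases "k = 0")
      case True then show ?thesis using hier_range[OF h, of 1] Suc.prems by simp
    next
      case False
      then have "k \<le> \<tau> k" using Suc by simp
      moreover have "\<tau> k < \<tau> (Suc k)" using inc[of k] False Suc.prems by simp
      ultimately show ?thesis by simp
    qed
  qed
  have hi: "\<forall>k. k = d - j \<and> 1 \<le> k \<longrightarrow> \<tau> k \<le> k" if "j < d" for j
    using that
  proof (induction j)
    case 0 then show ?case using hier_range[OF h] by auto
  next
    case (Suc j)
    show ?case
    proof (intro allI impI)
      fix k assume k: "k = d - Suc j \<and> 1 \<le> k"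
      have sk: "Suc k = d - j" using k Suc.prems by arith
      have "j < d" using Suc.prems by simp
      then have "\<forall>k. k = d - j \<and> 1 \<le> k \<longrightarrow> \<tau> k \<le> k" by (rule Suc.IH)
      then have "\<tau> (Suc k) \<le> Suc k" using sk by simp
      moreover have "\<tau> k < \<tau> (Suc k)" using inc[of k] k Suc.prems by simp
      ultimately show "\<tau> k \<le> k" by simp
    qed
  qed
  show ?thesis
  proof (intro allI impI)
    fix k assume k: "1 \<le> k \<and> k \<le> d"
    have "\<tau> k \<le> k" using hi[of "d - k"] k by simp
    then show "\<tau> k = k" using lo[of k] k by simp
  qed
qed

lemma maps_encoding_id: "maps_encoding Q id m m"
  by (simp add: maps_encoding_def)

lemma chain:
  assumes h: "hierarchy d \<tau>"
  shows "\<exists>C \<phi>. valid_circuit L d C \<and> depth C \<le> (d * (d * d) - Mm d \<tau>) * (2 * (d * L) + 20)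
     \<and> gate_count C \<le> (d * (d * d) - Mm d \<tau>) * ((2 * d + 20) * L ^ d)
     \<and> isD (concat C) \<phi> \<and> maps_encoding (sites L d) (circuit_unitary C) (raster L d \<tau>) (raster L d (\<lambda>k. k))"
  using h
proof (induction "d * (d * d) - Mm d \<tau>" arbitrary: \<tau> rule: less_induct)
  case less
  note h = less.prems
  show ?case
  proof (cases "\<forall>i. 1 \<le> i \<and> i < d \<longrightarrow> \<tau> i \<le> \<tau> (Suc i)")
    case True
    have idk: "\<forall>k. 1 \<le> k \<and> k \<le> d \<longrightarrow> \<tau> k = k" by (rule no_descent_id[OF h True])
    have "raster L d \<tau> = raster L d (\<lambda>k. k)"
      unfolding raster_def by (rule ext, rule key_cong) (use idk in auto)
    then have "maps_encoding (sites L d) (circuit_unitary []) (raster L d \<tau>) (raster L d (\<lambda>k. k))"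
      by (simp add: circuit_unitary_def maps_encoding_id)
    moreover have "isD (concat []) (\<lambda>c. 0)" using isD_nil by simp
    ultimately show ?thesis
      by (intro exI[of _ "[]"] exI[of _ "\<lambda>c. 0"]) (simp add: valid_circuit_def depth_def gate_count_def)
  next
    case False
    then obtain i where i: "1 \<le> i" "i < d" and desc: "\<tau> (Suc i) < \<tau> i" by (auto simp: not_le)
    have h': "hierarchy d (sw \<tau> i)" by (rule sw_hier[OF h i])
    have Mlt: "Mm d \<tau> < Mm d (sw \<tau> i)" by (rule Mm_sw[OF i desc])
    have Mb: "Mm d (sw \<tau> i) \<le> d * (d * d)" by (rule Mm_bound[OF h'])
    have lt: "d * (d * d) - Mm d (sw \<tau> i) < d * (d * d) - Mm d \<tau>" using Mlt Mb by simp
    obtain C' \<phi>' where C': "valid_circuit L d C'" "depth C' \<le> (d * (d * d) - Mm d (sw \<tau> i)) * (2 * (d * L) + 20)"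
      "gate_count C' \<le> (d * (d * d) - Mm d (sw \<tau> i)) * ((2 * d + 20) * L ^ d)"
      "isD (concat C') \<phi>'" "maps_encoding (sites L d) (circuit_unitary C') (raster L d (sw \<tau> i)) (raster L d (\<lambda>k. k))"
      using less.hyps[OF lt h'] by blast
    define E where "E = engB L d (Ys \<tau> i) (\<tau> i - 1) (\<tau> (Suc i) - 1)"
    have E: "valid_circuit L d E" "depth E \<le> 2 * (d * L) + 20" "gate_count E \<le> (2 * d + 20) * L ^ d"
      "\<exists>\<phi>. isD (concat E) \<phi>" "maps_encoding (sites L d) (circuit_unitary E) (raster L d \<tau>) (raster L d (sw \<tau> i))"
      using engB_maps[OF h i, of L] unfolding E_def by auto
    obtain \<phi>E where \<phi>E: "isD (concat E) \<phi>E" using E(4) by blast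
    define N where "N = d * (d * d) - Mm d \<tau>"
    define N' where "N' = d * (d * d) - Mm d (sw \<tau> i)"
    have NN: "Suc N' \<le> N" using lt by (simp add: N_def N'_def)
    have dep: "depth (E @ C') \<le> N * (2 * (d * L) + 20)"
    proof -
      have "depth (E @ C') \<le> (2 * (d * L) + 20) + N' * (2 * (d * L) + 20)"
        using E(2) C'(2) by (simp add: depth_append N'_def)
      also have "\<dots> = Suc N' * (2 * (d * L) + 20)" by simp
      also have "\<dots> \<le> N * (2 * (d * L) + 20)" using NN by (rule mult_le_mono1)
      finally show ?thesis .
    qed
    have cnt: "gate_count (E @ C') \<le> N * ((2 * d + 20) * L ^ d)"
    proof -
      have "gate_count (E @ C') \<le> (2 * d + 20) * L ^ d + N' * ((2 * d + 20) * L ^ d)"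
        using E(3) C'(3) by (simp add: gate_count_append N'_def)
      also have "\<dots> = Suc N' * ((2 * d + 20) * L ^ d)" by simp
      also have "\<dots> \<le> N * ((2 * d + 20) * L ^ d)" using NN by (rule mult_le_mono1)
      finally show ?thesis .
    qed
    have "isD (concat E @ concat C') (\<lambda>c. \<phi>E c + \<phi>' c)" by (rule isD_append[OF \<phi>E C'(4)])
    then have isd: "isD (concat (E @ C')) (\<lambda>c. \<phi>E c + \<phi>' c)" by simp
    have me: "maps_encoding (sites L d) (circuit_unitary (E @ C')) (raster L d \<tau>) (raster L d (\<lambda>k. k))"
      unfolding circuit_unitary_append by (rule maps_encoding_trans[OF E(5) C'(5)])
    have va: "valid_circuit L d (E @ C')" using E(1) C'(1) by (simp add: valid_circuit_append)
    show ?thesis using va dep cnt isd me unfolding N_def by blast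
  qed
qed

definition Kc :: "nat \<Rightarrow> nat" where "Kc d = d * (2 * d + 4) + d * (d * d) * (2 * d + 20)"

lemma per_sigma:
  assumes h: "hierarchy d \<sigma>" and L: "1 \<le> L"
  shows "\<exists>C \<phi>. valid_circuit L d C \<and> depth C \<le> Kc d * L \<and> gate_count C \<le> Kc d * L ^ d
     \<and> isD (concat C) \<phi> \<and> maps_encoding (sites L d) (circuit_unitary C) (snake L d \<sigma>) (raster L d (\<lambda>k. k))"
proof -
  obtain C' \<phi>' where C': "valid_circuit L d C'" "depth C' \<le> (d * (d * d) - Mm d \<sigma>) * (2 * (d * L) + 20)"
      "gate_count C' \<le> (d * (d * d) - Mm d \<sigma>) * ((2 * d + 20) * L ^ d)"
      "isD (concat C') \<phi>'" "maps_encoding (sites L d) (circuit_unitary C') (raster L d \<sigma>) (raster L d (\<lambda>k. k))"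
    using chain[OF h, of L] by blast
  note A = CA_props[OF h, of L]
  have Am: "maps_encoding (sites L d) (circuit_unitary (CA L d \<sigma>)) (snake L d \<sigma>) (raster L d \<sigma>)" by (rule CA_maps[OF h])
  define C where "C = CA L d \<sigma> @ C'"
  have va: "valid_circuit L d C" using A C'(1) by (simp add: C_def valid_circuit_append)
  have d1: "depth (CA L d \<sigma>) \<le> d * (2 * d + 4) * L"
  proof -
    have "depth (CA L d \<sigma>) \<le> d * (2 * d * L + 4)" using A by blast
    also have "\<dots> \<le> d * ((2 * d + 4) * L)" using L by (intro mult_le_mono2) (simp add: algebra_simps)
    finally show ?thesis by (simp add: mult.assoc)
  qed
  have d2: "depth C' \<le> d * (d * d) * (2 * d + 20) * L"
  proof -
    have "depth C' \<le> (d * (d * d) - Mm d \<sigma>) * (2 * (d * L) + 20)" by (rule C'(2))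
    also have "\<dots> \<le> d * (d * d) * (2 * (d * L) + 20)" by (intro mult_le_mono1) simp
    also have "\<dots> \<le> d * (d * d) * ((2 * d + 20) * L)" using L by (intro mult_le_mono2) (simp add: algebra_simps)
    finally show ?thesis by (simp add: mult.assoc)
  qed
  have dep: "depth C \<le> Kc d * L"
  proof -
    have "depth C = depth (CA L d \<sigma>) + depth C'" by (simp add: C_def depth_append)
    also have "\<dots> \<le> d * (2 * d + 4) * L + d * (d * d) * (2 * d + 20) * L" using d1 d2 by (rule add_le_mono)
    also have "\<dots> = Kc d * L" by (simp only: Kc_def add_mult_distrib)
    finally show ?thesis .
  qed
  have c1: "gate_count (CA L d \<sigma>) \<le> d * (2 * d + 4) * L ^ d" using A by (simp add: mult.assoc)
  have c2: "gate_count C' \<le> d * (d * d) * (2 * d + 20) * L ^ d"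
  proof -
    have "gate_count C' \<le> (d * (d * d) - Mm d \<sigma>) * ((2 * d + 20) * L ^ d)" by (rule C'(3))
    also have "\<dots> \<le> d * (d * d) * ((2 * d + 20) * L ^ d)" by (intro mult_le_mono1) simp
    finally show ?thesis by (simp add: mult.assoc)
  qed
  have cnt: "gate_count C \<le> Kc d * L ^ d"
  proof -
    have "gate_count C = gate_count (CA L d \<sigma>) + gate_count C'" by (simp add: C_def gate_count_append)
    also have "\<dots> \<le> d * (2 * d + 4) * L ^ d + d * (d * d) * (2 * d + 20) * L ^ d" using c1 c2 by (rule add_le_mono)
    also have "\<dots> = Kc d * L ^ d" by (simp only: Kc_def add_mult_distrib)
    finally show ?thesis .
  qed
  have "isD (concat (CA L d \<sigma>) @ concat C') (\<lambda>c. qform (sites L d) (rA L d \<sigma>) c + \<phi>' c)"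
    using A C'(4) by (intro isD_append) auto
  then have isd: "isD (concat C) (\<lambda>c. qform (sites L d) (rA L d \<sigma>) c + \<phi>' c)" by (simp add: C_def)
  have me: "maps_encoding (sites L d) (circuit_unitary C) (snake L d \<sigma>) (raster L d (\<lambda>k. k))"
    unfolding C_def circuit_unitary_append by (rule maps_encoding_trans[OF Am C'(5)])
  show ?thesis using va dep cnt isd me by blast
qed

theorem mainTheorem13:
  fixes d :: nat
  assumes "d \<ge> 2"
  shows "\<exists>K :: nat. \<forall>(L :: nat) \<sigma> \<sigma>'. hierarchy d \<sigma> \<longrightarrow> hierarchy d \<sigma>' \<longrightarrow>
           (\<exists>C :: circuit. valid_circuit L d C
              \<and> gate_count C \<le> K * L ^ d
              \<and> depth C \<le> K * L
              \<and> maps_encoding (sites L d) (circuit_unitary C) (snake L d \<sigma>) (snake L d \<sigma>'))"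
proof (intro exI[of _ "2 * Kc d"] allI impI)
  fix L \<sigma> \<sigma>' assume h: "hierarchy d \<sigma>" and h': "hierarchy d \<sigma>'"
  show "\<exists>C :: circuit. valid_circuit L d C
              \<and> gate_count C \<le> 2 * Kc d * L ^ d
              \<and> depth C \<le> 2 * Kc d * L
              \<and> maps_encoding (sites L d) (circuit_unitary C) (snake L d \<sigma>) (snake L d \<sigma>')"
  proof (cases "L = 0")
    case True
    have "sites L d = {}"
    proof (rule equals0I)
      fix v assume "v \<in> sites L d"
      then have "v ! 0 < L" using assms by (simp add: in_sites)
      then show False using True by simp
    qed
    then show ?thesis
      by (intro exI[of _ "[]"]) (simp add: valid_circuit_def gate_count_def depth_def maps_encoding_def)
  next
    case False
    then have L: "1 \<le> L" by simp
    obtain C1 \<phi>1 where C1: "valid_circuit L d C1" "depth C1 \<le> Kc d * L" "gate_count C1 \<le> Kc d * L ^ d"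
      "isD (concat C1) \<phi>1" "maps_encoding (sites L d) (circuit_unitary C1) (snake L d \<sigma>) (raster L d (\<lambda>k. k))"
      using per_sigma[OF h L] by blast
    obtain C2 \<phi>2 where C2: "valid_circuit L d C2" "depth C2 \<le> Kc d * L" "gate_count C2 \<le> Kc d * L ^ d"
      "isD (concat C2) \<phi>2" "maps_encoding (sites L d) (circuit_unitary C2) (snake L d \<sigma>') (raster L d (\<lambda>k. k))"
      using per_sigma[OF h' L] by blast
    have U2: "circuit_unitary C2 = diagop \<phi>2" using C2(4) by (simp add: circuit_unitary_concat isD_def)
    have inv: "circuit_unitary C2 \<circ> circuit_unitary C2 = id" unfolding U2 by (rule diagop_invol)
    have me2: "maps_encoding (sites L d) (circuit_unitary C2) (raster L d (\<lambda>k. k)) (snake L d \<sigma>')"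
      by (rule maps_encoding_sym[OF inv C2(5)])
    have me: "maps_encoding (sites L d) (circuit_unitary (C1 @ C2)) (snake L d \<sigma>) (snake L d \<sigma>')"
      unfolding circuit_unitary_append by (rule maps_encoding_trans[OF C1(5) me2])
    have va: "valid_circuit L d (C1 @ C2)" using C1(1) C2(1) by (simp add: valid_circuit_append)
    have dp: "depth (C1 @ C2) \<le> 2 * Kc d * L" using C1(2) C2(2) by (simp add: depth_append)
    have ct: "gate_count (C1 @ C2) \<le> 2 * Kc d * L ^ d" using C1(3) C2(3) by (simp add: gate_count_append)
    show ?thesis using va dp ct me by blast
  qed
qed


end
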